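(* Let $F:\mathbb R^d\times\mathcal P_2(\mathbb R^d)\to\mathbb R^{d\times m}$ satisfy Regularity assumptions 1 with constant $\Lambda$. Fix $\omega\in\Omega$, let $X(\omega)$ be an $\omega$-controlled path and $Y(\cdot)$ an $\mathbb R^d$-valued random controlled path on $[0,T]$, such that $\delta_\mu X(\omega)\equiv0$ and $\delta_\mu Y(\cdot)\equiv0$, and such that $$M:=\sup_{0\le t\le T}\big(|\delta_xX_t(\omega)|\vee\langle\delta_xY_t(\cdot)\rangle_\infty\big)<\infty.$$ Then the path $t\mapsto F(X_t(\omega),Y_t(\cdot)):=F(X_t(\omega),\mathcal L(Y_t))$ is an $\omega$-controlled path with $$\delta_x\big(F(X(\omega),Y(\cdot))\big)_t=\partial_xF(X_t(\omega),Y_t(\cdot))\,\delta_xX_t(\omega),$$ understood as $\big(\sum_{\ell=1}^d\partial_{x_\ell}F^{i,j}(X_t(\omega),Y_t(\cdot))(\delta_xX^\ell_t(\omega))_k\big)_{i,j,k}$, and $$\delta_\mu\big(F(X(\omega),Y(\cdot))\big)_t=\nabla_ZF(X_t(\omega),Y_t(\cdot))\,\delta_xY_t(\cdot)=D_\mu F(X_t(\omega),\mathcal L(Y_t))(Y_t(\cdot))\,\delta_xY_t(\cdot)$$ (with the analogous contraction), and there is a constant $C_{\Lambda,M}$, depending only on $\Lambda$ and $M$, such that $$|||F(X(\omega),Y(\cdot))|||_{\star,[0,T],w,p}\le C_{\Lambda,M}\Big(1+|||X(\omega)|||^2_{[0,T],w,p}+\big\langle|||Y(\cdot)|||_{[0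,T],w,p}\big\rangle_8^2\Big).$$
   Context: Fix $T>0$, integers $m,d\ge1$, $p\in[2,3)$, $q\ge8$. $(\Omega,\mathcal F,\mathbb P)$ is an atomless probability space, $\Omega$ Polish, $\mathcal F$ the completed Borel $\sigma$-field; $\langle Z\rangle_r=\mathbb E[|Z|^r]^{1/r}$, $\langle Z\rangle_\infty$ the essential sup of $|Z|$, $\langle\!\langle\cdot\rangle\!\rangle_r$ the $L^r$ norm on $(\Omega^2,\mathbb P^{\otimes2})$; a dot in place of a sample point means the object is regarded as a random variable in that argument. $\mathcal S_2^T=\{(s,t)\in[0,T]^2:s\le t\}$, $f_{s,t}=f_t-f_s$. $p'$-variations: $\|G\|^{p'}_{[s,t],p'\text{-var}}=\sup\sum_i|G_{t_{i-1},t_i}|^{p'}$ over partitions of $[s,t]$; $\langle G(\cdot)\rangle^{p'}_{q;[s,t],p'\text{-var}}=\sup\sum_i\langle G_{t_{i-1},t_i}(\cdot)\rangle_q^{p'}$; likewise on $\Omega^2$. Rough set-up $\boldsymbol W=(W,\mathbb W,\mathbb W^\perp)$ on $[0,T]$: Borel maps $W:\Omega\to C([0,T];\mathbb R^m)$, $\mathbb W:\Omega\to C(\mathcal S_2^T;\mathbb R^{m\times m})$, $\mathbb W^\perp:\Omega^2\to C(\mathcal S_2^T;\mathbb R^{m\times m})$ with $q$-integrable suprema, sections $\mathbb W^\perp(\omega,\cdot),\mathbb W^\perp(\cdot,\omega)$ continuous into $L^q(\Omega)$ for every $\omega$, $\mathbb W^\perp(\cdot,\cdot)$ continuous into $L^q(\Omega^2)$,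 satisfying for all $r\le s\le t$ and all $\omega$ Chen's relations $\mathbb W_{r,t}(\omega)=\mathbb W_{r,s}(\omega)+\mathbb W_{s,t}(\omega)+W_{r,s}(\omega)\otimes W_{s,t}(\omega)$, $\mathbb W^\perp_{r,t}(\cdot,\omega)=\mathbb W^\perp_{r,s}(\cdot,\omega)+\mathbb W^\perp_{s,t}(\cdot,\omega)+W_{r,s}(\cdot)\otimes W_{s,t}(\omega)$, $\mathbb W^\perp_{r,t}(\omega,\cdot)=\mathbb W^\perp_{r,s}(\omega,\cdot)+\mathbb W^\perp_{s,t}(\omega,\cdot)+W_{r,s}(\omega)\otimes W_{s,t}(\cdot)$, $\mathbb W^\perp_{r,t}(\cdot,\cdot)=\mathbb W^\perp_{r,s}(\cdot,\cdot)+\mathbb W^\perp_{s,t}(\cdot,\cdot)+W_{r,s}(\cdot)\otimes W_{s,t}(\cdot)$ ($X(\cdot)\otimes Y(\cdot):(\omega,\omega')\mapsto(X_i(\omega)Y_j(\omega'))_{i,j}$). With $v(s,t,\omega)=\|W(\omega)\|^p_{[s,t],p\text{-var}}+\langle W(\cdot)\rangle^p_{q;[s,t],p\text{-var}}+\|\mathbb W(\omega)\|^{p/2}_{[s,t],p/2\text{-var}}+\langle\mathbb W^\perp(\omega,\cdot)\rangle^{p/2}_{q;[s,t],p/2\text{-var}}+\langle\mathbb W^\perp(\cdot,\omega)\rangle^{p/2}_{q;[s,t],p/2\text{-var}}+\langle\!\langle\mathbb W^\perp(\cdot,\cdot)\rangle\!\rangle^{p/2}_{q;[s,t],p/2\text{-var}}$,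 one requires $v(0,T,\omega)<\infty$ for all $\omega$, $\langle v(0,T,\cdot)\rangle_q<\infty$, and $\langle v\rangle_{q;[0,T],1\text{-var}}<\infty$ where $\langle v\rangle_{q;[s,t],1\text{-var}}=\sup\sum_i\langle v(t_{i-1},t_i,\cdot)\rangle_q$. Control $w$: random variables $w(s,t,\omega)$ jointly continuous in $(s,t)$ with $w(s,t,\omega)\ge v(s,t,\omega)+\langle v\rangle_{q;[s,t],1\text{-var}}$, $\langle w(s,t,\cdot)\rangle_q\le2w(s,t,\omega)$, and superadditive in $(s,t)$. $\omega$-controlled path (here possibly with values in $\mathbb R^d\otimes\mathbb R^m$ instead of $\mathbb R^d$): continuous $X(\omega)$ with derivatives $\delta_xX(\omega)\in C([0,T];\mathbb R^{d\times m})$, $\delta_\mu X(\omega,\cdot)\in C([0,T];L^{4/3}(\Omega;\mathbb R^{d\times m}))$, remainder $R^X_{s,t}(\omega)=X_{s,t}(\omega)-\delta_xX_s(\omega)W_{s,t}(\omega)-\mathbb E[\delta_\mu X_s(\omega,\cdot)W_{s,t}(\cdot)]$ continuous, and $|||X(\omega)|||_{[0,T],w,p}=\sup\frac{|X_{s,t}(\omega)|}{w(s,t,\omega)^{1/p}}+\sup\frac{|\delta_xX_{s,t}(\omega)|}{w(s,t,\omega)^{1/p}}+\sup\frac{\langle\delta_\mu X_{s,t}(\omega,\cdot)\rangle_{4/3}}{w(s,t,\omega)^{1/p}}+\sup\frac{|R^X_{s,t}(\omega)|}{w(s,t,\omega)^{2/p}}<\infty$; $|||X(\omega)|||_{\star,[0,T],w,p}=|X_0(\omega)|+|\delta_xX_0(\omega)|+\langle\delta_\mu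 X_0(\omega,\cdot)\rangle_{4/3}+|||X(\omega)|||_{[0,T],w,p}$. A random controlled path is a family $(X(\omega))_\omega$ of $\omega$-controlled paths with measurable dependence of $X,\delta_xX,\delta_\mu X,R^X$ on $\omega$ and $\langle X_0(\cdot)\rangle_2+\langle|||X(\cdot)|||_{[0,T],w,p}\rangle_8<\infty$. Lions derivative: for $u$ on $\mathcal P_2(\mathbb R^d)$ with lift $U(Z)=u(\mathcal L(Z))$ on $L^2(\Omega;\mathbb R^d)$, differentiability means Fréchet differentiability of $U$; if $u$ is $C^1$, $\nabla_ZU=Du(\mathcal L(Z))(Z)$. Write $F(x,Z)=F(x,\mathcal L(Z))$, $\nabla_ZF(x,Z)=D_\mu F(x,\mathcal L(Z))(Z)$. Regularity assumptions 1: $(x,Z)\mapsto F(x,Z)$ and $\partial_xF$ continuously differentiable in $(x,Z)$; $|F|,|\partial_xF|,|\partial_x^2F|\le\Lambda$; $\|\nabla_ZF(x,Z)\|_{L^2}\vee\|\partial_x\nabla_ZF(x,Z)\|_{L^2}\le\Lambda$; $Z\mapsto\nabla_ZF(x,Z)$ is $\Lambda$-Lipschitz from $L^2$ to $L^2$ uniformly in $x$. *)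

theory Defs
  imports "HOL-Probability.Probability"
begin

text \<open>Real powers of extended nonnegative reals (infinity stays infinity; used only with r > 0).\<close>
definition epow :: "ennreal \<Rightarrow> real \<Rightarrow> ennreal" where
  "epow x r = (if x = \<infinity> then \<infinity> else ennreal (enn2real x powr r))"

definition LqE :: "'a measure \<Rightarrow> real \<Rightarrow> ('a \<Rightarrow> ennreal) \<Rightarrow> ennreal" where
  "LqE M r g = epow (\<integral>\<^sup>+ x. epow (g x) r \<partial>M) (1 / r)"

definition Lq :: "'a measure \<Rightarrow> real \<Rightarrow> ('a \<Rightarrow> 'b::real_normed_vector) \<Rightarrow> ennreal" where
  "Lq M r f = LqE M r (\<lambda>x. ennreal (norm (f x)))"

definition Linf :: "'a measure \<Rightarrow> ('a \<Rightarrow> 'b::real_normed_vector) \<Rightarrow> ennreal" where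
  "Linf M f = esssup M (\<lambda>x. ennreal (norm (f x)))"

definition in_Lq :: "'a measure \<Rightarrow> real \<Rightarrow> ('a \<Rightarrow> 'b::real_normed_vector) \<Rightarrow> bool" where
  "in_Lq M r f \<longleftrightarrow> f \<in> borel_measurable M \<and> Lq M r f < \<infinity>"

definition Lq_continuous_on ::
  "'a measure \<Rightarrow> real \<Rightarrow> 'i::topological_space set \<Rightarrow> ('i \<Rightarrow> 'a \<Rightarrow> 'b::real_normed_vector) \<Rightarrow> bool" where
  "Lq_continuous_on M r S G \<longleftrightarrow>
     (\<forall>i\<in>S. ((\<lambda>j. Lq M r (\<lambda>x. G j x - G i x)) \<longlongrightarrow> 0) (at i within S))"

definition atomless :: "'a measure \<Rightarrow> bool" where
  "atomless M \<longleftrightarrow> (\<forall>A\<in>sets M. 0 < measure M A \<longrightarrow>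
      (\<exists>B\<in>sets M. B \<subseteq> A \<and> 0 < measure M B \<and> measure M B < measure M A))"

definition standing_space :: "'w::polish_space measure \<Rightarrow> bool" where
  "standing_space M \<longleftrightarrow> prob_space M \<and> atomless M \<and>
     (\<exists>M0. sets M0 = sets (borel :: 'w measure) \<and> M = completion M0)"

definition S2 :: "real \<Rightarrow> (real \<times> real) set" where
  "S2 T = {(s, t). 0 \<le> s \<and> s \<le> t \<and> t \<le> T}"

definition partitions :: "real \<Rightarrow> real \<Rightarrow> real list set" where
  "partitions s t = {xs. xs \<noteq> [] \<and> sorted xs \<and> hd xs = s \<and> last xs = t}"

definition var_sum :: "(real \<Rightarrow> real \<Rightarrow> ennreal) \<Rightarrow> real list \<Rightarrow> ennreal" where
  "var_sum g xs = (\<Sum>i < length xs - 1. g (xs ! i) (xs ! Suc i))"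

text \<open>pvar g s t = sup over partitions of [s,t] of the sums of g over consecutive points.
  With g = |G_{a,b}|^p' this is the p'-th power of the p'-variation.\<close>
definition pvar :: "(real \<Rightarrow> real \<Rightarrow> ennreal) \<Rightarrow> real \<Rightarrow> real \<Rightarrow> ennreal" where
  "pvar g s t = (SUP xs \<in> partitions s t. var_sum g xs)"

definition outer :: "real^'m \<Rightarrow> real^'m \<Rightarrow> real^'m^'m" where
  "outer a b = (\<chi> i j. a $ i * b $ j)"

text \<open>A derivative D (column k = derivative in direction e_k) applied to a vector h.\<close>
definition apply_deriv :: "'v^'m \<Rightarrow> real^'m \<Rightarrow> 'v::real_vector" where
  "apply_deriv D h = (\<Sum>k\<in>UNIV. h $ k *\<^sub>R D $ k)"

definition vfun ::
  "'w measure \<Rightarrow> real \<Rightarrow> real \<Rightarrow> ('w \<Rightarrow> real \<Rightarrow> real^'m) \<Rightarrow> ('w \<Rightarrow> real \<Rightarrow> real \<Rightarrow> real^'m^'m)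
   \<Rightarrow> ('w \<Rightarrow> 'w \<Rightarrow> real \<Rightarrow> real \<Rightarrow> real^'m^'m) \<Rightarrow> real \<Rightarrow> real \<Rightarrow> 'w \<Rightarrow> ennreal" where
  "vfun M p q W WW WP s t \<omega> =
       pvar (\<lambda>a b. ennreal (norm (W \<omega> b - W \<omega> a) powr p)) s t
     + pvar (\<lambda>a b. epow (Lq M q (\<lambda>\<omega>'. W \<omega>' b - W \<omega>' a)) p) s t
     + pvar (\<lambda>a b. ennreal (norm (WW \<omega> a b) powr (p / 2))) s t
     + pvar (\<lambda>a b. epow (Lq M q (\<lambda>\<omega>'. WP \<omega> \<omega>' a b)) (p / 2)) s t
     + pvar (\<lambda>a b. epow (Lq M q (\<lambda>\<omega>'. WP \<omega>' \<omega> a b)) (p / 2)) s t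
     + pvar (\<lambda>a b. epow (Lq (M \<Otimes>\<^sub>M M) q (\<lambda>(\<omega>1, \<omega>2). WP \<omega>1 \<omega>2 a b)) (p / 2)) s t"

definition rough_setup ::
  "'w measure \<Rightarrow> real \<Rightarrow> real \<Rightarrow> real \<Rightarrow> ('w \<Rightarrow> real \<Rightarrow> real^'m) \<Rightarrow> ('w \<Rightarrow> real \<Rightarrow> real \<Rightarrow> real^'m^'m)
   \<Rightarrow> ('w \<Rightarrow> 'w \<Rightarrow> real \<Rightarrow> real \<Rightarrow> real^'m^'m) \<Rightarrow> bool" where
  "rough_setup M T p q W WW WP \<longleftrightarrow>
     \<comment> \<open>Borel maps into spaces of continuous paths\<close>
     (\<forall>\<omega>. continuous_on {0..T} (W \<omega>)) \<and> (\<forall>t. (\<lambda>\<omega>. W \<omega> t) \<in> borel_measurable M) \<and>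
     (\<forall>\<omega>. continuous_on (S2 T) (\<lambda>(s, t). WW \<omega> s t)) \<and> (\<forall>s t. (\<lambda>\<omega>. WW \<omega> s t) \<in> borel_measurable M) \<and>
     (\<forall>\<omega>1 \<omega>2. continuous_on (S2 T) (\<lambda>(s, t). WP \<omega>1 \<omega>2 s t)) \<and>
     (\<forall>s t. (\<lambda>(\<omega>1, \<omega>2). WP \<omega>1 \<omega>2 s t) \<in> borel_measurable (M \<Otimes>\<^sub>M M)) \<and>
     \<comment> \<open>q-integrable suprema\<close>
     LqE M q (\<lambda>\<omega>. SUP t\<in>{0..T}. ennreal (norm (W \<omega> t))) < \<infinity> \<and>
     LqE M q (\<lambda>\<omega>. SUP st\<in>S2 T. ennreal (norm (WW \<omega> (fst st) (snd st)))) < \<infinity> \<and>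
     LqE (M \<Otimes>\<^sub>M M) q (\<lambda>(\<omega>1, \<omega>2). SUP st\<in>S2 T. ennreal (norm (WP \<omega>1 \<omega>2 (fst st) (snd st)))) < \<infinity> \<and>
     \<comment> \<open>sections continuous into L^q(Omega), and the whole map continuous into L^q(Omega^2)\<close>
     (\<forall>\<omega>. \<forall>(s, t)\<in>S2 T. in_Lq M q (\<lambda>\<omega>'. WP \<omega> \<omega>' s t) \<and> in_Lq M q (\<lambda>\<omega>'. WP \<omega>' \<omega> s t)) \<and>
     (\<forall>\<omega>. Lq_continuous_on M q (S2 T) (\<lambda>(s, t) \<omega>'. WP \<omega> \<omega>' s t)) \<and>
     (\<forall>\<omega>. Lq_continuous_on M q (S2 T) (\<lambda>(s, t) \<omega>'. WP \<omega>' \<omega> s t)) \<and>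
     (\<forall>(s, t)\<in>S2 T. in_Lq (M \<Otimes>\<^sub>M M) q (\<lambda>(\<omega>1, \<omega>2). WP \<omega>1 \<omega>2 s t)) \<and>
     Lq_continuous_on (M \<Otimes>\<^sub>M M) q (S2 T) (\<lambda>(s, t) (\<omega>1, \<omega>2). WP \<omega>1 \<omega>2 s t) \<and>
     \<comment> \<open>Chen's relations (the three relations for WP all amount to this pointwise identity)\<close>
     (\<forall>\<omega> r s t. 0 \<le> r \<longrightarrow> r \<le> s \<longrightarrow> s \<le> t \<longrightarrow> t \<le> T \<longrightarrow>
        WW \<omega> r t = WW \<omega> r s + WW \<omega> s t + outer (W \<omega> s - W \<omega> r) (W \<omega> t - W \<omega> s)) \<and>
     (\<forall>\<omega>1 \<omega>2 r s t. 0 \<le> r \<longrightarrow> r \<le> s \<longrightarrow> s \<le> t \<longrightarrow> t \<le> T \<longrightarrow>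
        WP \<omega>1 \<omega>2 r t = WP \<omega>1 \<omega>2 r s + WP \<omega>1 \<omega>2 s t + outer (W \<omega>1 s - W \<omega>1 r) (W \<omega>2 t - W \<omega>2 s)) \<and>
     \<comment> \<open>integrability of the variation functional v\<close>
     (\<forall>\<omega>. vfun M p q W WW WP 0 T \<omega> < \<infinity>) \<and>
     LqE M q (vfun M p q W WW WP 0 T) < \<infinity> \<and>
     pvar (\<lambda>a b. LqE M q (vfun M p q W WW WP a b)) 0 T < \<infinity>"

definition control ::
  "'w measure \<Rightarrow> real \<Rightarrow> real \<Rightarrow> real \<Rightarrow> ('w \<Rightarrow> real \<Rightarrow> real^'m) \<Rightarrow> ('w \<Rightarrow> real \<Rightarrow> real \<Rightarrow> real^'m^'m)
   \<Rightarrow> ('w \<Rightarrow> 'w \<Rightarrow> real \<Rightarrow> real \<Rightarrow> real^'m^'m) \<Rightarrow> (real \<Rightarrow> real \<Rightarrow> 'w \<Rightarrow> real) \<Rightarrow> bool" where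
  "control M T p q W WW WP w \<longleftrightarrow>
     (\<forall>s t. (\<lambda>\<omega>. w s t \<omega>) \<in> borel_measurable M) \<and>
     (\<forall>\<omega>. continuous_on (S2 T) (\<lambda>(s, t). w s t \<omega>)) \<and>
     (\<forall>(s, t)\<in>S2 T. \<forall>\<omega>. 0 \<le> w s t \<omega> \<and>
        vfun M p q W WW WP s t \<omega> + pvar (\<lambda>a b. LqE M q (vfun M p q W WW WP a b)) s t \<le> ennreal (w s t \<omega>)) \<and>
     (\<forall>(s, t)\<in>S2 T. \<forall>\<omega>. Lq M q (\<lambda>\<omega>'. w s t \<omega>') \<le> ennreal (2 * w s t \<omega>)) \<and>
     (\<forall>s u t \<omega>. 0 \<le> s \<longrightarrow> s \<le> u \<longrightarrow> u \<le> t \<longrightarrow> t \<le> T \<longrightarrow> w s u \<omega> + w u t \<omega> \<le> w s t \<omega>)"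

definition cp_rem ::
  "'w measure \<Rightarrow> ('w \<Rightarrow> real \<Rightarrow> real^'m) \<Rightarrow> 'w \<Rightarrow> (real \<Rightarrow> 'v::euclidean_space) \<Rightarrow> (real \<Rightarrow> 'v^'m)
   \<Rightarrow> (real \<Rightarrow> 'w \<Rightarrow> 'v^'m) \<Rightarrow> real \<Rightarrow> real \<Rightarrow> 'v" where
  "cp_rem M W \<omega> X DX DmuX s t =
     X t - X s - apply_deriv (DX s) (W \<omega> t - W \<omega> s)
     - (\<integral>\<omega>'. apply_deriv (DmuX s \<omega>') (W \<omega>' t - W \<omega>' s) \<partial>M)"

text \<open>The seminorm |||X(omega)|||_{[0,T],w,p}; ennreal division gives a/0 = infinity for a > 0, 0/0 = 0.\<close>
definition cp_norm ::
  "'w measure \<Rightarrow> ('w \<Rightarrow> real \<Rightarrow> real^'m) \<Rightarrow> (real \<Rightarrow> real \<Rightarrow> 'w \<Rightarrow> real) \<Rightarrow> real \<Rightarrow> real \<Rightarrow> 'w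
   \<Rightarrow> (real \<Rightarrow> 'v::euclidean_space) \<Rightarrow> (real \<Rightarrow> 'v^'m) \<Rightarrow> (real \<Rightarrow> 'w \<Rightarrow> 'v^'m) \<Rightarrow> ennreal" where
  "cp_norm M W w T p \<omega> X DX DmuX =
       (SUP st\<in>S2 T. ennreal (norm (X (snd st) - X (fst st)))
                      / ennreal (w (fst st) (snd st) \<omega> powr (1 / p)))
     + (SUP st\<in>S2 T. ennreal (norm (DX (snd st) - DX (fst st)))
                      / ennreal (w (fst st) (snd st) \<omega> powr (1 / p)))
     + (SUP st\<in>S2 T. Lq M (4 / 3) (\<lambda>\<omega>'. DmuX (snd st) \<omega>' - DmuX (fst st) \<omega>')
                      / ennreal (w (fst st) (snd st) \<omega> powr (1 / p)))
     + (SUP st\<in>S2 T. ennreal (norm (cp_rem M W \<omega> X DX DmuX (fst st) (snd st)))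
                      / ennreal (w (fst st) (snd st) \<omega> powr (2 / p)))"

definition cp_norm_star ::
  "'w measure \<Rightarrow> ('w \<Rightarrow> real \<Rightarrow> real^'m) \<Rightarrow> (real \<Rightarrow> real \<Rightarrow> 'w \<Rightarrow> real) \<Rightarrow> real \<Rightarrow> real \<Rightarrow> 'w
   \<Rightarrow> (real \<Rightarrow> 'v::euclidean_space) \<Rightarrow> (real \<Rightarrow> 'v^'m) \<Rightarrow> (real \<Rightarrow> 'w \<Rightarrow> 'v^'m) \<Rightarrow> ennreal" where
  "cp_norm_star M W w T p \<omega> X DX DmuX =
     ennreal (norm (X 0)) + ennreal (norm (DX 0)) + Lq M (4 / 3) (DmuX 0)
     + cp_norm M W w T p \<omega> X DX DmuX"

text \<open>omega-controlled path with path X, Gubinelli derivative DX and measure derivative DmuX.\<close>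
definition controlled_path ::
  "'w measure \<Rightarrow> ('w \<Rightarrow> real \<Rightarrow> real^'m) \<Rightarrow> (real \<Rightarrow> real \<Rightarrow> 'w \<Rightarrow> real) \<Rightarrow> real \<Rightarrow> real \<Rightarrow> 'w
   \<Rightarrow> (real \<Rightarrow> 'v::euclidean_space) \<Rightarrow> (real \<Rightarrow> 'v^'m) \<Rightarrow> (real \<Rightarrow> 'w \<Rightarrow> 'v^'m) \<Rightarrow> bool" where
  "controlled_path M W w T p \<omega> X DX DmuX \<longleftrightarrow>
     continuous_on {0..T} X \<and> continuous_on {0..T} DX \<and>
     (\<forall>t\<in>{0..T}. in_Lq M (4 / 3) (DmuX t)) \<and> Lq_continuous_on M (4 / 3) {0..T} DmuX \<and>
     continuous_on (S2 T) (\<lambda>(s, t). cp_rem M W \<omega> X DX DmuX s t) \<and>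
     cp_norm M W w T p \<omega> X DX DmuX < \<infinity>"

definition random_controlled_path ::
  "'w measure \<Rightarrow> ('w \<Rightarrow> real \<Rightarrow> real^'m) \<Rightarrow> (real \<Rightarrow> real \<Rightarrow> 'w \<Rightarrow> real) \<Rightarrow> real \<Rightarrow> real
   \<Rightarrow> ('w \<Rightarrow> real \<Rightarrow> 'v::euclidean_space) \<Rightarrow> ('w \<Rightarrow> real \<Rightarrow> 'v^'m) \<Rightarrow> ('w \<Rightarrow> real \<Rightarrow> 'w \<Rightarrow> 'v^'m) \<Rightarrow> bool" where
  "random_controlled_path M W w T p Y DY DmuY \<longleftrightarrow>
     (\<forall>\<omega>. controlled_path M W w T p \<omega> (Y \<omega>) (DY \<omega>) (DmuY \<omega>)) \<and>
     (\<forall>t. (\<lambda>\<omega>. Y \<omega> t) \<in> borel_measurable M) \<and>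
     (\<forall>t. (\<lambda>\<omega>. DY \<omega> t) \<in> borel_measurable M) \<and>
     (\<forall>t. (\<lambda>(\<omega>, \<omega>'). DmuY \<omega> t \<omega>') \<in> borel_measurable (M \<Otimes>\<^sub>M M)) \<and>
     (\<forall>s t. (\<lambda>\<omega>. cp_rem M W \<omega> (Y \<omega>) (DY \<omega>) (DmuY \<omega>) s t) \<in> borel_measurable M) \<and>
     Lq M 2 (\<lambda>\<omega>. Y \<omega> 0) < \<infinity> \<and>
     LqE M 8 (\<lambda>\<omega>. cp_norm M W w T p \<omega> (Y \<omega>) (DY \<omega>) (DmuY \<omega>)) < \<infinity>"

text \<open>G : R^d x L^2(Omega;R^d) -> V is continuously Frechet differentiable with partial x-derivative Gx
  (column l = derivative in direction e_l) and L^2-gradient GZ, i.e.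
  G(x+h, Z+H) = G(x,Z) + Gx(x,Z) h + E[GZ(x,Z) H] + o(|h| + ||H||_2), and
  (x,Z) -> (Gx(x,Z), GZ(x,Z)) is continuous into V^d x L^2.\<close>
definition frechet_C1 ::
  "'w measure \<Rightarrow> (real^'d \<Rightarrow> ('w \<Rightarrow> real^'d) \<Rightarrow> 'v::euclidean_space)
   \<Rightarrow> (real^'d \<Rightarrow> ('w \<Rightarrow> real^'d) \<Rightarrow> 'v^'d) \<Rightarrow> (real^'d \<Rightarrow> ('w \<Rightarrow> real^'d) \<Rightarrow> 'w \<Rightarrow> 'v^'d) \<Rightarrow> bool" where
  "frechet_C1 M G Gx GZ \<longleftrightarrow>
     (\<forall>x Z. in_Lq M 2 Z \<longrightarrow> in_Lq M 2 (GZ x Z) \<and>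
       (\<forall>e>0. \<exists>\<delta>>0. \<forall>h H. in_Lq M 2 H \<longrightarrow> norm h + enn2real (Lq M 2 H) < \<delta> \<longrightarrow>
          norm (G (x + h) (\<lambda>\<omega>. Z \<omega> + H \<omega>) - G x Z - apply_deriv (Gx x Z) h
                - (\<integral>\<omega>. apply_deriv (GZ x Z \<omega>) (H \<omega>) \<partial>M))
          \<le> e * (norm h + enn2real (Lq M 2 H))) \<and>
       (\<forall>e>0. \<exists>\<delta>>0. \<forall>x' Z'. in_Lq M 2 Z' \<longrightarrow>
          norm (x' - x) + enn2real (Lq M 2 (\<lambda>\<omega>. Z' \<omega> - Z \<omega>)) < \<delta> \<longrightarrow>
          norm (Gx x' Z' - Gx x Z) + enn2real (Lq M 2 (\<lambda>\<omega>. GZ x' Z' \<omega> - GZ x Z \<omega>)) < e))"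

text \<open>Regularity assumptions 1 for F(x, mu), with lift F(x, Z) = F(x, law of Z).
  DxF = partial_x F, DZF = nabla_Z F = D_mu F(x, L(Z))(Z), DxxF = partial_x^2 F,
  DxZF = partial_x nabla_Z F (all as functions of (x, Z)).\<close>
definition regularity1 ::
  "'w measure \<Rightarrow> (real^'d \<Rightarrow> (real^'d) measure \<Rightarrow> 'v::euclidean_space)
   \<Rightarrow> (real^'d \<Rightarrow> ('w \<Rightarrow> real^'d) \<Rightarrow> 'v^'d) \<Rightarrow> (real^'d \<Rightarrow> ('w \<Rightarrow> real^'d) \<Rightarrow> 'w \<Rightarrow> 'v^'d)
   \<Rightarrow> (real^'d \<Rightarrow> ('w \<Rightarrow> real^'d) \<Rightarrow> 'v^'d^'d) \<Rightarrow> (real^'d \<Rightarrow> ('w \<Rightarrow> real^'d) \<Rightarrow> 'w \<Rightarrow> 'v^'d^'d)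
   \<Rightarrow> real \<Rightarrow> bool" where
  "regularity1 M F DxF DZF DxxF DxZF \<Lambda> \<longleftrightarrow>
     frechet_C1 M (\<lambda>x Z. F x (distr M borel Z)) DxF DZF \<and>
     frechet_C1 M DxF DxxF DxZF \<and>
     (\<forall>x Z. in_Lq M 2 Z \<longrightarrow>
        norm (F x (distr M borel Z)) \<le> \<Lambda> \<and> norm (DxF x Z) \<le> \<Lambda> \<and> norm (DxxF x Z) \<le> \<Lambda> \<and>
        Lq M 2 (DZF x Z) \<le> ennreal \<Lambda> \<and> Lq M 2 (DxZF x Z) \<le> ennreal \<Lambda>) \<and>
     (\<forall>x Z Z'. in_Lq M 2 Z \<longrightarrow> in_Lq M 2 Z' \<longrightarrow>
        Lq M 2 (\<lambda>\<omega>. DZF x Z \<omega> - DZF x Z' \<omega>) \<le> ennreal \<Lambda> * Lq M 2 (\<lambda>\<omega>. Z \<omega> - Z' \<omega>))"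

end

theory Submission
  imports Defs
begin


lemma epow_ennreal: "0 \<le> y \<Longrightarrow> epow (ennreal y) r = ennreal (y powr r)"
  by (simp add: epow_def)

lemma epow_top[simp]: "epow \<infinity> r = \<infinity>"
  by (simp add: epow_def)

lemma epow_zero[simp]: "epow 0 r = 0"
  by (simp add: epow_def)

lemma epow_mono: assumes "x \<le> y" "0 \<le> r" shows "epow x r \<le> epow y r"
proof (cases "y = \<infinity>")
  case True then show ?thesis by (simp add: epow_def)
next
  case False
  then have "x \<noteq> \<infinity>" using assms(1) by (auto simp: top_unique)
  then show ?thesis using False assms
    by (simp add: epow_def ennreal_leI) (intro ennreal_leI powr_mono2, auto intro!: enn2real_mono simp: less_top)
qed

lemma epow_epow: "epow (epow x a) b = epow x (a * b)"
  by (cases "x = \<infinity>") (auto simp: epow_def powr_powr)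

lemma epow_one: "epow x 1 = x"
  by (cases x) (auto simp: epow_def)

lemma epow_mult: assumes "0 < r" "x \<noteq> \<infinity>" "y \<noteq> \<infinity>"
  shows "epow (x * y) r = epow x r * epow y r"
proof -
  obtain a b where ab: "x = ennreal a" "y = ennreal b" "0 \<le> a" "0 \<le> b"
    using assms by (cases x; cases y) auto
  have "x * y = ennreal (a * b)" using ab by (simp add: ennreal_mult)
  then have "epow (x * y) r = ennreal ((a * b) powr r)" using ab by (simp add: epow_def)
  also have "\<dots> = epow x r * epow y r" using ab by (simp add: epow_def powr_mult ennreal_mult)
  finally show ?thesis .
qed

lemma LqE_mono: assumes "\<And>x. x \<in> space M \<Longrightarrow> f x \<le> g x" "0 < r"
  shows "LqE M r f \<le> LqE M r g"
  unfolding LqE_def using assms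
  by (intro epow_mono nn_integral_mono) auto

lemma LqE_mono_AE: assumes "AE x in M. f x \<le> g x" "0 < r"
  shows "LqE M r f \<le> LqE M r g"
  unfolding LqE_def using assms
  by (intro epow_mono nn_integral_mono_AE) (auto elim!: eventually_mono intro: epow_mono)


lemma epow_top'[simp]: "epow top r = top"
  by (simp add: epow_def)

lemma young_nonneg:
  fixes u v :: real
  assumes "0 \<le> u" "0 \<le> v" "0 < \<alpha>" "0 < \<beta>" "\<alpha> + \<beta> = 1"
  shows "u powr \<alpha> * v powr \<beta> \<le> \<alpha> * u + \<beta> * v"
proof (cases "u = 0 \<or> v = 0")
  case True then show ?thesis using assms by auto
next
  case False then show ?thesis using assms Youngs_inequality_0[of \<alpha> \<beta> u v] by auto
qed

lemma nn_integral_zero_AE_real: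
  fixes f :: "'a \<Rightarrow> real"
  assumes "f \<in> borel_measurable M" "\<And>x. 0 \<le> f x" "0 < a"
    "(\<integral>\<^sup>+ x. ennreal (f x powr a) \<partial>M) = 0"
  shows "AE x in M. f x = 0"
proof -
  have "AE x in M. ennreal (f x powr a) = 0"
    using assms by (subst nn_integral_0_iff_AE[symmetric]) auto
  then show ?thesis
    by eventually_elim (use assms in auto)
qed

lemma holder:
  fixes f g :: "'a \<Rightarrow> real"
  assumes f: "f \<in> borel_measurable M" and g: "g \<in> borel_measurable M"
    and nnf: "\<And>x. 0 \<le> f x" and nng: "\<And>x. 0 \<le> g x"
    and r: "0 < r" "0 < a" "0 < b" "1/r = 1/a + 1/b"
  shows "LqE M r (\<lambda>x. ennreal (f x * g x))
     \<le> LqE M a (\<lambda>x. ennreal (f x)) * LqE M b (\<lambda>x. ennreal (g x))"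
proof -
  define I where "I = (\<integral>\<^sup>+ x. ennreal (f x powr a) \<partial>M)"
  define J where "J = (\<integral>\<^sup>+ x. ennreal (g x powr b) \<partial>M)"
  define K where "K = (\<integral>\<^sup>+ x. ennreal ((f x * g x) powr r) \<partial>M)"
  have L: "LqE M r (\<lambda>x. ennreal (f x * g x)) = epow K (1/r)"
    unfolding LqE_def K_def using nnf nng
    by (simp add: epow_ennreal)
  have RI: "LqE M a (\<lambda>x. ennreal (f x)) = epow I (1/a)"
    unfolding LqE_def I_def using nnf by (simp add: epow_ennreal)
  have RJ: "LqE M b (\<lambda>x. ennreal (g x)) = epow J (1/b)"
    unfolding LqE_def J_def using nng by (simp add: epow_ennreal)
  have mfg: "(\<lambda>x. (f x * g x) powr r) \<in> borel_measurable M" using f g by measurable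
  have K0: "K = 0" if "AE x in M. f x = 0 \<or> g x = 0"
    unfolding K_def using that r mfg
    by (subst nn_integral_0_iff_AE) (auto elim!: eventually_mono)
  show ?thesis
  proof (cases "I = 0 \<or> J = 0")
    case True
    then have "AE x in M. f x = 0 \<or> g x = 0"
      using nn_integral_zero_AE_real[OF f nnf, of a] nn_integral_zero_AE_real[OF g nng, of b] r
      unfolding I_def J_def by (auto elim!: eventually_mono)
    then show ?thesis unfolding L using K0 by simp
  next
    case False
    then have I0: "I \<noteq> 0" and J0: "J \<noteq> 0" by auto
    have pI: "epow I (1/a) \<noteq> 0"
      using I0 r by (cases I) (auto simp: epow_def)
    have pJ: "epow J (1/b) \<noteq> 0"
      using J0 r by (cases J) (auto simp: epow_def)
    show ?thesis
    proof (cases "I = \<infinity> \<or> J = \<infinity>")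
      case True
      then have "epow I (1/a) * epow J (1/b) = \<infinity>"
        using pI pJ by (auto simp: ennreal_mult_eq_top_iff)
      then show ?thesis unfolding L RI RJ by simp
    next
      case False
      define i where "i = enn2real I"
      define j where "j = enn2real J"
      have Ii: "I = ennreal i" and Jj: "J = ennreal j"
        using False unfolding i_def j_def by (auto simp: less_top)
      have ipos: "0 < i" and jpos: "0 < j"
        using I0 J0 False unfolding i_def j_def
        by (simp_all add: enn2real_positive_iff less_top[symmetric] zero_less_iff_neq_zero)
      define \<alpha> where "\<alpha> = r / a"
      define \<beta> where "\<beta> = r / b"
      have ab: "0 < \<alpha>" "0 < \<beta>" "\<alpha> + \<beta> = 1"
        using r unfolding \<alpha>_def \<beta>_def by (auto simp: field_simps)
      have pt: "(f x * g x) powr r \<le> (i powr \<alpha> * j powr \<beta>) *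
                  (\<alpha> / i * f x powr a + \<beta> / j * g x powr b)" for x
      proof -
        define u where "u = f x powr a / i"
        define v where "v = g x powr b / j"
        have uv: "0 \<le> u" "0 \<le> v" unfolding u_def v_def using ipos jpos by auto
        have Y: "u powr \<alpha> * v powr \<beta> \<le> \<alpha> * u + \<beta> * v"
          using young_nonneg[OF uv ab] .
        have "u powr \<alpha> = f x powr r / i powr \<alpha>"
          unfolding u_def using ipos nnf[of x] r
          by (simp add: powr_divide powr_powr \<alpha>_def)
        moreover have "v powr \<beta> = g x powr r / j powr \<beta>"
          unfolding v_def using jpos nng[of x] r
          by (simp add: powr_divide powr_powr \<beta>_def)
        ultimately have "(f x * g x) powr r = (i powr \<alpha> * j powr \<beta>) * (u powr \<alpha> * v powr \<beta>)"
          using ipos jpos nnf[of x] nng[of x] by (simp add: powr_mult)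
        also have "\<dots> \<le> (i powr \<alpha> * j powr \<beta>) * (\<alpha> * u + \<beta> * v)"
          using Y by (intro mult_left_mono) auto
        finally show ?thesis unfolding u_def v_def by simp
      qed
      have mf: "(\<lambda>x. ennreal (f x powr a)) \<in> borel_measurable M" using f by measurable
      have mg: "(\<lambda>x. ennreal (g x powr b)) \<in> borel_measurable M" using g by measurable
      have "K \<le> (\<integral>\<^sup>+ x. ennreal (i powr \<alpha> * j powr \<beta>) *
                 (ennreal (\<alpha> / i) * ennreal (f x powr a) + ennreal (\<beta> / j) * ennreal (g x powr b)) \<partial>M)"
        unfolding K_def
      proof (intro nn_integral_mono)
        fix x
        have "ennreal ((f x * g x) powr r) \<le> ennreal ((i powr \<alpha> * j powr \<beta>) *
                  (\<alpha> / i * f x powr a + \<beta> / j * g x powr b))"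
          using pt[of x] by (rule ennreal_leI)
        also have "\<dots> = ennreal (i powr \<alpha> * j powr \<beta>) *
                 (ennreal (\<alpha> / i) * ennreal (f x powr a) + ennreal (\<beta> / j) * ennreal (g x powr b))"
        proof -
          have e1: "ennreal (\<alpha> / i) * ennreal (f x powr a) = ennreal (\<alpha> / i * f x powr a)"
            using ipos ab by (intro ennreal_mult[symmetric]) auto
          have e2: "ennreal (\<beta> / j) * ennreal (g x powr b) = ennreal (\<beta> / j * g x powr b)"
            using jpos ab by (intro ennreal_mult[symmetric]) auto
          have e3: "ennreal (\<alpha> / i * f x powr a) + ennreal (\<beta> / j * g x powr b)
              = ennreal (\<alpha> / i * f x powr a + \<beta> / j * g x powr b)"
            using ipos jpos ab by (intro ennreal_plus[symmetric]) auto
          show ?thesis unfolding e1 e2 e3 using ipos jpos ab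
            by (intro ennreal_mult) auto
        qed
        finally show "ennreal ((f x * g x) powr r) \<le> \<dots>" .
      qed
      also have "\<dots> = ennreal (i powr \<alpha> * j powr \<beta>) *
                 (ennreal (\<alpha> / i) * I + ennreal (\<beta> / j) * J)"
        unfolding I_def J_def using mf mg
        by (simp add: nn_integral_cmult nn_integral_add)
      also have "\<dots> = ennreal (i powr \<alpha> * j powr \<beta>)"
        unfolding Ii Jj using ipos jpos ab
        by (simp add: ennreal_mult[symmetric] ennreal_plus[symmetric] del: ennreal_plus)
      finally have KK: "K \<le> ennreal (i powr \<alpha> * j powr \<beta>)" .
      have "epow K (1/r) \<le> epow (ennreal (i powr \<alpha> * j powr \<beta>)) (1/r)"
        using KK r by (intro epow_mono) auto
      also have "\<dots> = ennreal ((i powr \<alpha> * j powr \<beta>) powr (1/r))"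
        by (simp add: epow_ennreal)
      also have "(i powr \<alpha> * j powr \<beta>) powr (1/r) = i powr (1/a) * j powr (1/b)"
      proof -
        have a1: "\<alpha> * (1/r) = 1/a" "\<beta> * (1/r) = 1/b" unfolding \<alpha>_def \<beta>_def using r(1) by simp_all
        have "(i powr \<alpha> * j powr \<beta>) powr (1/r) = (i powr \<alpha>) powr (1/r) * (j powr \<beta>) powr (1/r)"
          by (rule powr_mult)
        also have "\<dots> = i powr (\<alpha> * (1/r)) * j powr (\<beta> * (1/r))" by (simp only: powr_powr)
        also have "\<dots> = i powr (1/a) * j powr (1/b)" unfolding a1 by (rule refl)
        finally show ?thesis .
      qed
      also have "ennreal (i powr (1/a) * j powr (1/b)) = epow I (1/a) * epow J (1/b)"
        unfolding Ii Jj using ipos jpos by (simp add: epow_ennreal ennreal_mult)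
      finally show ?thesis unfolding L RI RJ .
    qed
  qed
qed


lemma LqE_ennreal: "(\<And>x. 0 \<le> f x) \<Longrightarrow>
  LqE M r (\<lambda>x. ennreal (f x)) = epow (\<integral>\<^sup>+ x. ennreal (f x powr r) \<partial>M) (1/r)"
  unfolding LqE_def by (simp add: epow_ennreal)

lemma (in prob_space) LqE_const:
  assumes "0 \<le> c" "0 < r" shows "LqE M r (\<lambda>x. ennreal c) = ennreal c"
proof -
  have "LqE M r (\<lambda>x. ennreal c) = epow (ennreal (c powr r)) (1/r)"
    using assms by (simp add: LqE_ennreal emeasure_space_1)
  also have "\<dots> = ennreal c" using assms by (simp add: epow_ennreal powr_powr)
  finally show ?thesis .
qed

lemma (in prob_space) LqE_le_const:
  assumes "AE x in M. f x \<le> ennreal c" "0 \<le> c" "0 < r" shows "LqE M r f \<le> ennreal c"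
  using LqE_mono_AE[OF assms(1) assms(3)] LqE_const[OF assms(2,3)] by simp

lemma (in prob_space) lyapunov:
  fixes f :: "'a \<Rightarrow> real"
  assumes f: "f \<in> borel_measurable M" "\<And>x. 0 \<le> f x" and rs: "0 < r" "r \<le> s"
  shows "LqE M r (\<lambda>x. ennreal (f x)) \<le> LqE M s (\<lambda>x. ennreal (f x))"
proof (cases "r = s")
  case True then show ?thesis by simp
next
  case False
  then have rs': "r < s" using rs by simp
  define b where "b = r * s / (s - r)"
  have b: "0 < b" "1/r = 1/s + 1/b" using rs rs' unfolding b_def by (auto simp: field_simps)
  have "LqE M r (\<lambda>x. ennreal (f x * 1)) \<le> LqE M s (\<lambda>x. ennreal (f x)) * LqE M b (\<lambda>x. ennreal 1)"
    by (rule holder[OF f(1) _ f(2)]) (use rs b in auto)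
  also have "LqE M b (\<lambda>x. ennreal 1) = 1" using LqE_const[of 1 b] b by simp
  finally show ?thesis by simp
qed

lemma LqE_scale:
  fixes f :: "'a \<Rightarrow> real"
  assumes f: "f \<in> borel_measurable M" "\<And>x. 0 \<le> f x" and c: "0 \<le> c" and r: "0 < r"
  shows "LqE M r (\<lambda>x. ennreal (c * f x)) = ennreal c * LqE M r (\<lambda>x. ennreal (f x))"
proof -
  define I where "I = (\<integral>\<^sup>+ x. ennreal (f x powr r) \<partial>M)"
  have "(\<integral>\<^sup>+ x. ennreal ((c * f x) powr r) \<partial>M) = (\<integral>\<^sup>+ x. ennreal (c powr r) * ennreal (f x powr r) \<partial>M)"
    using c f by (intro nn_integral_cong) (simp add: powr_mult ennreal_mult)
  also have "\<dots> = ennreal (c powr r) * I" unfolding I_def using f by (simp add: nn_integral_cmult)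
  finally have e: "(\<integral>\<^sup>+ x. ennreal ((c * f x) powr r) \<partial>M) = ennreal (c powr r) * I" .
  have L: "LqE M r (\<lambda>x. ennreal (c * f x)) = epow (ennreal (c powr r) * I) (1/r)"
    using e c f by (simp add: LqE_ennreal)
  have R: "LqE M r (\<lambda>x. ennreal (f x)) = epow I (1/r)"
    using f by (simp add: LqE_ennreal I_def)
  show ?thesis
  proof (cases "c = 0")
    case True then show ?thesis unfolding L R by simp
  next
    case False
    then have cp: "0 < c" using c by simp
    show ?thesis
    proof (cases "I = \<infinity>")
      case True
      then show ?thesis unfolding L R using cp by (simp add: ennreal_mult_eq_top_iff)
    next
      case False
      have "epow (ennreal (c powr r) * I) (1/r) = epow (ennreal (c powr r)) (1/r) * epow I (1/r)"
        using False r by (intro epow_mult) auto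
      also have "epow (ennreal (c powr r)) (1/r) = ennreal c" using cp r by (simp add: epow_ennreal powr_powr)
      finally show ?thesis unfolding L R .
    qed
  qed
qed

lemma powr_add_le2:
  fixes x y \<theta> :: real
  assumes "0 \<le> x" "0 \<le> y" "0 < \<theta>" "\<theta> \<le> 1"
  shows "(x + y) powr \<theta> \<le> 2 * (x powr \<theta> + y powr \<theta>)"
proof -
  have "(x + y) powr \<theta> \<le> (2 * max x y) powr \<theta>"
    using assms by (intro powr_mono2) auto
  also have "\<dots> = 2 powr \<theta> * max x y powr \<theta>" using assms by (simp add: powr_mult)
  also have "\<dots> \<le> 2 * max x y powr \<theta>"
  proof (intro mult_right_mono)
    show "2 powr \<theta> \<le> 2" using assms powr_mono[of \<theta> 1 2] by simp
  qed auto
  also have "max x y powr \<theta> \<le> x powr \<theta> + y powr \<theta>"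
    by (cases "x \<le> y") (auto simp: max_def)
  finally show ?thesis by simp
qed

lemma epow_add_le:
  assumes "0 < \<theta>" "\<theta> \<le> 1"
  shows "epow (I + J) \<theta> \<le> 2 * (epow I \<theta> + epow J \<theta>)"
proof (cases "I = \<infinity> \<or> J = \<infinity>")
  case True then show ?thesis by (auto simp: ennreal_mult_eq_top_iff)
next
  case False
  then obtain i j where ij: "I = ennreal i" "J = ennreal j" "0 \<le> i" "0 \<le> j"
    by (cases I; cases J) auto
  have "epow (I + J) \<theta> = ennreal ((i + j) powr \<theta>)"
    using ij by (simp add: epow_ennreal flip: ennreal_plus)
  also have "\<dots> \<le> ennreal (2 * (i powr \<theta> + j powr \<theta>))"
    using powr_add_le2[of i j \<theta>] ij assms by (intro ennreal_leI) auto
  also have "\<dots> = 2 * (epow I \<theta> + epow J \<theta>)"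
    using ij by (simp add: epow_ennreal ennreal_mult ennreal_plus)
  finally show ?thesis .
qed

lemma LqE_triangle:
  fixes f g :: "'a \<Rightarrow> real"
  assumes f: "f \<in> borel_measurable M" "\<And>x. 0 \<le> f x"
    and g: "g \<in> borel_measurable M" "\<And>x. 0 \<le> g x" and r: "1 \<le> r"
  shows "LqE M r (\<lambda>x. ennreal (f x + g x))
     \<le> 4 * (LqE M r (\<lambda>x. ennreal (f x)) + LqE M r (\<lambda>x. ennreal (g x)))"
proof -
  define I where "I = (\<integral>\<^sup>+ x. ennreal (f x powr r) \<partial>M)"
  define J where "J = (\<integral>\<^sup>+ x. ennreal (g x powr r) \<partial>M)"
  have pt: "(f x + g x) powr r \<le> 2 powr r * (f x powr r + g x powr r)" for x
  proof -
    have "(f x + g x) powr r \<le> (2 * max (f x) (g x)) powr r"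
      using f g r by (intro powr_mono2) auto
    also have "\<dots> = 2 powr r * max (f x) (g x) powr r" using f g by (simp add: powr_mult)
    also have "max (f x) (g x) powr r \<le> f x powr r + g x powr r"
      by (cases "f x \<le> g x") (auto simp: max_def)
    finally show ?thesis by simp
  qed
  have "(\<integral>\<^sup>+ x. ennreal ((f x + g x) powr r) \<partial>M)
      \<le> (\<integral>\<^sup>+ x. ennreal (2 powr r) * (ennreal (f x powr r) + ennreal (g x powr r)) \<partial>M)"
    using pt by (intro nn_integral_mono) (simp add: ennreal_mult[symmetric] ennreal_plus[symmetric] ennreal_leI del: ennreal_plus)
  also have "\<dots> = ennreal (2 powr r) * (I + J)"
    unfolding I_def J_def using f g by (simp add: nn_integral_cmult nn_integral_add)
  finally have K: "(\<integral>\<^sup>+ x. ennreal ((f x + g x) powr r) \<partial>M) \<le> ennreal (2 powr r) * (I + J)" .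
  have "LqE M r (\<lambda>x. ennreal (f x + g x)) \<le> epow (ennreal (2 powr r) * (I + J)) (1/r)"
  proof -
    have "LqE M r (\<lambda>x. ennreal (f x + g x)) = epow (\<integral>\<^sup>+ x. ennreal ((f x + g x) powr r) \<partial>M) (1/r)"
      by (rule LqE_ennreal) (use f g in auto)
    then show ?thesis using K r by (simp add: epow_mono)
  qed
  also have "\<dots> \<le> 2 * epow (I + J) (1/r)"
  proof (cases "I + J = \<infinity>")
    case True
    then have "epow (I + J) (1/r) = top" by auto
    moreover have "(2::ennreal) * top = top" by (simp add: ennreal_mult_top)
    ultimately show ?thesis by simp
  next
    case False
    then show ?thesis using r by (simp add: epow_mult epow_ennreal powr_powr)
  qed
  also have "\<dots> \<le> 2 * (2 * (epow I (1/r) + epow J (1/r)))"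
    using r by (intro mult_left_mono epow_add_le) auto
  also have "epow I (1/r) = LqE M r (\<lambda>x. ennreal (f x))" using f by (simp add: LqE_ennreal I_def)
  also have "epow J (1/r) = LqE M r (\<lambda>x. ennreal (g x))" using g by (simp add: LqE_ennreal J_def)
  finally show ?thesis by (simp add: mult.assoc[symmetric])
qed

lemma LqE_one: "LqE M 1 f = (\<integral>\<^sup>+ x. f x \<partial>M)"
  unfolding LqE_def by (simp add: epow_one)

lemma norm_integral_le_Lq1:
  fixes f :: "'a \<Rightarrow> 'b::{banach, second_countable_topology}"
  shows "ennreal (norm (integral\<^sup>L M f)) \<le> Lq M 1 f"
proof (cases "integrable M f")
  case True
  then show ?thesis unfolding Lq_def LqE_one
    by (simp add: integral_norm_bound_ennreal)
next
  case False
  then show ?thesis by (simp add: not_integrable_integral_eq)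
qed


lemma apply_deriv_add_right: "apply_deriv D (a + b) = apply_deriv D a + apply_deriv D b"
  unfolding apply_deriv_def by (simp add: scaleR_add_left sum.distrib)

lemma apply_deriv_diff_right: "apply_deriv D (a - b) = apply_deriv D a - apply_deriv D b"
  unfolding apply_deriv_def by (simp add: scaleR_diff_left sum_subtractf)

lemma apply_deriv_scale_right: "apply_deriv D (c *\<^sub>R a) = c *\<^sub>R apply_deriv D a"
  unfolding apply_deriv_def by (simp add: scaleR_sum_right)

lemma apply_deriv_zero_right[simp]: "apply_deriv D 0 = 0"
  unfolding apply_deriv_def by simp

lemma apply_deriv_zero_left[simp]: "apply_deriv 0 h = 0"
  unfolding apply_deriv_def by simp

lemma apply_deriv_add_left: "apply_deriv (D1 + D2) h = apply_deriv D1 h + apply_deriv D2 h"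
  unfolding apply_deriv_def by (simp add: scaleR_add_right sum.distrib)

lemma apply_deriv_diff_left: "apply_deriv (D1 - D2) h = apply_deriv D1 h - apply_deriv D2 h"
  unfolding apply_deriv_def by (simp add: scaleR_diff_right sum_subtractf)

lemma norm_apply_deriv: "norm (apply_deriv D h) \<le> norm D * norm h"
proof -
  have "norm (apply_deriv D h) \<le> (\<Sum>k\<in>UNIV. norm (h $ k *\<^sub>R D $ k))"
    unfolding apply_deriv_def by (rule norm_sum)
  also have "\<dots> = (\<Sum>k\<in>UNIV. \<bar>norm (D $ k)\<bar> * \<bar>h $ k\<bar>)" by (simp add: mult.commute)
  also have "\<dots> \<le> L2_set (\<lambda>k. norm (D $ k)) UNIV * L2_set (\<lambda>k. h $ k) UNIV"
    by (rule L2_set_mult_ineq)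
  also have "\<dots> = norm D * norm h" by (simp add: norm_vec_def L2_set_def)
  finally show ?thesis .
qed

lemma bounded_linear_apply_deriv: "bounded_linear (apply_deriv D)"
  by (rule bounded_linear_intro[where K="norm D"])
     (simp_all add: apply_deriv_add_right apply_deriv_scale_right norm_apply_deriv mult.commute)

lemma apply_deriv_chi:
  "apply_deriv (\<chi> k. apply_deriv D (V $ k)) h = apply_deriv D (apply_deriv V h)"
proof -
  have "apply_deriv (\<chi> k. apply_deriv D (V $ k)) h
      = (\<Sum>k\<in>UNIV. \<Sum>l\<in>UNIV. (h $ k * V $ k $ l) *\<^sub>R D $ l)"
    unfolding apply_deriv_def by (simp add: scaleR_sum_right)
  also have "\<dots> = (\<Sum>l\<in>UNIV. \<Sum>k\<in>UNIV. (h $ k * V $ k $ l) *\<^sub>R D $ l)"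
    by (rule sum.swap)
  also have "\<dots> = apply_deriv D (apply_deriv V h)"
    unfolding apply_deriv_def by (simp add: sum_component scaleR_sum_left)
  finally show ?thesis .
qed

lemma norm_chi_apply_deriv: "norm (\<chi> k. apply_deriv D (V $ k)) \<le> norm D * norm V"
proof -
  have "norm (\<chi> k. apply_deriv D (V $ k)) = L2_set (\<lambda>k. norm (apply_deriv D (V $ k))) UNIV"
    by (simp add: norm_vec_def)
  also have "\<dots> \<le> L2_set (\<lambda>k. norm D * norm (V $ k)) UNIV"
    by (intro L2_set_mono norm_apply_deriv) auto
  also have "\<dots> = norm D * norm V"
    by (simp add: L2_set_right_distrib[symmetric] norm_vec_def)
  finally show ?thesis .
qed

lemma continuous_apply_deriv:
  "continuous_on UNIV (\<lambda>z. apply_deriv (fst z) (snd z :: real^'n) :: 'v::real_normed_vector)"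
  unfolding apply_deriv_def
  by (intro continuous_intros continuous_on_component continuous_on_fst continuous_on_snd continuous_on_id)

lemma continuous_chi_apply_deriv:
  "continuous_on UNIV (\<lambda>z. (\<chi> k. apply_deriv (fst z) (snd z $ k)) :: 'v::real_normed_vector ^'m)"
  unfolding apply_deriv_def
  by (intro continuous_on_vec_lambda continuous_intros continuous_on_component continuous_on_fst continuous_on_snd continuous_on_id)

lemma measurable_cont2:
  fixes f :: "'a \<Rightarrow> 'b::second_countable_topology" and g :: "'a \<Rightarrow> 'c::second_countable_topology"
  assumes f: "f \<in> borel_measurable M" and g: "g \<in> borel_measurable M"
    and h: "continuous_on UNIV (\<lambda>z. h (fst z) (snd z) :: 'd::topological_space)"
  shows "(\<lambda>x. h (f x) (g x)) \<in> borel_measurable M"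
proof -
  have "(\<lambda>x. (f x, g x)) \<in> M \<rightarrow>\<^sub>M borel \<Otimes>\<^sub>M borel" using f g by (rule measurable_Pair)
  then have "(\<lambda>x. (f x, g x)) \<in> borel_measurable M" by (simp add: borel_prod)
  from borel_measurable_continuous_on[OF h this] show ?thesis by simp
qed

lemma measurable_apply_deriv[measurable]:
  fixes D :: "'a \<Rightarrow> 'v::euclidean_space^'n" and h :: "'a \<Rightarrow> real^'n"
  assumes "D \<in> borel_measurable M" "h \<in> borel_measurable M"
  shows "(\<lambda>x. apply_deriv (D x) (h x)) \<in> borel_measurable M"
  using measurable_cont2[OF assms continuous_apply_deriv] .

lemma measurable_chi_apply_deriv[measurable]:
  fixes D :: "'a \<Rightarrow> 'v::euclidean_space^'n" and V :: "'a \<Rightarrow> (real^'n)^'m"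
  assumes "D \<in> borel_measurable M" "V \<in> borel_measurable M"
  shows "(\<lambda>x. \<chi> k. apply_deriv (D x) (V x $ k)) \<in> borel_measurable M"
  using measurable_cont2[OF assms continuous_chi_apply_deriv] .


definition n2 :: "'a measure \<Rightarrow> ('a \<Rightarrow> 'b::real_normed_vector) \<Rightarrow> real" where
  "n2 M f = enn2real (Lq M 2 f)"

lemma n2_nonneg[simp]: "0 \<le> n2 M f" by (simp add: n2_def)

lemma Lq_zero_fun[simp]: "Lq M r (\<lambda>x. 0) = 0"
  by (simp add: Lq_def LqE_def)

lemma Lq_mono: assumes "\<And>x. x \<in> space M \<Longrightarrow> norm (f x) \<le> norm (g x)" "0 < r"
  shows "Lq M r f \<le> Lq M r g"
  unfolding Lq_def using assms by (intro LqE_mono) auto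

lemma Lq_scaleR:
  fixes H :: "'a \<Rightarrow> 'b::real_normed_vector"
  assumes "H \<in> borel_measurable M" "0 < r"
  shows "Lq M r (\<lambda>x. c *\<^sub>R H x) = ennreal \<bar>c\<bar> * Lq M r H"
  unfolding Lq_def using LqE_scale[of "\<lambda>x. norm (H x)" M "\<bar>c\<bar>" r] assms by simp

lemma Lq_triangle:
  fixes f g :: "'a \<Rightarrow> 'b::euclidean_space"
  assumes "f \<in> borel_measurable M" "g \<in> borel_measurable M" "1 \<le> r"
  shows "Lq M r (\<lambda>x. f x + g x) \<le> 4 * (Lq M r f + Lq M r g)"
proof -
  have "Lq M r (\<lambda>x. f x + g x) \<le> LqE M r (\<lambda>x. ennreal (norm (f x) + norm (g x)))"
    unfolding Lq_def using assms by (intro LqE_mono ennreal_leI norm_triangle_ineq) auto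
  also have "\<dots> \<le> 4 * (Lq M r f + Lq M r g)"
    unfolding Lq_def using assms by (intro LqE_triangle) auto
  finally show ?thesis .
qed

lemma Lq_triangle_diff:
  fixes f g :: "'a \<Rightarrow> 'b::euclidean_space"
  assumes "f \<in> borel_measurable M" "g \<in> borel_measurable M" "1 \<le> r"
  shows "Lq M r (\<lambda>x. f x - g x) \<le> 4 * (Lq M r f + Lq M r g)"
proof -
  have "Lq M r (\<lambda>x. f x - g x) = Lq M r (\<lambda>x. f x + (- g x))" by simp
  also have "\<dots> \<le> 4 * (Lq M r f + Lq M r (\<lambda>x. - g x))"
    using assms by (intro Lq_triangle) auto
  also have "Lq M r (\<lambda>x. - g x) = Lq M r g" by (simp add: Lq_def)
  finally show ?thesis .
qed

lemma in_Lq_add: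
  fixes f g :: "'a \<Rightarrow> 'b::euclidean_space"
  assumes "in_Lq M r f" "in_Lq M r g" "1 \<le> r"
  shows "in_Lq M r (\<lambda>x. f x + g x)"
proof -
  have "Lq M r (\<lambda>x. f x + g x) \<le> 4 * (Lq M r f + Lq M r g)"
    using assms by (intro Lq_triangle) (auto simp: in_Lq_def)
  also have "\<dots> < \<infinity>" using assms by (auto simp: in_Lq_def ennreal_mult_less_top)
  finally show ?thesis using assms by (auto simp: in_Lq_def)
qed

lemma in_Lq_diff:
  fixes f g :: "'a \<Rightarrow> 'b::euclidean_space"
  assumes "in_Lq M r f" "in_Lq M r g" "1 \<le> r"
  shows "in_Lq M r (\<lambda>x. f x - g x)"
proof -
  have "Lq M r (\<lambda>x. f x - g x) \<le> 4 * (Lq M r f + Lq M r g)"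
    using assms by (intro Lq_triangle_diff) (auto simp: in_Lq_def)
  also have "\<dots> < \<infinity>" using assms by (auto simp: in_Lq_def ennreal_mult_less_top)
  finally show ?thesis using assms by (auto simp: in_Lq_def)
qed

lemma in_Lq_scaleR:
  fixes H :: "'a \<Rightarrow> 'b::real_normed_vector"
  assumes "in_Lq M r H" "0 < r"
  shows "in_Lq M r (\<lambda>x. c *\<^sub>R H x)"
  using assms Lq_scaleR[of H M r c] by (auto simp: in_Lq_def ennreal_mult_less_top)

lemma in_Lq_zero[simp]: "in_Lq M r (\<lambda>x. 0)"
  by (simp add: in_Lq_def)

lemma n2_scaleR:
  assumes "H \<in> borel_measurable M"
  shows "n2 M (\<lambda>x. c *\<^sub>R H x) = \<bar>c\<bar> * n2 M H"
  unfolding n2_def using Lq_scaleR[OF assms, of 2 c] by (simp add: enn2real_mult)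

lemma Lq_finite_eq: "in_Lq M r f \<Longrightarrow> Lq M r f = ennreal (enn2real (Lq M r f))"
  by (auto simp: in_Lq_def less_top)

lemma Lq_n2: "in_Lq M 2 f \<Longrightarrow> Lq M 2 f = ennreal (n2 M f)"
  unfolding n2_def by (rule Lq_finite_eq)

lemma Lq1_apply_deriv:
  fixes D :: "'a \<Rightarrow> 'v::euclidean_space^'n" and H :: "'a \<Rightarrow> real^'n"
  assumes "D \<in> borel_measurable M" "H \<in> borel_measurable M"
  shows "Lq M 1 (\<lambda>x. apply_deriv (D x) (H x)) \<le> Lq M 2 D * Lq M 2 H"
proof -
  have "Lq M 1 (\<lambda>x. apply_deriv (D x) (H x)) \<le> LqE M 1 (\<lambda>x. ennreal (norm (D x) * norm (H x)))"
    unfolding Lq_def by (intro LqE_mono ennreal_leI norm_apply_deriv) auto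
  also have "\<dots> \<le> Lq M 2 D * Lq M 2 H"
    unfolding Lq_def using assms by (intro holder) auto
  finally show ?thesis .
qed

lemma integrable_apply_deriv:
  fixes D :: "'a \<Rightarrow> 'v::euclidean_space^'n" and H :: "'a \<Rightarrow> real^'n"
  assumes "in_Lq M 2 D" "in_Lq M 2 H"
  shows "integrable M (\<lambda>x. apply_deriv (D x) (H x))"
proof (rule integrableI_bounded)
  show "(\<lambda>x. apply_deriv (D x) (H x)) \<in> borel_measurable M"
    using assms by (auto simp: in_Lq_def)
  have "(\<integral>\<^sup>+ x. ennreal (norm (apply_deriv (D x) (H x))) \<partial>M) = Lq M 1 (\<lambda>x. apply_deriv (D x) (H x))"
    by (simp add: Lq_def LqE_one)
  also have "\<dots> \<le> Lq M 2 D * Lq M 2 H"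
    using assms by (intro Lq1_apply_deriv) (auto simp: in_Lq_def)
  also have "\<dots> < \<infinity>" using assms by (auto simp: in_Lq_def ennreal_mult_less_top)
  finally show "(\<integral>\<^sup>+ x. ennreal (norm (apply_deriv (D x) (H x))) \<partial>M) < \<infinity>" .
qed

lemma norm_E_apply_deriv:
  fixes D :: "'a \<Rightarrow> 'v::euclidean_space^'n" and H :: "'a \<Rightarrow> real^'n"
  assumes "in_Lq M 2 D" "in_Lq M 2 H"
  shows "norm (\<integral>x. apply_deriv (D x) (H x) \<partial>M) \<le> n2 M D * n2 M H"
proof -
  have "ennreal (norm (\<integral>x. apply_deriv (D x) (H x) \<partial>M)) \<le> Lq M 1 (\<lambda>x. apply_deriv (D x) (H x))"
    by (rule norm_integral_le_Lq1)
  also have "\<dots> \<le> Lq M 2 D * Lq M 2 H"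
    using assms by (intro Lq1_apply_deriv) (auto simp: in_Lq_def)
  also have "\<dots> = ennreal (n2 M D * n2 M H)"
    using assms by (simp add: Lq_n2 ennreal_mult)
  finally show ?thesis by (simp add: ennreal_le_iff)
qed

lemma integral_apply_deriv_diff_left:
  fixes D1 D2 :: "'a \<Rightarrow> 'v::euclidean_space^'n" and H :: "'a \<Rightarrow> real^'n"
  assumes "in_Lq M 2 D1" "in_Lq M 2 D2" "in_Lq M 2 H"
  shows "(\<integral>x. apply_deriv (D1 x) (H x) \<partial>M) - (\<integral>x. apply_deriv (D2 x) (H x) \<partial>M)
       = (\<integral>x. apply_deriv (D1 x - D2 x) (H x) \<partial>M)"
  using assms by (simp add: apply_deriv_diff_left integral_diff integrable_apply_deriv)

lemma line_mvt:
  fixes \<phi> :: "real \<Rightarrow> 'v::real_inner"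
  assumes der: "\<And>\<tau>. \<tau> \<in> {0..1} \<Longrightarrow> (\<phi> has_vector_derivative \<phi>' \<tau>) (at \<tau>)"
    and bd: "\<And>\<tau>. \<tau> \<in> {0..1} \<Longrightarrow> norm (\<phi>' \<tau>) \<le> B"
  shows "norm (\<phi> 1 - \<phi> 0) \<le> B"
proof -
  have cont: "continuous_on {0..1} \<phi>"
    using der by (intro continuous_at_imp_continuous_on ballI has_vector_derivative_continuous) auto
  have "\<exists>x\<in>{0<..<1}. norm (\<phi> 1 - \<phi> 0) \<le> norm ((\<lambda>h. h *\<^sub>R \<phi>' x) (1 - 0))"
    by (rule mvt_general[OF _ cont]) (use der in \<open>auto simp: has_vector_derivative_def\<close>)
  then obtain x where "x \<in> {0<..<1}" "norm (\<phi> 1 - \<phi> 0) \<le> norm (\<phi>' x)" by auto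
  then show ?thesis using bd[of x] by auto
qed

lemma segment_mvt:
  fixes f :: "real^'n \<Rightarrow> 'v::real_inner"
  assumes der: "\<And>\<tau>. \<tau> \<in> {0..1} \<Longrightarrow> (f has_derivative apply_deriv (Df (x + \<tau> *\<^sub>R (x' - x)))) (at (x + \<tau> *\<^sub>R (x' - x)))"
    and bd: "\<And>\<tau>. \<tau> \<in> {0..1} \<Longrightarrow> norm (Df (x + \<tau> *\<^sub>R (x' - x))) \<le> B"
  shows "norm (f x' - f x) \<le> B * norm (x' - x)"
proof -
  define \<phi> where "\<phi> \<tau> = f (x + \<tau> *\<^sub>R (x' - x))" for \<tau>
  have "(\<phi> has_vector_derivative apply_deriv (Df (x + \<tau> *\<^sub>R (x' - x))) (x' - x)) (at \<tau>)"
    if "\<tau> \<in> {0..1}" for \<tau>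
  proof -
    have l: "((\<lambda>\<tau>. x + \<tau> *\<^sub>R (x' - x)) has_derivative (\<lambda>\<sigma>. \<sigma> *\<^sub>R (x' - x))) (at \<tau>)"
      by (auto intro!: derivative_eq_intros)
    have "(\<phi> has_derivative (\<lambda>\<sigma>. apply_deriv (Df (x + \<tau> *\<^sub>R (x' - x))) (\<sigma> *\<^sub>R (x' - x)))) (at \<tau>)"
      unfolding \<phi>_def by (rule has_derivative_compose[OF l der[OF that]])
    then show ?thesis
      unfolding has_vector_derivative_def by (simp add: apply_deriv_scale_right)
  qed
  moreover have "norm (apply_deriv (Df (x + \<tau> *\<^sub>R (x' - x))) (x' - x)) \<le> B * norm (x' - x)"
    if "\<tau> \<in> {0..1}" for \<tau>
    by (rule order_trans[OF norm_apply_deriv]) (intro mult_right_mono bd that, simp)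
  ultimately have "norm (\<phi> 1 - \<phi> 0) \<le> B * norm (x' - x)"
    by (intro line_mvt) auto
  then show ?thesis unfolding \<phi>_def by simp
qed

lemma deriv_bound_at0:
  fixes k :: "real \<Rightarrow> 'v::real_normed_vector"
  assumes "(k has_vector_derivative V) (at 0)" and b: "\<And>\<sigma>. norm (k \<sigma> - k 0) \<le> c * \<bar>\<sigma>\<bar>"
  shows "norm V \<le> c"
proof (rule field_le_epsilon)
  fix e :: real assume e: "0 < e"
  from assms(1) have "\<forall>e>0. \<exists>d>0. \<forall>y. norm (y - 0) < d \<longrightarrow> norm (k y - k 0 - (y - 0) *\<^sub>R V) \<le> e * norm (y - 0)"
    unfolding has_vector_derivative_def has_derivative_at_alt by blast
  then obtain d where d0: "d > 0" and d1: "\<forall>y. norm (y - 0) < d \<longrightarrow> norm (k y - k 0 - (y - 0) *\<^sub>R V) \<le> e * norm (y - 0)"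
    using e by blast
  have d: "d > 0" "\<And>y. \<bar>y\<bar> < d \<Longrightarrow> norm (k y - k 0 - y *\<^sub>R V) \<le> e * \<bar>y\<bar>"
    using d0 d1 by auto
  define y where "y = d / 2"
  have y: "0 < y" "\<bar>y\<bar> < d" using d unfolding y_def by auto
  have "y * norm V = norm (y *\<^sub>R V)" using y by simp
  also have "\<dots> \<le> norm (k y - k 0) + norm (k y - k 0 - y *\<^sub>R V)"
  proof -
    have "y *\<^sub>R V = (k y - k 0) - (k y - k 0 - y *\<^sub>R V)" by simp
    then show ?thesis by (metis norm_triangle_ineq4)
  qed
  also have "\<dots> \<le> c * y + e * y" using b[of y] d(2)[OF y(2)] y by simp
  finally have "y * norm V \<le> y * (c + e)" by (simp add: algebra_simps)
  then show "norm V \<le> c + e" using y by simp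
qed


lemma fre_x_deriv:
  fixes G :: "real^'d \<Rightarrow> ('w \<Rightarrow> real^'d) \<Rightarrow> 'v::euclidean_space"
    and Gx :: "real^'d \<Rightarrow> ('w \<Rightarrow> real^'d) \<Rightarrow> 'v^'d"
    and GZ :: "real^'d \<Rightarrow> ('w \<Rightarrow> real^'d) \<Rightarrow> 'w \<Rightarrow> 'v^'d"
  assumes fr: "frechet_C1 M G Gx GZ" and Z: "in_Lq M 2 Z"
  shows "((\<lambda>y. G y Z) has_derivative apply_deriv (Gx x Z)) (at x)"
proof -
  from fr Z have H: "\<forall>e>0. \<exists>\<delta>>0. \<forall>h H. in_Lq M 2 H \<longrightarrow> norm h + enn2real (Lq M 2 H) < \<delta> \<longrightarrow>
          norm (G (x + h) (\<lambda>\<omega>. Z \<omega> + H \<omega>) - G x Z - apply_deriv (Gx x Z) h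
                - (\<integral>\<omega>. apply_deriv (GZ x Z \<omega>) (H \<omega>) \<partial>M))
          \<le> e * (norm h + enn2real (Lq M 2 H))"
    unfolding frechet_C1_def by blast
  show ?thesis unfolding has_derivative_at_alt
  proof (intro conjI allI impI bounded_linear_apply_deriv)
    fix e :: real assume e: "0 < e"
    obtain \<delta> where \<delta>: "\<delta> > 0" and h\<delta>: "\<forall>h H. in_Lq M 2 H \<longrightarrow> norm h + enn2real (Lq M 2 H) < \<delta> \<longrightarrow>
          norm (G (x + h) (\<lambda>\<omega>. Z \<omega> + H \<omega>) - G x Z - apply_deriv (Gx x Z) h
                - (\<integral>\<omega>. apply_deriv (GZ x Z \<omega>) (H \<omega>) \<partial>M))
          \<le> e * (norm h + enn2real (Lq M 2 H))"
      using H e by blast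
    show "\<exists>d>0. \<forall>y. norm (y - x) < d \<longrightarrow> norm (G y Z - G x Z - apply_deriv (Gx x Z) (y - x)) \<le> e * norm (y - x)"
    proof (intro exI[of _ \<delta>] conjI allI impI \<delta>)
      fix y assume y: "norm (y - x) < \<delta>"
      have "norm (G (x + (y - x)) (\<lambda>\<omega>. Z \<omega> + 0) - G x Z - apply_deriv (Gx x Z) (y - x)
                - (\<integral>\<omega>. apply_deriv (GZ x Z \<omega>) 0 \<partial>M))
          \<le> e * (norm (y - x) + enn2real (Lq M 2 (\<lambda>\<omega>. 0::real^'d)))"
        using h\<delta>[rule_format, where h="y - x" and H="\<lambda>\<omega>. 0"] y by simp
      then show "norm (G y Z - G x Z - apply_deriv (Gx x Z) (y - x)) \<le> e * norm (y - x)" by simp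
    qed
  qed
qed

lemma fre_Z_deriv:
  fixes G :: "real^'d \<Rightarrow> ('w \<Rightarrow> real^'d) \<Rightarrow> 'v::euclidean_space"
    and Gx :: "real^'d \<Rightarrow> ('w \<Rightarrow> real^'d) \<Rightarrow> 'v^'d"
    and GZ :: "real^'d \<Rightarrow> ('w \<Rightarrow> real^'d) \<Rightarrow> 'w \<Rightarrow> 'v^'d"
  assumes fr: "frechet_C1 M G Gx GZ" and Z: "in_Lq M 2 Z" and H: "in_Lq M 2 H"
  shows "((\<lambda>\<tau>. G x (\<lambda>\<omega>. Z \<omega> + \<tau> *\<^sub>R H \<omega>)) has_vector_derivative
           (\<integral>\<omega>. apply_deriv (GZ x (\<lambda>\<omega>. Z \<omega> + \<tau>0 *\<^sub>R H \<omega>) \<omega>) (H \<omega>) \<partial>M)) (at \<tau>0)"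
proof -
  define Z0 where "Z0 = (\<lambda>\<omega>. Z \<omega> + \<tau>0 *\<^sub>R H \<omega>)"
  have Z0: "in_Lq M 2 Z0" unfolding Z0_def by (intro in_Lq_add in_Lq_scaleR Z H) auto
  define n where "n = n2 M H"
  have n0: "0 \<le> n" unfolding n_def by simp
  from fr Z0 have FR: "\<forall>e>0. \<exists>\<delta>>0. \<forall>h Hh. in_Lq M 2 Hh \<longrightarrow> norm h + enn2real (Lq M 2 Hh) < \<delta> \<longrightarrow>
          norm (G (x + h) (\<lambda>\<omega>. Z0 \<omega> + Hh \<omega>) - G x Z0 - apply_deriv (Gx x Z0) h
                - (\<integral>\<omega>. apply_deriv (GZ x Z0 \<omega>) (Hh \<omega>) \<partial>M))
          \<le> e * (norm h + enn2real (Lq M 2 Hh))"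
    unfolding frechet_C1_def by blast
  define V where "V = (\<integral>\<omega>. apply_deriv (GZ x Z0 \<omega>) (H \<omega>) \<partial>M)"
  have "((\<lambda>\<tau>. G x (\<lambda>\<omega>. Z \<omega> + \<tau> *\<^sub>R H \<omega>)) has_derivative (\<lambda>\<sigma>. \<sigma> *\<^sub>R V)) (at \<tau>0)"
    unfolding has_derivative_at_alt
  proof (intro conjI allI impI)
    show "bounded_linear (\<lambda>\<sigma>. \<sigma> *\<^sub>R V)" by (rule bounded_linear_scaleR_left)
    fix e :: real assume e: "0 < e"
    have e': "0 < e / (n + 1)" using e n0 by simp
    obtain \<delta> where \<delta>: "\<delta> > 0" and h\<delta>: "\<forall>h Hh. in_Lq M 2 Hh \<longrightarrow> norm h + enn2real (Lq M 2 Hh) < \<delta> \<longrightarrow>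
          norm (G (x + h) (\<lambda>\<omega>. Z0 \<omega> + Hh \<omega>) - G x Z0 - apply_deriv (Gx x Z0) h
                - (\<integral>\<omega>. apply_deriv (GZ x Z0 \<omega>) (Hh \<omega>) \<partial>M))
          \<le> e / (n + 1) * (norm h + enn2real (Lq M 2 Hh))"
      using FR e' by blast
    show "\<exists>d>0. \<forall>y. norm (y - \<tau>0) < d \<longrightarrow>
        norm (G x (\<lambda>\<omega>. Z \<omega> + y *\<^sub>R H \<omega>) - G x (\<lambda>\<omega>. Z \<omega> + \<tau>0 *\<^sub>R H \<omega>) - (y - \<tau>0) *\<^sub>R V)
        \<le> e * norm (y - \<tau>0)"
    proof (intro exI[of _ "\<delta> / (n + 1)"] conjI allI impI)
      show "0 < \<delta> / (n + 1)" using \<delta> n0 by simp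
      fix y assume y: "norm (y - \<tau>0) < \<delta> / (n + 1)"
      define \<sigma> where "\<sigma> = y - \<tau>0"
      have Hs: "in_Lq M 2 (\<lambda>\<omega>. \<sigma> *\<^sub>R H \<omega>)" by (intro in_Lq_scaleR H) auto
      have nHs: "enn2real (Lq M 2 (\<lambda>\<omega>. \<sigma> *\<^sub>R H \<omega>)) = \<bar>\<sigma>\<bar> * n"
        using n2_scaleR[of H M \<sigma>] H unfolding n_def n2_def in_Lq_def by simp
      have "\<bar>\<sigma>\<bar> * (n + 1) < \<delta>" using y n0 unfolding \<sigma>_def by (simp add: field_simps)
      moreover have "\<bar>\<sigma>\<bar> * n \<le> \<bar>\<sigma>\<bar> * (n + 1)" by (intro mult_left_mono) auto
      ultimately have small: "norm (0::real^'d) + \<bar>\<sigma>\<bar> * n < \<delta>" by simp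
      have B: "norm (G (x + 0) (\<lambda>\<omega>. Z0 \<omega> + \<sigma> *\<^sub>R H \<omega>) - G x Z0 - apply_deriv (Gx x Z0) 0
                - (\<integral>\<omega>. apply_deriv (GZ x Z0 \<omega>) (\<sigma> *\<^sub>R H \<omega>) \<partial>M))
          \<le> e / (n + 1) * (norm (0::real^'d) + \<bar>\<sigma>\<bar> * n)"
        using h\<delta>[rule_format, where h=0 and Hh="\<lambda>\<omega>. \<sigma> *\<^sub>R H \<omega>", OF Hs] small nHs by simp
      have fe: "(\<lambda>\<omega>. Z0 \<omega> + \<sigma> *\<^sub>R H \<omega>) = (\<lambda>\<omega>. Z \<omega> + y *\<^sub>R H \<omega>)"
        unfolding Z0_def \<sigma>_def by (auto simp: algebra_simps)
      have ie: "(\<integral>\<omega>. apply_deriv (GZ x Z0 \<omega>) (\<sigma> *\<^sub>R H \<omega>) \<partial>M) = \<sigma> *\<^sub>R V"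
        unfolding V_def by (simp add: apply_deriv_scale_right)
      have le: "e / (n + 1) * (\<bar>\<sigma>\<bar> * n) \<le> e * \<bar>\<sigma>\<bar>"
      proof -
        have "e / (n + 1) * (\<bar>\<sigma>\<bar> * n) = e * \<bar>\<sigma>\<bar> * (n / (n + 1))" by (simp add: field_simps)
        also have "\<dots> \<le> e * \<bar>\<sigma>\<bar> * 1" using n0 e by (intro mult_left_mono) auto
        finally show ?thesis by simp
      qed
      show "norm (G x (\<lambda>\<omega>. Z \<omega> + y *\<^sub>R H \<omega>) - G x (\<lambda>\<omega>. Z \<omega> + \<tau>0 *\<^sub>R H \<omega>) - (y - \<tau>0) *\<^sub>R V)
        \<le> e * norm (y - \<tau>0)"
        using B le unfolding fe ie by (simp add: Z0_def \<sigma>_def)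
    qed
  qed
  then show ?thesis unfolding has_vector_derivative_def V_def Z0_def .
qed


lemma K_x_lip:
  fixes G :: "real^'d \<Rightarrow> ('w \<Rightarrow> real^'d) \<Rightarrow> 'v::euclidean_space"
    and Gx :: "real^'d \<Rightarrow> ('w \<Rightarrow> real^'d) \<Rightarrow> 'v^'d"
    and GZ :: "real^'d \<Rightarrow> ('w \<Rightarrow> real^'d) \<Rightarrow> 'w \<Rightarrow> 'v^'d"
  assumes fr: "frechet_C1 M G Gx GZ" and Z: "in_Lq M 2 Z" and bd: "\<And>y. norm (Gx y Z) \<le> L"
  shows "norm (G x' Z - G x Z) \<le> L * norm (x' - x)"
  by (rule segment_mvt[where Df = "\<lambda>y. Gx y Z"]) (use fre_x_deriv[OF fr Z] bd in auto)

lemma apply_deriv_diff_left_fun: "apply_deriv (D1 - D2) = (\<lambda>h. apply_deriv D1 h - apply_deriv D2 h)"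
  by (rule ext) (rule apply_deriv_diff_left)

lemma K_x_lip2:
  fixes G :: "real^'d \<Rightarrow> ('w \<Rightarrow> real^'d) \<Rightarrow> 'v::euclidean_space"
    and Gx :: "real^'d \<Rightarrow> ('w \<Rightarrow> real^'d) \<Rightarrow> 'v^'d"
    and GZ :: "real^'d \<Rightarrow> ('w \<Rightarrow> real^'d) \<Rightarrow> 'w \<Rightarrow> 'v^'d"
  assumes fr: "frechet_C1 M G Gx GZ" and Z1: "in_Lq M 2 Z1" and Z2: "in_Lq M 2 Z2"
    and bd: "\<And>y. norm (Gx y Z1 - Gx y Z2) \<le> L"
  shows "norm ((G x' Z1 - G x' Z2) - (G x Z1 - G x Z2)) \<le> L * norm (x' - x)"
proof -
  have "norm ((\<lambda>y. G y Z1 - G y Z2) x' - (\<lambda>y. G y Z1 - G y Z2) x) \<le> L * norm (x' - x)"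
  proof (rule segment_mvt[where Df = "\<lambda>y. Gx y Z1 - Gx y Z2"])
    fix \<tau> :: real
    show "((\<lambda>y. G y Z1 - G y Z2) has_derivative apply_deriv (Gx (x + \<tau> *\<^sub>R (x' - x)) Z1 - Gx (x + \<tau> *\<^sub>R (x' - x)) Z2))
          (at (x + \<tau> *\<^sub>R (x' - x)))"
      unfolding apply_deriv_diff_left_fun
      by (rule has_derivative_diff[OF fre_x_deriv[OF fr Z1] fre_x_deriv[OF fr Z2]])
    show "norm (Gx (x + \<tau> *\<^sub>R (x' - x)) Z1 - Gx (x + \<tau> *\<^sub>R (x' - x)) Z2) \<le> L" by (rule bd)
  qed
  then show ?thesis by simp
qed

lemma K_x_taylor:
  fixes G :: "real^'d \<Rightarrow> ('w \<Rightarrow> real^'d) \<Rightarrow> 'v::euclidean_space"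
    and Gx :: "real^'d \<Rightarrow> ('w \<Rightarrow> real^'d) \<Rightarrow> 'v^'d"
    and GZ :: "real^'d \<Rightarrow> ('w \<Rightarrow> real^'d) \<Rightarrow> 'w \<Rightarrow> 'v^'d"
  assumes fr: "frechet_C1 M G Gx GZ" and Z: "in_Lq M 2 Z" and L: "0 \<le> L"
    and lip: "\<And>y. norm (Gx y Z - Gx x Z) \<le> L * norm (y - x)"
  shows "norm (G x' Z - G x Z - apply_deriv (Gx x Z) (x' - x)) \<le> L * norm (x' - x) ^ 2"
proof -
  define f where "f y = G y Z - apply_deriv (Gx x Z) y" for y
  have "norm (f x' - f x) \<le> (L * norm (x' - x)) * norm (x' - x)"
  proof (rule segment_mvt[where Df = "\<lambda>y. Gx y Z - Gx x Z"])
    fix \<tau> :: real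
    show "(f has_derivative apply_deriv (Gx (x + \<tau> *\<^sub>R (x' - x)) Z - Gx x Z)) (at (x + \<tau> *\<^sub>R (x' - x)))"
      unfolding f_def apply_deriv_diff_left_fun
      by (rule has_derivative_diff[OF fre_x_deriv[OF fr Z] bounded_linear.has_derivative[OF bounded_linear_apply_deriv[of "Gx x Z"] has_derivative_ident]])
    assume t: "\<tau> \<in> {0..1}"
    have "norm (Gx (x + \<tau> *\<^sub>R (x' - x)) Z - Gx x Z) \<le> L * norm (\<tau> *\<^sub>R (x' - x))"
      using lip[of "x + \<tau> *\<^sub>R (x' - x)"] by simp
    also have "\<dots> \<le> L * norm (x' - x)" using t L by (intro mult_left_mono) (auto simp: mult_left_le_one_le)
    finally show "norm (Gx (x + \<tau> *\<^sub>R (x' - x)) Z - Gx x Z) \<le> L * norm (x' - x)" .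
  qed
  then show ?thesis unfolding f_def by (simp add: apply_deriv_diff_right power2_eq_square algebra_simps)
qed

lemma line_in_Lq:
  assumes "in_Lq M 2 Z" "in_Lq M 2 H"
  shows "in_Lq M 2 (\<lambda>\<omega>. Z \<omega> + \<tau> *\<^sub>R (H \<omega> :: 'b::euclidean_space))"
  by (intro in_Lq_add in_Lq_scaleR assms) auto

lemma K_Z_lip:
  fixes G :: "real^'d \<Rightarrow> ('w \<Rightarrow> real^'d) \<Rightarrow> 'v::euclidean_space"
    and Gx :: "real^'d \<Rightarrow> ('w \<Rightarrow> real^'d) \<Rightarrow> 'v^'d"
    and GZ :: "real^'d \<Rightarrow> ('w \<Rightarrow> real^'d) \<Rightarrow> 'w \<Rightarrow> 'v^'d"
  assumes fr: "frechet_C1 M G Gx GZ" and Z: "in_Lq M 2 Z" and Z': "in_Lq M 2 Z'"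
    and bd: "\<And>Z. in_Lq M 2 Z \<Longrightarrow> n2 M (GZ x Z) \<le> L"
  shows "norm (G x Z' - G x Z) \<le> L * n2 M (\<lambda>\<omega>. Z' \<omega> - Z \<omega>)"
proof -
  define H where "H = (\<lambda>\<omega>. Z' \<omega> - Z \<omega>)"
  have H: "in_Lq M 2 H" unfolding H_def by (intro in_Lq_diff Z Z') auto
  define \<phi> where "\<phi> \<tau> = G x (\<lambda>\<omega>. Z \<omega> + \<tau> *\<^sub>R H \<omega>)" for \<tau>
  have "norm (\<phi> 1 - \<phi> 0) \<le> L * n2 M H"
  proof (rule line_mvt)
    fix \<tau> :: real
    show "(\<phi> has_vector_derivative (\<integral>\<omega>. apply_deriv (GZ x (\<lambda>\<omega>. Z \<omega> + \<tau> *\<^sub>R H \<omega>) \<omega>) (H \<omega>) \<partial>M)) (at \<tau>)"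
      unfolding \<phi>_def by (rule fre_Z_deriv[OF fr Z H])
    have GZin: "in_Lq M 2 (GZ x (\<lambda>\<omega>. Z \<omega> + \<tau> *\<^sub>R H \<omega>))"
      using fr line_in_Lq[OF Z H] unfolding frechet_C1_def by blast
    have "norm (\<integral>\<omega>. apply_deriv (GZ x (\<lambda>\<omega>. Z \<omega> + \<tau> *\<^sub>R H \<omega>) \<omega>) (H \<omega>) \<partial>M)
        \<le> n2 M (GZ x (\<lambda>\<omega>. Z \<omega> + \<tau> *\<^sub>R H \<omega>)) * n2 M H"
      by (rule norm_E_apply_deriv[OF GZin H])
    also have "\<dots> \<le> L * n2 M H" using bd[OF line_in_Lq[OF Z H]] by (intro mult_right_mono) auto
    finally show "norm (\<integral>\<omega>. apply_deriv (GZ x (\<lambda>\<omega>. Z \<omega> + \<tau> *\<^sub>R H \<omega>) \<omega>) (H \<omega>) \<partial>M) \<le> L * n2 M H" .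
  qed
  moreover have "\<phi> 1 = G x Z'" unfolding \<phi>_def H_def by simp
  moreover have "\<phi> 0 = G x Z" unfolding \<phi>_def by simp
  ultimately show ?thesis unfolding H_def by simp
qed

lemma K_Z_taylor:
  fixes G :: "real^'d \<Rightarrow> ('w \<Rightarrow> real^'d) \<Rightarrow> 'v::euclidean_space"
    and Gx :: "real^'d \<Rightarrow> ('w \<Rightarrow> real^'d) \<Rightarrow> 'v^'d"
    and GZ :: "real^'d \<Rightarrow> ('w \<Rightarrow> real^'d) \<Rightarrow> 'w \<Rightarrow> 'v^'d"
  assumes fr: "frechet_C1 M G Gx GZ" and Z: "in_Lq M 2 Z" and Z': "in_Lq M 2 Z'" and L: "0 \<le> L"
    and lip: "\<And>Z1 Z2. in_Lq M 2 Z1 \<Longrightarrow> in_Lq M 2 Z2 \<Longrightarrow>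
               n2 M (\<lambda>\<omega>. GZ x Z1 \<omega> - GZ x Z2 \<omega>) \<le> L * n2 M (\<lambda>\<omega>. Z1 \<omega> - Z2 \<omega>)"
  shows "norm (G x Z' - G x Z - (\<integral>\<omega>. apply_deriv (GZ x Z \<omega>) (Z' \<omega> - Z \<omega>) \<partial>M))
         \<le> L * n2 M (\<lambda>\<omega>. Z' \<omega> - Z \<omega>) ^ 2"
proof -
  define H where "H = (\<lambda>\<omega>. Z' \<omega> - Z \<omega>)"
  have H: "in_Lq M 2 H" unfolding H_def by (intro in_Lq_diff Z Z') auto
  have Hm: "H \<in> borel_measurable M" using H by (simp add: in_Lq_def)
  define E0 where "E0 = (\<integral>\<omega>. apply_deriv (GZ x Z \<omega>) (H \<omega>) \<partial>M)"
  have GZ0: "in_Lq M 2 (GZ x Z)" using fr Z unfolding frechet_C1_def by blast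
  define \<phi> where "\<phi> \<tau> = G x (\<lambda>\<omega>. Z \<omega> + \<tau> *\<^sub>R H \<omega>) - \<tau> *\<^sub>R E0" for \<tau>
  have "norm (\<phi> 1 - \<phi> 0) \<le> L * n2 M H * n2 M H"
  proof (rule line_mvt)
    fix \<tau> :: real
    show "(\<phi> has_vector_derivative (\<integral>\<omega>. apply_deriv (GZ x (\<lambda>\<omega>. Z \<omega> + \<tau> *\<^sub>R H \<omega>) \<omega>) (H \<omega>) \<partial>M) - E0) (at \<tau>)"
    proof -
      have d2: "((\<lambda>\<sigma>. \<sigma> *\<^sub>R E0) has_vector_derivative E0) (at \<tau>)"
        by (auto intro!: derivative_eq_intros)
      show ?thesis unfolding \<phi>_def
        by (rule has_vector_derivative_diff[OF fre_Z_deriv[OF fr Z H] d2])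
    qed
    assume t: "\<tau> \<in> {0..1}"
    have GZin: "in_Lq M 2 (GZ x (\<lambda>\<omega>. Z \<omega> + \<tau> *\<^sub>R H \<omega>))"
      using fr line_in_Lq[OF Z H] unfolding frechet_C1_def by blast
    have "(\<integral>\<omega>. apply_deriv (GZ x (\<lambda>\<omega>. Z \<omega> + \<tau> *\<^sub>R H \<omega>) \<omega>) (H \<omega>) \<partial>M) - E0
        = (\<integral>\<omega>. apply_deriv (GZ x (\<lambda>\<omega>. Z \<omega> + \<tau> *\<^sub>R H \<omega>) \<omega> - GZ x Z \<omega>) (H \<omega>) \<partial>M)"
      unfolding E0_def by (rule integral_apply_deriv_diff_left[OF GZin GZ0 H])
    also have "norm \<dots> \<le> n2 M (\<lambda>\<omega>. GZ x (\<lambda>\<omega>. Z \<omega> + \<tau> *\<^sub>R H \<omega>) \<omega> - GZ x Z \<omega>) * n2 M H"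
      by (rule norm_E_apply_deriv[OF in_Lq_diff[OF GZin GZ0] H]) simp
    also have "\<dots> \<le> (L * n2 M (\<lambda>\<omega>. (Z \<omega> + \<tau> *\<^sub>R H \<omega>) - Z \<omega>)) * n2 M H"
      by (intro mult_right_mono lip line_in_Lq Z H) auto
    also have "n2 M (\<lambda>\<omega>. (Z \<omega> + \<tau> *\<^sub>R H \<omega>) - Z \<omega>) = \<bar>\<tau>\<bar> * n2 M H"
      using n2_scaleR[OF Hm, of \<tau>] by simp
    also have "L * (\<bar>\<tau>\<bar> * n2 M H) * n2 M H \<le> L * n2 M H * n2 M H"
      using t L by (intro mult_right_mono) (auto simp: mult_left_le_one_le mult_le_cancel_left1 mult_left_mono)
    finally show "norm ((\<integral>\<omega>. apply_deriv (GZ x (\<lambda>\<omega>. Z \<omega> + \<tau> *\<^sub>R H \<omega>) \<omega>) (H \<omega>) \<partial>M) - E0) \<le> L * n2 M H * n2 M H" .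
  qed
  moreover have "\<phi> 1 = G x Z' - E0" unfolding \<phi>_def H_def by simp
  moreover have "\<phi> 0 = G x Z" unfolding \<phi>_def by simp
  ultimately have "norm (G x Z' - E0 - G x Z) \<le> L * n2 M H * n2 M H" by simp
  moreover have "G x Z' - E0 - G x Z = G x Z' - G x Z - E0" by simp
  ultimately show ?thesis unfolding H_def E0_def by (simp add: power2_eq_square mult.assoc)
qed


lemma n2_sq:
  fixes f :: "'a \<Rightarrow> 'b::euclidean_space"
  assumes f: "in_Lq M 2 f"
  shows "n2 M f ^ 2 = (\<integral>x. norm (f x) ^ 2 \<partial>M)" and "integrable M (\<lambda>x. norm (f x) ^ 2)"
proof -
  have fm: "f \<in> borel_measurable M" using f by (simp add: in_Lq_def)
  define I where "I = (\<integral>\<^sup>+ x. ennreal (norm (f x) ^ 2) \<partial>M)"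
  have LI: "Lq M 2 f = epow I (1/2)"
    unfolding Lq_def I_def by (subst LqE_ennreal) (auto simp: powr_numeral)
  have "I \<noteq> \<infinity>"
  proof
    assume "I = \<infinity>" then have "Lq M 2 f = \<infinity>" using LI by simp
    then show False using f by (simp add: in_Lq_def)
  qed
  then obtain i where i: "I = ennreal i" "0 \<le> i" by (cases I) auto
  have int: "integrable M (\<lambda>x. norm (f x) ^ 2)"
    using i fm by (intro integrableI_bounded) (auto simp: I_def)
  then show "integrable M (\<lambda>x. norm (f x) ^ 2)" .
  have "I = ennreal (\<integral>x. norm (f x) ^ 2 \<partial>M)"
    unfolding I_def using int by (intro nn_integral_eq_integral) auto
  then have ie: "i = (\<integral>x. norm (f x) ^ 2 \<partial>M)" using i by simp
  have "n2 M f = i powr (1/2)" unfolding n2_def LI i using i by (simp add: epow_ennreal)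
  then have "n2 M f ^ 2 = i powr (1/2) * i powr (1/2)" by (simp add: power2_eq_square)
  also have "\<dots> = i" using i by (simp add: powr_add[symmetric])
  finally show "n2 M f ^ 2 = (\<integral>x. norm (f x) ^ 2 \<partial>M)" using ie by simp
qed

lemma norm_sq_vec_basis:
  fixes D :: "'v::euclidean_space^'d"
  shows "norm D ^ 2 = (\<Sum>b\<in>Basis. \<Sum>k\<in>UNIV. (D $ k \<bullet> b) ^ 2)"
proof -
  have "norm D ^ 2 = (\<Sum>k\<in>UNIV. norm (D $ k) ^ 2)"
    by (simp add: norm_vec_def L2_set_def sum_nonneg)
  also have "\<dots> = (\<Sum>k\<in>UNIV. \<Sum>b\<in>Basis. (D $ k \<bullet> b) ^ 2)"
  proof (rule sum.cong)
    fix k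
    show "norm (D $ k) ^ 2 = (\<Sum>b\<in>Basis. (D $ k \<bullet> b) ^ 2)"
      by (subst power2_norm_eq_inner, subst euclidean_inner) (simp add: power2_eq_square)
  qed simp
  also have "\<dots> = (\<Sum>b\<in>Basis. \<Sum>k\<in>UNIV. (D $ k \<bullet> b) ^ 2)" by (rule sum.swap)
  finally show ?thesis .
qed

lemma inner_apply_deriv_basis:
  fixes D :: "'v::euclidean_space^'d"
  shows "b \<bullet> apply_deriv D (\<chi> k. D $ k \<bullet> b) = (\<Sum>k\<in>UNIV. (D $ k \<bullet> b) ^ 2)"
  unfolding apply_deriv_def by (simp add: inner_sum_right power2_eq_square inner_commute)

lemma norm_chi_inner_basis:
  fixes D :: "'v::euclidean_space^'d"
  assumes "b \<in> Basis"
  shows "norm (\<chi> k. D $ k \<bullet> b) \<le> norm D"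
proof -
  have "norm (\<chi> k. D $ k \<bullet> b) = L2_set (\<lambda>k. \<bar>D $ k \<bullet> b\<bar>) UNIV" by (simp add: norm_vec_def)
  also have "\<dots> \<le> L2_set (\<lambda>k. norm (D $ k)) UNIV"
    using assms by (intro L2_set_mono) (auto intro: Basis_le_norm)
  also have "\<dots> = norm D" by (simp add: norm_vec_def)
  finally show ?thesis .
qed

lemma continuous_chi_inner:
  "continuous_on UNIV (\<lambda>D :: 'v::euclidean_space^'d. \<chi> k. D $ k \<bullet> b)"
  by (intro continuous_on_vec_lambda continuous_intros continuous_on_component continuous_on_id)

lemma K_GZ_xlip:
  fixes G :: "real^'d \<Rightarrow> ('w \<Rightarrow> real^'d) \<Rightarrow> 'v::euclidean_space"
    and Gx :: "real^'d \<Rightarrow> ('w \<Rightarrow> real^'d) \<Rightarrow> 'v^'d"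
    and GZ :: "real^'d \<Rightarrow> ('w \<Rightarrow> real^'d) \<Rightarrow> 'w \<Rightarrow> 'v^'d"
  assumes fr: "frechet_C1 M G Gx GZ" and Z: "in_Lq M 2 Z"
    and lipx: "\<And>y Z1 Z2. in_Lq M 2 Z1 \<Longrightarrow> in_Lq M 2 Z2 \<Longrightarrow>
                 norm (Gx y Z1 - Gx y Z2) \<le> L * n2 M (\<lambda>\<omega>. Z1 \<omega> - Z2 \<omega>)"
    and L: "0 \<le> L"
  shows "n2 M (\<lambda>\<omega>. GZ x' Z \<omega> - GZ x Z \<omega>) \<le> real DIM('v) * L * norm (x' - x)"
proof -
  have GZ1: "in_Lq M 2 (GZ x' Z)" and GZ0: "in_Lq M 2 (GZ x Z)"
    using fr Z unfolding frechet_C1_def by blast+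
  define D where "D \<omega> = GZ x' Z \<omega> - GZ x Z \<omega>" for \<omega>
  have Din: "in_Lq M 2 D" unfolding D_def by (intro in_Lq_diff GZ1 GZ0) auto
  have Dm: "D \<in> borel_measurable M" using Din by (simp add: in_Lq_def)
  
  have stepa: "norm (\<integral>\<omega>. apply_deriv (D \<omega>) (H \<omega>) \<partial>M) \<le> L * n2 M H * norm (x' - x)"
    if H: "in_Lq M 2 H" for H
  proof -
    have Hm: "H \<in> borel_measurable M" using H by (simp add: in_Lq_def)
    define k where "k \<sigma> = G x' (\<lambda>\<omega>. Z \<omega> + \<sigma> *\<^sub>R H \<omega>) - G x (\<lambda>\<omega>. Z \<omega> + \<sigma> *\<^sub>R H \<omega>)" for \<sigma>
    have z0: "(\<lambda>\<omega>. Z \<omega> + 0 *\<^sub>R H \<omega>) = Z" by simp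
    have kd: "(k has_vector_derivative
        (\<integral>\<omega>. apply_deriv (GZ x' Z \<omega>) (H \<omega>) \<partial>M) - (\<integral>\<omega>. apply_deriv (GZ x Z \<omega>) (H \<omega>) \<partial>M)) (at 0)"
      unfolding k_def
      using has_vector_derivative_diff[OF fre_Z_deriv[OF fr Z H, of x' 0] fre_Z_deriv[OF fr Z H, of x 0]]
      unfolding z0 .
    have eqV: "(\<integral>\<omega>. apply_deriv (GZ x' Z \<omega>) (H \<omega>) \<partial>M) - (\<integral>\<omega>. apply_deriv (GZ x Z \<omega>) (H \<omega>) \<partial>M)
        = (\<integral>\<omega>. apply_deriv (D \<omega>) (H \<omega>) \<partial>M)"
      unfolding D_def by (rule integral_apply_deriv_diff_left[OF GZ1 GZ0 H])
    have kb: "norm (k \<sigma> - k 0) \<le> (L * n2 M H * norm (x' - x)) * \<bar>\<sigma>\<bar>" for \<sigma>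
    proof -
      define Zs where "Zs = (\<lambda>\<omega>. Z \<omega> + \<sigma> *\<^sub>R H \<omega>)"
      have Zs: "in_Lq M 2 Zs" unfolding Zs_def by (rule line_in_Lq[OF Z H])
      have nd: "n2 M (\<lambda>\<omega>. Zs \<omega> - Z \<omega>) = \<bar>\<sigma>\<bar> * n2 M H"
        unfolding Zs_def using n2_scaleR[OF Hm, of \<sigma>] by simp
      have b: "norm ((G x' Zs - G x' Z) - (G x Zs - G x Z)) \<le> (L * (\<bar>\<sigma>\<bar> * n2 M H)) * norm (x' - x)"
        by (rule K_x_lip2[OF fr Zs Z]) (use lipx[OF Zs Z] nd in simp)
      have e: "k \<sigma> - k 0 = (G x' Zs - G x' Z) - (G x Zs - G x Z)"
        unfolding k_def Zs_def by simp
      have eq: "(L * (\<bar>\<sigma>\<bar> * n2 M H)) * norm (x' - x) = (L * n2 M H * norm (x' - x)) * \<bar>\<sigma>\<bar>"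
        by (simp add: algebra_simps)
      show ?thesis unfolding e using b eq by linarith
    qed
    show ?thesis using deriv_bound_at0[OF kd kb] unfolding eqV .
  qed
  
  define Hb where "Hb b \<omega> = (\<chi> k. D \<omega> $ k \<bullet> b)" for b \<omega>
  have Hbm: "Hb b \<in> borel_measurable M" for b
    unfolding Hb_def using borel_measurable_continuous_on[OF continuous_chi_inner Dm] .
  have Hbn: "norm (Hb b \<omega>) \<le> norm (D \<omega>)" if "b \<in> Basis" for b \<omega>
    unfolding Hb_def using norm_chi_inner_basis[OF that] .
  have Hbin: "in_Lq M 2 (Hb b)" and Hbn2: "n2 M (Hb b) \<le> n2 M D" if b: "b \<in> Basis" for b
  proof -
    have le: "Lq M 2 (Hb b) \<le> Lq M 2 D" by (intro Lq_mono Hbn b) auto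
    then show "in_Lq M 2 (Hb b)" using Din Hbm by (auto simp: in_Lq_def)
    then show "n2 M (Hb b) \<le> n2 M D" using le Din unfolding n2_def
      by (simp add: in_Lq_def enn2real_mono less_top)
  qed
  have intb: "integrable M (\<lambda>\<omega>. apply_deriv (D \<omega>) (Hb b \<omega>))" if "b \<in> Basis" for b
    by (rule integrable_apply_deriv[OF Din Hbin[OF that]])
  have pt: "norm (D \<omega>) ^ 2 = (\<Sum>b\<in>Basis. b \<bullet> apply_deriv (D \<omega>) (Hb b \<omega>))" for \<omega>
    unfolding Hb_def inner_apply_deriv_basis by (rule norm_sq_vec_basis)
  have "n2 M D ^ 2 = (\<integral>\<omega>. norm (D \<omega>) ^ 2 \<partial>M)" by (rule n2_sq[OF Din])
  also have "\<dots> = (\<integral>\<omega>. (\<Sum>b\<in>Basis. b \<bullet> apply_deriv (D \<omega>) (Hb b \<omega>)) \<partial>M)" by (simp only: pt)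
  also have "\<dots> = (\<Sum>b\<in>Basis. b \<bullet> (\<integral>\<omega>. apply_deriv (D \<omega>) (Hb b \<omega>) \<partial>M))"
    using intb by (simp add: integral_sum integral_inner_right)
  also have "\<dots> \<le> (\<Sum>b\<in>(Basis::'v set). L * n2 M D * norm (x' - x))"
  proof (intro sum_mono)
    fix b :: 'v assume b: "b \<in> Basis"
    have "b \<bullet> (\<integral>\<omega>. apply_deriv (D \<omega>) (Hb b \<omega>) \<partial>M) \<le> norm (\<integral>\<omega>. apply_deriv (D \<omega>) (Hb b \<omega>) \<partial>M)"
      using b by (metis Basis_le_norm inner_commute abs_le_D1)
    also have "\<dots> \<le> L * n2 M (Hb b) * norm (x' - x)" by (rule stepa[OF Hbin[OF b]])
    also have "\<dots> \<le> L * n2 M D * norm (x' - x)"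
      using Hbn2[OF b] L by (intro mult_right_mono mult_left_mono) auto
    finally show "b \<bullet> (\<integral>\<omega>. apply_deriv (D \<omega>) (Hb b \<omega>) \<partial>M) \<le> L * n2 M D * norm (x' - x)" .
  qed
  also have "\<dots> = real DIM('v) * L * norm (x' - x) * n2 M D" by simp
  finally have sq: "n2 M D * n2 M D \<le> real DIM('v) * L * norm (x' - x) * n2 M D"
    by (simp add: power2_eq_square)
  have K0: "0 \<le> real DIM('v) * L * norm (x' - x)" using L by simp
  show ?thesis
  proof (cases "n2 M D = 0")
    case True then show ?thesis using K0 unfolding D_def by simp
  next
    case False
    then have "0 < n2 M D" using n2_nonneg[of M D] by linarith
    then show ?thesis using sq unfolding D_def by simp
  qed
qed


lemma pvar_ge: assumes "s \<le> t" shows "g s t \<le> pvar g s t"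
proof -
  have "[s, t] \<in> partitions s t" using assms by (simp add: partitions_def)
  moreover have "var_sum g [s, t] = g s t" by (simp add: var_sum_def)
  ultimately show ?thesis unfolding pvar_def by (metis SUP_upper)
qed

lemma div_le_imp:
  assumes x: "0 \<le> x" and y: "0 \<le> y" and le: "ennreal x / ennreal y \<le> N" and N: "N < \<infinity>"
  shows "x \<le> enn2real N * y"
proof (cases "y = 0")
  case True
  show ?thesis
  proof (cases "x = 0")
    case False
    then have "ennreal x / ennreal y = \<infinity>" using True x by (simp add: ennreal_divide_zero)
    then show ?thesis using le N by simp
  qed (use y in simp)
next
  case False
  then have yp: "0 < y" using y by simp
  have "ennreal (x / y) \<le> N" using le x yp by (simp add: divide_ennreal)
  then have "enn2real (ennreal (x / y)) \<le> enn2real N"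
    using N by (intro enn2real_mono) auto
  then have "x / y \<le> enn2real N" using x y by simp
  then show ?thesis using yp by (simp add: field_simps)
qed

lemma le_add_e1: "(a::ennreal) \<le> a + b" by (rule add_increasing2) auto
lemma le_add_e2: "(b::ennreal) \<le> a + b" by (rule add_increasing) auto

lemma sup_le_sum4:
  fixes a b c d :: ennreal
  shows "a \<le> a + b + c + d" "b \<le> a + b + c + d" "c \<le> a + b + c + d" "d \<le> a + b + c + d"
proof -
  show "a \<le> a + b + c + d" by (meson le_add_e1 order_trans)
  show "b \<le> a + b + c + d" by (meson le_add_e1 le_add_e2 order_trans)
  show "c \<le> a + b + c + d" by (meson le_add_e1 le_add_e2 order_trans)
  show "d \<le> a + b + c + d" by (rule le_add_e2)
qed


locale P12 =
  fixes M :: "'w::polish_space measure" and T p q :: real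
    and W :: "'w \<Rightarrow> real \<Rightarrow> real^'m" and WW :: "'w \<Rightarrow> real \<Rightarrow> real \<Rightarrow> real^'m^'m"
    and WP :: "'w \<Rightarrow> 'w \<Rightarrow> real \<Rightarrow> real \<Rightarrow> real^'m^'m" and w :: "real \<Rightarrow> real \<Rightarrow> 'w \<Rightarrow> real"
    and F :: "real^'d \<Rightarrow> (real^'d) measure \<Rightarrow> real^'m^'d"
    and DxF :: "real^'d \<Rightarrow> ('w \<Rightarrow> real^'d) \<Rightarrow> (real^'m^'d)^'d"
    and DZF :: "real^'d \<Rightarrow> ('w \<Rightarrow> real^'d) \<Rightarrow> 'w \<Rightarrow> (real^'m^'d)^'d"
    and DxxF :: "real^'d \<Rightarrow> ('w \<Rightarrow> real^'d) \<Rightarrow> (real^'m^'d)^'d^'d"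
    and DxZF :: "real^'d \<Rightarrow> ('w \<Rightarrow> real^'d) \<Rightarrow> 'w \<Rightarrow> (real^'m^'d)^'d^'d"
    and \<Lambda> Mb :: real and \<omega> :: 'w and X :: "real \<Rightarrow> real^'d" and DX :: "real \<Rightarrow> (real^'d)^'m"
    and Y :: "'w \<Rightarrow> real \<Rightarrow> real^'d" and DY :: "'w \<Rightarrow> real \<Rightarrow> (real^'d)^'m"
  assumes Mb0: "0 \<le> Mb" and std: "standing_space M" and T0: "0 < T" and p2: "2 \<le> p" and p3: "p < 3"
    and q8: "8 \<le> q"
    and rs: "rough_setup M T p q W WW WP" and ctrl: "control M T p q W WW WP w"
    and reg: "regularity1 M F DxF DZF DxxF DxZF \<Lambda>"
    and cpX: "controlled_path M W w T p \<omega> X DX (\<lambda>t \<omega>'. 0)"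
    and rcpY: "random_controlled_path M W w T p Y DY (\<lambda>\<omega>' t \<omega>''. 0)"
    and supM: "(SUP t\<in>{0..T}. sup (ennreal (norm (DX t))) (Linf M (\<lambda>\<omega>'. DY \<omega>' t))) = ennreal Mb"
begin

abbreviation "G \<equiv> (\<lambda>x Z. F x (distr M borel Z))"

lemma prob: "prob_space M" using std by (simp add: standing_space_def)

lemma frG: "frechet_C1 M G DxF DZF" using reg by (simp add: regularity1_def)
lemma frD: "frechet_C1 M DxF DxxF DxZF" using reg by (simp add: regularity1_def)

lemma bG: "in_Lq M 2 Z \<Longrightarrow> norm (G x Z) \<le> \<Lambda>" using reg by (simp add: regularity1_def)
lemma bDxF: "in_Lq M 2 Z \<Longrightarrow> norm (DxF x Z) \<le> \<Lambda>" using reg by (simp add: regularity1_def)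
lemma bDxxF: "in_Lq M 2 Z \<Longrightarrow> norm (DxxF x Z) \<le> \<Lambda>" using reg by (simp add: regularity1_def)
lemma bDZF': "in_Lq M 2 Z \<Longrightarrow> Lq M 2 (DZF x Z) \<le> ennreal \<Lambda>" using reg by (simp add: regularity1_def)
lemma bDxZF': "in_Lq M 2 Z \<Longrightarrow> Lq M 2 (DxZF x Z) \<le> ennreal \<Lambda>" using reg by (simp add: regularity1_def)
lemma lipDZF': "in_Lq M 2 Z \<Longrightarrow> in_Lq M 2 Z' \<Longrightarrow>
    Lq M 2 (\<lambda>\<omega>. DZF x Z \<omega> - DZF x Z' \<omega>) \<le> ennreal \<Lambda> * Lq M 2 (\<lambda>\<omega>. Z \<omega> - Z' \<omega>)"
  using reg by (simp add: regularity1_def)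

lemma Lam0: "0 \<le> \<Lambda>"
proof -
  have "norm (DxF 0 (\<lambda>\<omega>. 0)) \<le> \<Lambda>" by (rule bDxF) simp
  then show ?thesis by (meson norm_ge_zero order_trans)
qed

lemma inDZF: "in_Lq M 2 Z \<Longrightarrow> in_Lq M 2 (DZF x Z)" using frG by (simp add: frechet_C1_def)
lemma inDxZF: "in_Lq M 2 Z \<Longrightarrow> in_Lq M 2 (DxZF x Z)" using frD by (simp add: frechet_C1_def)

lemma n2_le_of_Lq: "in_Lq M 2 f \<Longrightarrow> Lq M 2 f \<le> ennreal c \<Longrightarrow> 0 \<le> c \<Longrightarrow> n2 M f \<le> c"
  by (simp add: Lq_n2)

lemma bDZF: "in_Lq M 2 Z \<Longrightarrow> n2 M (DZF x Z) \<le> \<Lambda>"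
  using n2_le_of_Lq[OF inDZF bDZF'] Lam0 by blast
lemma bDxZF: "in_Lq M 2 Z \<Longrightarrow> n2 M (DxZF x Z) \<le> \<Lambda>"
  using n2_le_of_Lq[OF inDxZF bDxZF'] Lam0 by blast

lemma lipDZF: assumes "in_Lq M 2 Z" "in_Lq M 2 Z'"
  shows "n2 M (\<lambda>\<omega>. DZF x Z \<omega> - DZF x Z' \<omega>) \<le> \<Lambda> * n2 M (\<lambda>\<omega>. Z \<omega> - Z' \<omega>)"
proof -
  have i1: "in_Lq M 2 (\<lambda>\<omega>. DZF x Z \<omega> - DZF x Z' \<omega>)" by (intro in_Lq_diff inDZF assms) auto
  have i2: "in_Lq M 2 (\<lambda>\<omega>. Z \<omega> - Z' \<omega>)" by (intro in_Lq_diff assms) auto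
  have "ennreal (n2 M (\<lambda>\<omega>. DZF x Z \<omega> - DZF x Z' \<omega>)) \<le> ennreal (\<Lambda> * n2 M (\<lambda>\<omega>. Z \<omega> - Z' \<omega>))"
    using lipDZF'[OF assms, of x] Lam0 by (simp add: Lq_n2[OF i1] Lq_n2[OF i2] ennreal_mult)
  then show ?thesis using Lam0 by (simp add: ennreal_le_iff)
qed

lemma F1: "in_Lq M 2 Z \<Longrightarrow> norm (G x' Z - G x Z) \<le> \<Lambda> * norm (x' - x)"
  by (rule K_x_lip[OF frG]) (auto intro: bDxF)

lemma F2: "in_Lq M 2 Z \<Longrightarrow> norm (DxF x' Z - DxF x Z) \<le> \<Lambda> * norm (x' - x)"
  by (rule K_x_lip[OF frD]) (auto intro: bDxxF)

lemma F3: "in_Lq M 2 Z \<Longrightarrow> in_Lq M 2 Z' \<Longrightarrow> norm (G x Z' - G x Z) \<le> \<Lambda> * n2 M (\<lambda>\<omega>. Z' \<omega> - Z \<omega>)"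
  by (rule K_Z_lip[OF frG]) (auto intro: bDZF)

lemma F4: "in_Lq M 2 Z \<Longrightarrow> in_Lq M 2 Z' \<Longrightarrow> norm (DxF x Z' - DxF x Z) \<le> \<Lambda> * n2 M (\<lambda>\<omega>. Z' \<omega> - Z \<omega>)"
  by (rule K_Z_lip[OF frD]) (auto intro: bDxZF)

lemma F5: "in_Lq M 2 Z \<Longrightarrow> norm (G x' Z - G x Z - apply_deriv (DxF x Z) (x' - x)) \<le> \<Lambda> * norm (x' - x) ^ 2"
  by (rule K_x_taylor[OF frG _ Lam0]) (auto intro: F2)

lemma F6: "in_Lq M 2 Z \<Longrightarrow> in_Lq M 2 Z' \<Longrightarrow>
  norm (G x Z' - G x Z - (\<integral>\<omega>. apply_deriv (DZF x Z \<omega>) (Z' \<omega> - Z \<omega>) \<partial>M)) \<le> \<Lambda> * n2 M (\<lambda>\<omega>. Z' \<omega> - Z \<omega>) ^ 2"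
  by (rule K_Z_taylor[OF frG _ _ Lam0]) (auto intro: lipDZF)

lemma F7: "in_Lq M 2 Z \<Longrightarrow> n2 M (\<lambda>\<omega>. DZF x' Z \<omega> - DZF x Z \<omega>) \<le> real DIM(real^'m^'d) * \<Lambda> * norm (x' - x)"
proof -
  assume Z: "in_Lq M 2 Z"
  have "n2 M (\<lambda>\<omega>. DZF x' Z \<omega> - DZF x Z \<omega>) \<le> real DIM(real^'m^'d) * \<Lambda> * norm (x' - x)"
  proof (rule K_GZ_xlip[OF frG Z _ Lam0])
    fix y and Z1 Z2 :: "'w \<Rightarrow> real^'d" assume z1: "in_Lq M 2 Z1" and z2: "in_Lq M 2 Z2"
    show "norm (DxF y Z1 - DxF y Z2) \<le> \<Lambda> * n2 M (\<lambda>\<omega>. Z1 \<omega> - Z2 \<omega>)" by (rule F4[OF z2 z1])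
  qed
  then show ?thesis .
qed

end


lemma powr_inv_le:
  fixes l u p :: real
  assumes "0 \<le> l" "0 < p" "l powr p \<le> u"
  shows "l \<le> u powr (1/p)"
proof -
  have "(l powr p) powr (1/p) \<le> u powr (1/p)" using assms by (intro powr_mono2) auto
  then show ?thesis using assms by (simp add: powr_powr)
qed

lemma LqE_powr:
  fixes f :: "'a \<Rightarrow> real"
  assumes "\<And>x. 0 \<le> f x" "0 < b" "0 < \<theta>"
  shows "LqE M b (\<lambda>x. ennreal (f x powr \<theta>)) = epow (LqE M (b * \<theta>) (\<lambda>x. ennreal (f x))) \<theta>"
proof -
  have "LqE M b (\<lambda>x. ennreal (f x powr \<theta>)) = epow (\<integral>\<^sup>+ x. ennreal ((f x powr \<theta>) powr b) \<partial>M) (1/b)"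
    by (rule LqE_ennreal) simp
  also have "(\<lambda>x. ennreal ((f x powr \<theta>) powr b)) = (\<lambda>x. ennreal (f x powr (b * \<theta>)))"
    by (simp add: powr_powr mult.commute)
  also have "epow (\<integral>\<^sup>+ x. ennreal (f x powr (b * \<theta>)) \<partial>M) (1/b)
      = epow (epow (\<integral>\<^sup>+ x. ennreal (f x powr (b * \<theta>)) \<partial>M) (1 / (b * \<theta>))) \<theta>"
    using assms by (simp add: epow_epow)
  also have "\<dots> = epow (LqE M (b * \<theta>) (\<lambda>x. ennreal (f x))) \<theta>"
    using assms by (simp add: LqE_ennreal)
  finally show ?thesis .
qed

lemma cp_bounds:
  fixes Z :: "real \<Rightarrow> 'v::euclidean_space" and DZ :: "real \<Rightarrow> 'v^'m"
    and W :: "'w \<Rightarrow> real \<Rightarrow> real^'m"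
  assumes fin: "cp_norm M W w T p \<omega>0 Z DZ (\<lambda>t \<omega>'. 0) < \<infinity>"
    and st: "0 \<le> s" "s \<le> t" "t \<le> T" and w0: "0 \<le> w s t \<omega>0"
  shows "norm (Z t - Z s) \<le> enn2real (cp_norm M W w T p \<omega>0 Z DZ (\<lambda>t \<omega>'. 0)) * w s t \<omega>0 powr (1/p)"
    and "norm (DZ t - DZ s) \<le> enn2real (cp_norm M W w T p \<omega>0 Z DZ (\<lambda>t \<omega>'. 0)) * w s t \<omega>0 powr (1/p)"
    and "norm (Z t - Z s - apply_deriv (DZ s) (W \<omega>0 t - W \<omega>0 s))
           \<le> enn2real (cp_norm M W w T p \<omega>0 Z DZ (\<lambda>t \<omega>'. 0)) * w s t \<omega>0 powr (2/p)"
proof -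
  let ?N = "cp_norm M W w T p \<omega>0 Z DZ (\<lambda>t \<omega>'. 0)"
  have mem: "(s, t) \<in> S2 T" using st by (simp add: S2_def)
  have rem: "cp_rem M W \<omega>0 Z DZ (\<lambda>t \<omega>'. 0) s t = Z t - Z s - apply_deriv (DZ s) (W \<omega>0 t - W \<omega>0 s)"
    by (simp add: cp_rem_def)
  have h1: "ennreal (norm (Z t - Z s)) / ennreal (w s t \<omega>0 powr (1 / p)) \<le> ?N"
    unfolding cp_norm_def
    by (rule order_trans[OF _ sup_le_sum4(1)]) (rule SUP_upper2[OF mem], simp)
  show "norm (Z t - Z s) \<le> enn2real ?N * w s t \<omega>0 powr (1/p)"
    by (rule div_le_imp[OF norm_ge_zero _ h1 fin]) simp
  have h2: "ennreal (norm (DZ t - DZ s)) / ennreal (w s t \<omega>0 powr (1 / p)) \<le> ?N"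
    unfolding cp_norm_def
    by (rule order_trans[OF _ sup_le_sum4(2)]) (rule SUP_upper2[OF mem], simp)
  show "norm (DZ t - DZ s) \<le> enn2real ?N * w s t \<omega>0 powr (1/p)"
    by (rule div_le_imp[OF norm_ge_zero _ h2 fin]) simp
  have h3: "ennreal (norm (cp_rem M W \<omega>0 Z DZ (\<lambda>t \<omega>'. 0) s t)) / ennreal (w s t \<omega>0 powr (2 / p)) \<le> ?N"
    unfolding cp_norm_def
    by (rule order_trans[OF _ sup_le_sum4(4)]) (rule SUP_upper2[OF mem], simp)
  then show "norm (Z t - Z s - apply_deriv (DZ s) (W \<omega>0 t - W \<omega>0 s)) \<le> enn2real ?N * w s t \<omega>0 powr (2/p)"
    using div_le_imp[OF norm_ge_zero _ h3 fin] unfolding rem by simp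
qed

context P12 begin

lemma ctrl_w: "(\<forall>s t. (\<lambda>\<omega>. w s t \<omega>) \<in> borel_measurable M) \<and>
     (\<forall>\<omega>. continuous_on (S2 T) (\<lambda>(s, t). w s t \<omega>)) \<and>
     (\<forall>(s, t)\<in>S2 T. \<forall>\<omega>. 0 \<le> w s t \<omega> \<and>
        vfun M p q W WW WP s t \<omega> + pvar (\<lambda>a b. LqE M q (vfun M p q W WW WP a b)) s t \<le> ennreal (w s t \<omega>)) \<and>
     (\<forall>(s, t)\<in>S2 T. \<forall>\<omega>. Lq M q (\<lambda>\<omega>'. w s t \<omega>') \<le> ennreal (2 * w s t \<omega>)) \<and>
     (\<forall>s u t \<omega>. 0 \<le> s \<longrightarrow> s \<le> u \<longrightarrow> u \<le> t \<longrightarrow> t \<le> T \<longrightarrow> w s u \<omega> + w u t \<omega> \<le> w s t \<omega>)"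
  using ctrl by (simp add: control_def)

lemma w_meas[measurable]: "(\<lambda>\<omega>. w s t \<omega>) \<in> borel_measurable M" using ctrl_w by blast
lemma w_cont: "continuous_on (S2 T) (\<lambda>(s, t). w s t \<omega>')" using ctrl_w by blast
lemma w_nonneg: "0 \<le> s \<Longrightarrow> s \<le> t \<Longrightarrow> t \<le> T \<Longrightarrow> 0 \<le> w s t \<omega>'"
  using ctrl_w by (auto simp: S2_def)
lemma w_vfun: "0 \<le> s \<Longrightarrow> s \<le> t \<Longrightarrow> t \<le> T \<Longrightarrow> vfun M p q W WW WP s t \<omega>' \<le> ennreal (w s t \<omega>')"
  using ctrl_w le_add_e1 unfolding S2_def by (blast intro: order_trans)
lemma w_Lq: "0 \<le> s \<Longrightarrow> s \<le> t \<Longrightarrow> t \<le> T \<Longrightarrow> Lq M q (\<lambda>\<omega>'. w s t \<omega>') \<le> ennreal (2 * w s t \<omega>0)"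
  using ctrl_w by (auto simp: S2_def)
lemma w_super: "0 \<le> s \<Longrightarrow> s \<le> u \<Longrightarrow> u \<le> t \<Longrightarrow> t \<le> T \<Longrightarrow> w s u \<omega>' + w u t \<omega>' \<le> w s t \<omega>'"
  using ctrl_w by blast
lemma w_diag: "0 \<le> t \<Longrightarrow> t \<le> T \<Longrightarrow> w t t \<omega>' = 0"
  using w_super[of t t t \<omega>'] w_nonneg[of t t \<omega>'] by simp
lemma w_mono: "0 \<le> s \<Longrightarrow> s \<le> s' \<Longrightarrow> s' \<le> t' \<Longrightarrow> t' \<le> t \<Longrightarrow> t \<le> T \<Longrightarrow> w s' t' \<omega>' \<le> w s t \<omega>'"
  using w_super[of s s' t \<omega>'] w_super[of s' t' t \<omega>'] w_nonneg[of s s' \<omega>'] w_nonneg[of t' t \<omega>'] by linarith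

lemma W1: assumes "0 \<le> s" "s \<le> t" "t \<le> T"
  shows "norm (W \<omega>' t - W \<omega>' s) \<le> w s t \<omega>' powr (1/p)"
proof -
  have "ennreal (norm (W \<omega>' t - W \<omega>' s) powr p) \<le> pvar (\<lambda>a b. ennreal (norm (W \<omega>' b - W \<omega>' a) powr p)) s t"
    using pvar_ge[OF assms(2)] .
  also have "\<dots> \<le> vfun M p q W WW WP s t \<omega>'"
    unfolding vfun_def add.assoc by (rule le_add_e1)
  also have "\<dots> \<le> ennreal (w s t \<omega>')" by (rule w_vfun[OF assms])
  finally have "norm (W \<omega>' t - W \<omega>' s) powr p \<le> w s t \<omega>'"
    using w_nonneg[OF assms] by (simp add: ennreal_le_iff)
  then show ?thesis using p2 by (intro powr_inv_le) auto
qed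

lemma W2: assumes "0 \<le> s" "s \<le> t" "t \<le> T"
  shows "Lq M q (\<lambda>\<omega>''. W \<omega>'' t - W \<omega>'' s) \<le> ennreal (w s t \<omega>' powr (1/p))"
proof -
  have "epow (Lq M q (\<lambda>\<omega>''. W \<omega>'' t - W \<omega>'' s)) p \<le> pvar (\<lambda>a b. epow (Lq M q (\<lambda>\<omega>'. W \<omega>' b - W \<omega>' a)) p) s t"
    using pvar_ge[OF assms(2)] .
  also have "\<dots> \<le> vfun M p q W WW WP s t \<omega>'"
    unfolding vfun_def add.assoc by (rule order_trans[OF le_add_e1 le_add_e2])
  also have "\<dots> \<le> ennreal (w s t \<omega>')" by (rule w_vfun[OF assms])
  finally have le: "epow (Lq M q (\<lambda>\<omega>''. W \<omega>'' t - W \<omega>'' s)) p \<le> ennreal (w s t \<omega>')" .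
  show ?thesis
  proof (cases "Lq M q (\<lambda>\<omega>''. W \<omega>'' t - W \<omega>'' s)")
    case (real l)
    then have "l powr p \<le> w s t \<omega>'" using le w_nonneg[OF assms] by (simp add: epow_ennreal ennreal_le_iff)
    then have "l \<le> w s t \<omega>' powr (1/p)" using real p2 by (intro powr_inv_le) auto
    then show ?thesis using real by simp
  next
    case top then show ?thesis using le by (simp add: top_unique)
  qed
qed

end


context P12 begin

definition "aX = cp_norm M W w T p \<omega> X DX (\<lambda>t \<omega>'. 0)"
definition "NY = (\<lambda>\<omega>'. cp_norm M W w T p \<omega>' (Y \<omega>') (DY \<omega>') (\<lambda>t \<omega>''. 0))"
definition "AY = LqE M 8 NY"
definition "ar = enn2real aX"
definition "Ar = enn2real AY"

lemma aX_fin: "aX < \<infinity>" using cpX by (simp add: controlled_path_def aX_def)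
lemma cpY: "controlled_path M W w T p \<omega>' (Y \<omega>') (DY \<omega>') (\<lambda>t \<omega>''. 0)"
  using rcpY by (simp add: random_controlled_path_def)
lemma NY_fin: "NY \<omega>' < \<infinity>" using cpY by (simp add: controlled_path_def NY_def)
lemma AY_fin: "AY < \<infinity>" using rcpY by (simp add: random_controlled_path_def AY_def NY_def)
lemma ar0: "0 \<le> ar" by (simp add: ar_def)
lemma Ar0: "0 \<le> Ar" by (simp add: Ar_def)
lemma aX_eq: "aX = ennreal ar" using aX_fin by (simp add: ar_def less_top)
lemma AY_eq: "AY = ennreal Ar" using AY_fin by (simp add: Ar_def less_top)

lemma Y_meas[measurable]: "(\<lambda>\<omega>'. Y \<omega>' t) \<in> borel_measurable M"
  using rcpY by (simp add: random_controlled_path_def)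
lemma DY_meas[measurable]: "(\<lambda>\<omega>'. DY \<omega>' t) \<in> borel_measurable M"
  using rcpY by (simp add: random_controlled_path_def)
lemma RY_meas[measurable]: "(\<lambda>\<omega>'. cp_rem M W \<omega>' (Y \<omega>') (DY \<omega>') (\<lambda>t \<omega>''. 0) s t) \<in> borel_measurable M"
  using rcpY by (simp add: random_controlled_path_def)
lemma RY_eq: "cp_rem M W \<omega>' (Y \<omega>') (DY \<omega>') (\<lambda>t \<omega>''. 0) s t = Y \<omega>' t - Y \<omega>' s - apply_deriv (DY \<omega>' s) (W \<omega>' t - W \<omega>' s)"
  by (simp add: cp_rem_def)
lemma W_meas[measurable]: "(\<lambda>\<omega>'. W \<omega>' t) \<in> borel_measurable M"
  using rs by (simp add: rough_setup_def)
lemma Y0_in: "in_Lq M 2 (\<lambda>\<omega>'. Y \<omega>' 0)"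
  using rcpY by (simp add: random_controlled_path_def in_Lq_def)

lemma X_bounds: assumes "0 \<le> s" "s \<le> t" "t \<le> T"
  shows "norm (X t - X s) \<le> ar * w s t \<omega> powr (1/p)"
    and "norm (DX t - DX s) \<le> ar * w s t \<omega> powr (1/p)"
    and "norm (X t - X s - apply_deriv (DX s) (W \<omega> t - W \<omega> s)) \<le> ar * w s t \<omega> powr (2/p)"
  using cp_bounds[OF aX_fin[unfolded aX_def] assms w_nonneg[OF assms]] unfolding ar_def aX_def by auto

lemma Y_bounds: assumes "0 \<le> s" "s \<le> t" "t \<le> T"
  shows "norm (Y \<omega>' t - Y \<omega>' s) \<le> enn2real (NY \<omega>') * w s t \<omega>' powr (1/p)"
    and "norm (DY \<omega>' t - DY \<omega>' s) \<le> enn2real (NY \<omega>') * w s t \<omega>' powr (1/p)"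
    and "norm (cp_rem M W \<omega>' (Y \<omega>') (DY \<omega>') (\<lambda>t \<omega>''. 0) s t) \<le> enn2real (NY \<omega>') * w s t \<omega>' powr (2/p)"
  using cp_bounds[OF NY_fin[unfolded NY_def] assms w_nonneg[OF assms]] unfolding NY_def RY_eq by auto

lemma YB:
  fixes g :: "'w \<Rightarrow> real"
  assumes gm: "g \<in> borel_measurable M" and g0: "\<And>\<omega>'. 0 \<le> g \<omega>'"
    and gb: "\<And>\<omega>'. g \<omega>' \<le> enn2real (NY \<omega>') * w s t \<omega>' powr \<theta>"
    and st: "0 \<le> s" "s \<le> t" "t \<le> T" and \<theta>: "0 < \<theta>"
    and rb: "0 < r" "0 < b" "1/r = 1/8 + 1/b" "b * \<theta> \<le> q"
  shows "LqE M r (\<lambda>\<omega>'. ennreal (g \<omega>')) \<le> AY * ennreal ((2 * w s t \<omega>) powr \<theta>)"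
proof -
  interpret prob_space M by (rule prob)
  define f where "f \<omega>' = (if w s t \<omega>' = 0 then 0 else g \<omega>' / w s t \<omega>' powr \<theta>)" for \<omega>'
  have fm: "f \<in> borel_measurable M" unfolding f_def using gm by measurable
  have wn: "0 \<le> w s t \<omega>'" for \<omega>' using w_nonneg[OF st] .
  have f0: "0 \<le> f \<omega>'" for \<omega>' unfolding f_def using g0 wn by auto
  have gf: "g \<omega>' = f \<omega>' * w s t \<omega>' powr \<theta>" for \<omega>'
  proof (cases "w s t \<omega>' = 0")
    case True
    then have "g \<omega>' \<le> 0" using gb[of \<omega>'] \<theta> by simp
    then show ?thesis using g0[of \<omega>'] True by (simp add: f_def)
  next
    case False
    then have "0 < w s t \<omega>' powr \<theta>" using wn[of \<omega>'] by simp
    then show ?thesis using False by (simp add: f_def)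
  qed
  have fN: "f \<omega>' \<le> enn2real (NY \<omega>')" for \<omega>'
  proof (cases "w s t \<omega>' = 0")
    case True then show ?thesis by (simp add: f_def)
  next
    case False
    then have pos: "0 < w s t \<omega>' powr \<theta>" using wn[of \<omega>'] by simp
    then show ?thesis using gb[of \<omega>'] False by (simp add: f_def divide_le_eq)
  qed
  have "LqE M r (\<lambda>\<omega>'. ennreal (g \<omega>')) = LqE M r (\<lambda>\<omega>'. ennreal (f \<omega>' * w s t \<omega>' powr \<theta>))"
    by (simp only: gf)
  also have "\<dots> \<le> LqE M 8 (\<lambda>\<omega>'. ennreal (f \<omega>')) * LqE M b (\<lambda>\<omega>'. ennreal (w s t \<omega>' powr \<theta>))"
    by (rule holder[OF fm _ f0]) (use rb in auto)
  also have "\<dots> \<le> AY * ennreal ((2 * w s t \<omega>) powr \<theta>)"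
  proof (rule mult_mono)
    have "LqE M 8 (\<lambda>\<omega>'. ennreal (f \<omega>')) \<le> LqE M 8 NY"
    proof (rule LqE_mono)
      fix \<omega>' have "ennreal (f \<omega>') \<le> ennreal (enn2real (NY \<omega>'))" using fN by (rule ennreal_leI)
      also have "\<dots> = NY \<omega>'" using NY_fin[of \<omega>'] by (simp add: less_top)
      finally show "ennreal (f \<omega>') \<le> NY \<omega>'" .
    qed simp
    then show "LqE M 8 (\<lambda>\<omega>'. ennreal (f \<omega>')) \<le> AY" by (simp add: AY_def)
    have "LqE M b (\<lambda>\<omega>'. ennreal (w s t \<omega>' powr \<theta>)) = epow (LqE M (b * \<theta>) (\<lambda>\<omega>'. ennreal (w s t \<omega>'))) \<theta>"
      by (rule LqE_powr) (use wn rb \<theta> in auto)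
    also have "\<dots> \<le> epow (LqE M q (\<lambda>\<omega>'. ennreal (w s t \<omega>'))) \<theta>"
      by (intro epow_mono lyapunov) (use wn rb \<theta> in auto)
    also have "LqE M q (\<lambda>\<omega>'. ennreal (w s t \<omega>')) = Lq M q (\<lambda>\<omega>'. w s t \<omega>')"
      unfolding Lq_def using wn by simp
    also have "epow (Lq M q (\<lambda>\<omega>'. w s t \<omega>')) \<theta> \<le> epow (ennreal (2 * w s t \<omega>)) \<theta>"
      by (intro epow_mono w_Lq st) (use \<theta> in auto)
    also have "\<dots> = ennreal ((2 * w s t \<omega>) powr \<theta>)" using wn by (simp add: epow_ennreal)
    finally show "LqE M b (\<lambda>\<omega>'. ennreal (w s t \<omega>' powr \<theta>)) \<le> ennreal ((2 * w s t \<omega>) powr \<theta>)" .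
  qed auto
  finally show ?thesis .
qed

end


lemma two_powr_le: "0 < \<theta> \<Longrightarrow> \<theta> \<le> 1 \<Longrightarrow> 0 \<le> u \<Longrightarrow> (2 * u) powr \<theta> \<le> 2 * u powr (\<theta>::real)"
proof -
  assume a: "0 < \<theta>" "\<theta> \<le> 1" "0 \<le> u"
  have "(2 * u) powr \<theta> = 2 powr \<theta> * u powr \<theta>" using a by (simp add: powr_mult)
  also have "\<dots> \<le> 2 * u powr \<theta>" using a powr_mono[of \<theta> 1 2] by (intro mult_right_mono) auto
  finally show ?thesis .
qed

context P12 begin

lemma p0: "0 < p" using p2 by simp
lemma qp: "16 \<le> q * p"
proof -
  have "8 * 2 \<le> q * p" using q8 p2 by (intro mult_mono) auto
  then show ?thesis by simp
qed

lemma YB2: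
  fixes g :: "'w \<Rightarrow> real"
  assumes gm: "g \<in> borel_measurable M" and g0: "\<And>\<omega>'. 0 \<le> g \<omega>'"
    and gb: "\<And>\<omega>'. g \<omega>' \<le> enn2real (NY \<omega>') * w s t \<omega>' powr \<theta>"
    and st: "0 \<le> s" "s \<le> t" "t \<le> T" and \<theta>: "0 < \<theta>" "\<theta> \<le> 1"
    and rb: "0 < r" "0 < b" "1/r = 1/8 + 1/b" "b * \<theta> \<le> q"
  shows "LqE M r (\<lambda>\<omega>'. ennreal (g \<omega>')) \<le> ennreal (2 * Ar * w s t \<omega> powr \<theta>)"
proof -
  have "LqE M r (\<lambda>\<omega>'. ennreal (g \<omega>')) \<le> AY * ennreal ((2 * w s t \<omega>) powr \<theta>)"
    by (rule YB[OF gm g0 gb st \<theta>(1) rb])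
  also have "\<dots> \<le> ennreal Ar * ennreal (2 * w s t \<omega> powr \<theta>)"
    unfolding AY_eq using two_powr_le[OF \<theta> w_nonneg[OF st]] by (intro mult_left_mono ennreal_leI) auto
  also have "\<dots> = ennreal (2 * Ar * w s t \<omega> powr \<theta>)" using Ar0 by (simp add: ennreal_mult[symmetric] mult.assoc mult.left_commute)
  finally show ?thesis .
qed

lemma nY: assumes st: "0 \<le> s" "s \<le> t" "t \<le> T"
  shows "Lq M 2 (\<lambda>\<omega>'. Y \<omega>' t - Y \<omega>' s) \<le> ennreal (2 * Ar * w s t \<omega> powr (1/p))"
  unfolding Lq_def
  by (rule YB2[where b="8/3", OF _ _ Y_bounds(1)[OF st] st]) (use p2 q8 qp in \<open>auto simp: divide_simps\<close>)

lemma nDY: assumes st: "0 \<le> s" "s \<le> t" "t \<le> T"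
  shows "Lq M 4 (\<lambda>\<omega>'. DY \<omega>' t - DY \<omega>' s) \<le> ennreal (2 * Ar * w s t \<omega> powr (1/p))"
  unfolding Lq_def
  by (rule YB2[where b=8, OF _ _ Y_bounds(2)[OF st] st]) (use p2 q8 qp in \<open>auto simp: divide_simps\<close>)

lemma nRY: assumes st: "0 \<le> s" "s \<le> t" "t \<le> T"
  shows "Lq M 2 (\<lambda>\<omega>'. cp_rem M W \<omega>' (Y \<omega>') (DY \<omega>') (\<lambda>t \<omega>''. 0) s t) \<le> ennreal (2 * Ar * w s t \<omega> powr (2/p))"
  unfolding Lq_def
  by (rule YB2[where b="8/3", OF _ _ Y_bounds(3)[OF st] st]) (use p2 q8 qp in \<open>auto simp: divide_simps\<close>)

lemma in_Lq_of_bound: "f \<in> borel_measurable M \<Longrightarrow> Lq M r f \<le> ennreal c \<Longrightarrow> in_Lq M r f"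
  by (auto simp: in_Lq_def intro: le_less_trans)

lemma n2_of_bound: "f \<in> borel_measurable M \<Longrightarrow> Lq M 2 f \<le> ennreal c \<Longrightarrow> 0 \<le> c \<Longrightarrow> n2 M f \<le> c"
  using in_Lq_of_bound[of f 2 c] by (simp add: Lq_n2)

lemma Yinc_in: "0 \<le> s \<Longrightarrow> s \<le> t \<Longrightarrow> t \<le> T \<Longrightarrow> in_Lq M 2 (\<lambda>\<omega>'. Y \<omega>' t - Y \<omega>' s)"
  by (rule in_Lq_of_bound[OF _ nY]) auto

lemma n2Y: "0 \<le> s \<Longrightarrow> s \<le> t \<Longrightarrow> t \<le> T \<Longrightarrow> n2 M (\<lambda>\<omega>'. Y \<omega>' t - Y \<omega>' s) \<le> 2 * Ar * w s t \<omega> powr (1/p)"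
  by (rule n2_of_bound[OF _ nY]) (auto simp: Ar0)

lemma RY_in: "0 \<le> s \<Longrightarrow> s \<le> t \<Longrightarrow> t \<le> T \<Longrightarrow> in_Lq M 2 (\<lambda>\<omega>'. cp_rem M W \<omega>' (Y \<omega>') (DY \<omega>') (\<lambda>t \<omega>''. 0) s t)"
  by (rule in_Lq_of_bound[OF _ nRY]) auto

lemma n2RY: "0 \<le> s \<Longrightarrow> s \<le> t \<Longrightarrow> t \<le> T \<Longrightarrow> n2 M (\<lambda>\<omega>'. cp_rem M W \<omega>' (Y \<omega>') (DY \<omega>') (\<lambda>t \<omega>''. 0) s t) \<le> 2 * Ar * w s t \<omega> powr (2/p)"
  by (rule n2_of_bound[OF _ nRY]) (auto simp: Ar0)

lemma Yt_in: assumes "0 \<le> t" "t \<le> T" shows "in_Lq M 2 (\<lambda>\<omega>'. Y \<omega>' t)"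
proof -
  have "in_Lq M 2 (\<lambda>\<omega>'. Y \<omega>' 0 + (Y \<omega>' t - Y \<omega>' 0))"
    by (intro in_Lq_add Y0_in Yinc_in) (use assms in auto)
  then show ?thesis by simp
qed

lemma DX_bd: assumes "0 \<le> t" "t \<le> T" shows "norm (DX t) \<le> Mb"
proof -
  have "sup (ennreal (norm (DX t))) (Linf M (\<lambda>\<omega>'. DY \<omega>' t)) \<le> ennreal Mb"
    unfolding supM[symmetric] by (rule SUP_upper) (use assms in auto)
  then have "ennreal (norm (DX t)) \<le> ennreal Mb" by simp
  then show ?thesis using Mb0 by (simp add: ennreal_le_iff)
qed

lemma DY_bd: assumes "0 \<le> t" "t \<le> T" shows "AE \<omega>' in M. norm (DY \<omega>' t) \<le> Mb"
proof -
  have "sup (ennreal (norm (DX t))) (Linf M (\<lambda>\<omega>'. DY \<omega>' t)) \<le> ennreal Mb"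
    unfolding supM[symmetric] by (rule SUP_upper) (use assms in auto)
  then have L: "Linf M (\<lambda>\<omega>'. DY \<omega>' t) \<le> ennreal Mb" by simp
  have "AE \<omega>' in M. ennreal (norm (DY \<omega>' t)) \<le> Linf M (\<lambda>\<omega>'. DY \<omega>' t)"
    unfolding Linf_def by (rule esssup_AE)
  then show ?thesis
    by eventually_elim (use L Mb0 in \<open>auto simp: ennreal_le_iff dest: order_trans\<close>)
qed

end


lemma chi_split:
  fixes A B :: "'v::real_vector^'n" and V U :: "(real^'n)^'m"
  shows "(\<chi> k. apply_deriv A (V $ k)) - (\<chi> k. apply_deriv B (U $ k))
       = (\<chi> k. apply_deriv (A - B) (V $ k)) + (\<chi> k. apply_deriv B ((V - U) $ k))"
  by (simp add: vec_eq_iff apply_deriv_diff_left apply_deriv_diff_right)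

lemma Lq_prod_AE:
  fixes f :: "'a \<Rightarrow> 'b::real_normed_vector" and g :: "'a \<Rightarrow> 'c::real_normed_vector"
    and h :: "'a \<Rightarrow> 'e::real_normed_vector"
  assumes P: "prob_space M" and fm: "(\<lambda>x. norm (f x)) \<in> borel_measurable M"
    and g: "AE x in M. norm (g x) \<le> c" and c: "0 \<le> c"
    and h: "\<And>x. norm (h x) \<le> norm (f x) * norm (g x)" and r: "0 < r" "r \<le> 2"
  shows "Lq M r h \<le> ennreal c * Lq M 2 f"
proof -
  interpret prob_space M by (rule P)
  have "Lq M r h \<le> LqE M r (\<lambda>x. ennreal (c * norm (f x)))"
    unfolding Lq_def
  proof (rule LqE_mono_AE[OF _ r(1)])
    show "AE x in M. ennreal (norm (h x)) \<le> ennreal (c * norm (f x))"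
      using g
    proof eventually_elim
      case (elim x)
      have "norm (h x) \<le> norm (f x) * norm (g x)" by (rule h)
      also have "\<dots> \<le> norm (f x) * c" using elim by (intro mult_left_mono) auto
      finally show ?case by (intro ennreal_leI) (simp add: mult.commute)
    qed
  qed
  also have "\<dots> = ennreal c * LqE M r (\<lambda>x. ennreal (norm (f x)))"
    by (rule LqE_scale[OF fm _ c r(1)]) simp
  also have "\<dots> \<le> ennreal c * Lq M 2 f"
    unfolding Lq_def by (intro mult_left_mono lyapunov fm) (use r in auto)
  finally show ?thesis .
qed

lemma Lq_holder_vec:
  fixes f :: "'a \<Rightarrow> 'b::real_normed_vector" and g :: "'a \<Rightarrow> 'c::real_normed_vector"
    and h :: "'a \<Rightarrow> 'e::real_normed_vector"
  assumes fm: "(\<lambda>x. norm (f x)) \<in> borel_measurable M" and gm: "(\<lambda>x. norm (g x)) \<in> borel_measurable M"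
    and h: "\<And>x. norm (h x) \<le> norm (f x) * norm (g x)"
    and r: "0 < r" "0 < a" "0 < b" "1/r = 1/a + 1/b"
  shows "Lq M r h \<le> Lq M a f * Lq M b g"
proof -
  have "Lq M r h \<le> LqE M r (\<lambda>x. ennreal (norm (f x) * norm (g x)))"
    unfolding Lq_def by (intro LqE_mono ennreal_leI h r)
  also have "\<dots> \<le> Lq M a f * Lq M b g"
    unfolding Lq_def by (rule holder[OF fm gm]) (use r in auto)
  finally show ?thesis .
qed

context P12 begin

definition "Yt t = (\<lambda>\<omega>'. Y \<omega>' t)"
definition "Ft t = G (X t) (Yt t)"
definition "DFt t = (\<chi> k. apply_deriv (DxF (X t) (Yt t)) (DX t $ k))"
definition "DmuF t \<omega>' = (\<chi> k. apply_deriv (DZF (X t) (Yt t) \<omega>') (DY \<omega>' t $ k))"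

lemma Yt_in': "0 \<le> t \<Longrightarrow> t \<le> T \<Longrightarrow> in_Lq M 2 (Yt t)" unfolding Yt_def by (rule Yt_in)

lemma DZF_meas: "0 \<le> t \<Longrightarrow> t \<le> T \<Longrightarrow> DZF x (Yt t) \<in> borel_measurable M"
  using inDZF[OF Yt_in'] by (simp add: in_Lq_def)

lemma DmuF_meas: "0 \<le> t \<Longrightarrow> t \<le> T \<Longrightarrow> DmuF t \<in> borel_measurable M"
  unfolding DmuF_def[abs_def] by (intro measurable_chi_apply_deriv DZF_meas DY_meas)

lemma E0a: "norm (Ft 0) \<le> \<Lambda>" unfolding Ft_def by (rule bG[OF Yt_in']) (use T0 in auto)

lemma E0b: "norm (DFt 0) \<le> \<Lambda> * Mb"
proof -
  have "norm (DFt 0) \<le> norm (DxF (X 0) (Yt 0)) * norm (DX 0)"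
    unfolding DFt_def by (rule norm_chi_apply_deriv)
  also have "\<dots> \<le> \<Lambda> * Mb"
    using bDxF[OF Yt_in'] DX_bd T0 Lam0 by (intro mult_mono) auto
  finally show ?thesis .
qed

lemma DmuF_Lq: assumes "0 \<le> t" "t \<le> T" shows "Lq M (4/3) (DmuF t) \<le> ennreal (Mb * \<Lambda>)"
proof -
  have "Lq M (4/3) (DmuF t) \<le> ennreal Mb * Lq M 2 (DZF (X t) (Yt t))"
    by (rule Lq_prod_AE[OF prob _ DY_bd[OF assms] Mb0]) (use DZF_meas[OF assms] in \<open>auto simp: DmuF_def norm_chi_apply_deriv\<close>)
  also have "\<dots> \<le> ennreal Mb * ennreal \<Lambda>" by (intro mult_left_mono bDZF' Yt_in' assms) auto
  finally show ?thesis using Mb0 Lam0 by (simp add: ennreal_mult)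
qed

lemma DmuF_in: "0 \<le> t \<Longrightarrow> t \<le> T \<Longrightarrow> in_Lq M (4/3) (DmuF t)"
  by (rule in_Lq_of_bound[OF DmuF_meas DmuF_Lq]) auto

end


lemma tri_helper:
  fixes A B C :: ennreal
  assumes "A \<le> 4 * (B + C)" "B \<le> ennreal x" "C \<le> ennreal y" "0 \<le> x" "0 \<le> y"
  shows "A \<le> ennreal (4 * (x + y))"
proof -
  have "A \<le> 4 * (ennreal x + ennreal y)" using assms by (meson add_mono mult_left_mono order_trans zero_le)
  also have "\<dots> = ennreal (4 * (x + y))" using assms by (simp add: ennreal_mult ennreal_plus)
  finally show ?thesis .
qed

context P12 begin

lemma v12: "w s t \<omega> powr (1/p) * w s t \<omega> powr (1/p) = w s t \<omega> powr (2/p)"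
  by (simp add: powr_add[symmetric])

lemma E1: assumes st: "0 \<le> s" "s \<le> t" "t \<le> T"
  shows "norm (Ft t - Ft s) \<le> (\<Lambda> * ar + 2 * \<Lambda> * Ar) * w s t \<omega> powr (1/p)"
proof -
  have Zs: "in_Lq M 2 (Yt s)" and Zt: "in_Lq M 2 (Yt t)" using st by (auto intro: Yt_in')
  have ny: "n2 M (\<lambda>\<omega>'. Yt t \<omega>' - Yt s \<omega>') \<le> 2 * Ar * w s t \<omega> powr (1/p)"
    unfolding Yt_def using n2Y[OF st] by simp
  have "Ft t - Ft s = (G (X t) (Yt t) - G (X s) (Yt t)) + (G (X s) (Yt t) - G (X s) (Yt s))"
    by (simp add: Ft_def)
  then have "norm (Ft t - Ft s) \<le> norm (G (X t) (Yt t) - G (X s) (Yt t)) + norm (G (X s) (Yt t) - G (X s) (Yt s))"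
    by (metis norm_triangle_ineq)
  also have "\<dots> \<le> \<Lambda> * norm (X t - X s) + \<Lambda> * n2 M (\<lambda>\<omega>'. Yt t \<omega>' - Yt s \<omega>')"
    by (intro add_mono F1 F3 Zs Zt)
  also have "\<dots> \<le> \<Lambda> * (ar * w s t \<omega> powr (1/p)) + \<Lambda> * (2 * Ar * w s t \<omega> powr (1/p))"
    by (intro add_mono mult_left_mono X_bounds(1)[OF st] ny Lam0)
  also have "\<dots> = (\<Lambda> * ar + 2 * \<Lambda> * Ar) * w s t \<omega> powr (1/p)" by (simp add: algebra_simps)
  finally show ?thesis .
qed

lemma DxF_diff: assumes st: "0 \<le> s" "s \<le> t" "t \<le> T"
  shows "norm (DxF (X t) (Yt t) - DxF (X s) (Yt s)) \<le> (\<Lambda> * ar + 2 * \<Lambda> * Ar) * w s t \<omega> powr (1/p)"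
proof -
  have Zs: "in_Lq M 2 (Yt s)" and Zt: "in_Lq M 2 (Yt t)" using st by (auto intro: Yt_in')
  have ny: "n2 M (\<lambda>\<omega>'. Yt t \<omega>' - Yt s \<omega>') \<le> 2 * Ar * w s t \<omega> powr (1/p)"
    unfolding Yt_def using n2Y[OF st] by simp
  have "DxF (X t) (Yt t) - DxF (X s) (Yt s) = (DxF (X t) (Yt t) - DxF (X s) (Yt t)) + (DxF (X s) (Yt t) - DxF (X s) (Yt s))"
    by simp
  then have "norm (DxF (X t) (Yt t) - DxF (X s) (Yt s)) \<le> norm (DxF (X t) (Yt t) - DxF (X s) (Yt t)) + norm (DxF (X s) (Yt t) - DxF (X s) (Yt s))"
    by (metis norm_triangle_ineq)
  also have "\<dots> \<le> \<Lambda> * norm (X t - X s) + \<Lambda> * n2 M (\<lambda>\<omega>'. Yt t \<omega>' - Yt s \<omega>')"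
    by (intro add_mono F2 F4 Zs Zt)
  also have "\<dots> \<le> \<Lambda> * (ar * w s t \<omega> powr (1/p)) + \<Lambda> * (2 * Ar * w s t \<omega> powr (1/p))"
    by (intro add_mono mult_left_mono X_bounds(1)[OF st] ny Lam0)
  also have "\<dots> = (\<Lambda> * ar + 2 * \<Lambda> * Ar) * w s t \<omega> powr (1/p)" by (simp add: algebra_simps)
  finally show ?thesis .
qed

lemma E2: assumes st: "0 \<le> s" "s \<le> t" "t \<le> T"
  shows "norm (DFt t - DFt s) \<le> ((\<Lambda> * ar + 2 * \<Lambda> * Ar) * Mb + \<Lambda> * ar) * w s t \<omega> powr (1/p)"
proof -
  have Zs: "in_Lq M 2 (Yt s)" using st by (auto intro: Yt_in')
  have "DFt t - DFt s = (\<chi> k. apply_deriv (DxF (X t) (Yt t) - DxF (X s) (Yt s)) (DX t $ k))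
                      + (\<chi> k. apply_deriv (DxF (X s) (Yt s)) ((DX t - DX s) $ k))"
    unfolding DFt_def by (rule chi_split)
  then have "norm (DFt t - DFt s) \<le> norm (\<chi> k. apply_deriv (DxF (X t) (Yt t) - DxF (X s) (Yt s)) (DX t $ k))
                      + norm (\<chi> k. apply_deriv (DxF (X s) (Yt s)) ((DX t - DX s) $ k))"
    by (metis norm_triangle_ineq)
  also have "\<dots> \<le> norm (DxF (X t) (Yt t) - DxF (X s) (Yt s)) * norm (DX t) + norm (DxF (X s) (Yt s)) * norm (DX t - DX s)"
    by (intro add_mono norm_chi_apply_deriv)
  also have "\<dots> \<le> ((\<Lambda> * ar + 2 * \<Lambda> * Ar) * w s t \<omega> powr (1/p)) * Mb + \<Lambda> * (ar * w s t \<omega> powr (1/p))"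
    by (intro add_mono mult_mono DxF_diff[OF st] DX_bd X_bounds(2)[OF st] bDxF[OF Zs])
       (use st Lam0 ar0 Ar0 in auto)
  also have "\<dots> = ((\<Lambda> * ar + 2 * \<Lambda> * Ar) * Mb + \<Lambda> * ar) * w s t \<omega> powr (1/p)" by (simp add: algebra_simps)
  finally show ?thesis .
qed

end


lemma emult: "0 \<le> a \<Longrightarrow> 0 \<le> b \<Longrightarrow> ennreal a * ennreal b = ennreal (a * b)"
  by (simp add: ennreal_mult)

context P12 begin


lemma E3: assumes st: "0 \<le> s" "s \<le> t" "t \<le> T"
  shows "Lq M (4/3) (\<lambda>\<omega>'. DmuF t \<omega>' - DmuF s \<omega>')
     \<le> ennreal (4 * (Mb * (4 * (real DIM(real^'m^'d) * \<Lambda> * (ar * w s t \<omega> powr (1/p)) + \<Lambda> * (2 * Ar * w s t \<omega> powr (1/p))))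
                   + \<Lambda> * (2 * Ar * w s t \<omega> powr (1/p))))"
proof -
  have s0: "0 \<le> s" "s \<le> T" and t0: "0 \<le> t" "t \<le> T" using st by auto
  have Zs: "in_Lq M 2 (Yt s)" and Zt: "in_Lq M 2 (Yt t)" using st by (auto intro: Yt_in')
  have ny: "n2 M (\<lambda>\<omega>'. Yt t \<omega>' - Yt s \<omega>') \<le> 2 * Ar * w s t \<omega> powr (1/p)"
    unfolding Yt_def using n2Y[OF st] by simp
  define v1 where "v1 = w s t \<omega> powr (1/p)"
  have v10: "0 \<le> v1" unfolding v1_def by simp
  define D1 where "D1 \<omega>' = DZF (X t) (Yt t) \<omega>' - DZF (X s) (Yt s) \<omega>'" for \<omega>'
  define P1 where "P1 \<omega>' = (\<chi> k. apply_deriv (D1 \<omega>') (DY \<omega>' t $ k))" for \<omega>'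
  define P2 where "P2 \<omega>' = (\<chi> k. apply_deriv (DZF (X s) (Yt s) \<omega>') ((DY \<omega>' t - DY \<omega>' s) $ k))" for \<omega>'
  have eq: "(\<lambda>\<omega>'. DmuF t \<omega>' - DmuF s \<omega>') = (\<lambda>\<omega>'. P1 \<omega>' + P2 \<omega>')"
    by (rule ext) (simp add: DmuF_def P1_def P2_def D1_def chi_split)
  have mZs[measurable]: "DZF (X s) (Yt s) \<in> borel_measurable M" by (rule DZF_meas[OF s0])
  have mZt[measurable]: "DZF (X t) (Yt t) \<in> borel_measurable M" by (rule DZF_meas[OF t0])
  have mZst[measurable]: "DZF (X s) (Yt t) \<in> borel_measurable M" by (rule DZF_meas[OF t0])
  have mD1[measurable]: "D1 \<in> borel_measurable M" unfolding D1_def by measurable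
  have mP1: "P1 \<in> borel_measurable M" unfolding P1_def[abs_def] by (intro measurable_chi_apply_deriv mD1 DY_meas)
  have mP2: "P2 \<in> borel_measurable M" unfolding P2_def[abs_def]
    by (intro measurable_chi_apply_deriv mZs) measurable
  have tri: "Lq M (4/3) (\<lambda>\<omega>'. P1 \<omega>' + P2 \<omega>') \<le> 4 * (Lq M (4/3) P1 + Lq M (4/3) P2)"
    by (rule Lq_triangle[OF mP1 mP2]) simp
  
  have D1b: "Lq M 2 D1 \<le> ennreal (4 * (real DIM(real^'m^'d) * \<Lambda> * (ar * v1) + \<Lambda> * (2 * Ar * v1)))"
  proof (rule tri_helper)
    have "Lq M 2 D1 = Lq M 2 (\<lambda>\<omega>'. (DZF (X t) (Yt t) \<omega>' - DZF (X s) (Yt t) \<omega>') + (DZF (X s) (Yt t) \<omega>' - DZF (X s) (Yt s) \<omega>'))"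
      unfolding D1_def by simp
    also have "\<dots> \<le> 4 * (Lq M 2 (\<lambda>\<omega>'. DZF (X t) (Yt t) \<omega>' - DZF (X s) (Yt t) \<omega>') + Lq M 2 (\<lambda>\<omega>'. DZF (X s) (Yt t) \<omega>' - DZF (X s) (Yt s) \<omega>'))"
      by (rule Lq_triangle) auto
    finally show "Lq M 2 D1 \<le> 4 * (Lq M 2 (\<lambda>\<omega>'. DZF (X t) (Yt t) \<omega>' - DZF (X s) (Yt t) \<omega>') + Lq M 2 (\<lambda>\<omega>'. DZF (X s) (Yt t) \<omega>' - DZF (X s) (Yt s) \<omega>'))" .
    have i1: "in_Lq M 2 (\<lambda>\<omega>'. DZF (X t) (Yt t) \<omega>' - DZF (X s) (Yt t) \<omega>')" by (intro in_Lq_diff inDZF Zt) auto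
    have "n2 M (\<lambda>\<omega>'. DZF (X t) (Yt t) \<omega>' - DZF (X s) (Yt t) \<omega>') \<le> real DIM(real^'m^'d) * \<Lambda> * norm (X t - X s)"
      by (rule F7[OF Zt])
    also have "\<dots> \<le> real DIM(real^'m^'d) * \<Lambda> * (ar * v1)" unfolding v1_def using Lam0
      by (intro mult_left_mono X_bounds(1)[OF st]) auto
    finally show "Lq M 2 (\<lambda>\<omega>'. DZF (X t) (Yt t) \<omega>' - DZF (X s) (Yt t) \<omega>') \<le> ennreal (real DIM(real^'m^'d) * \<Lambda> * (ar * v1))"
      unfolding Lq_n2[OF i1] by (rule ennreal_leI)
    have i2: "in_Lq M 2 (\<lambda>\<omega>'. DZF (X s) (Yt t) \<omega>' - DZF (X s) (Yt s) \<omega>')" by (intro in_Lq_diff inDZF Zt Zs) auto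
    have "n2 M (\<lambda>\<omega>'. DZF (X s) (Yt t) \<omega>' - DZF (X s) (Yt s) \<omega>') \<le> \<Lambda> * n2 M (\<lambda>\<omega>'. Yt t \<omega>' - Yt s \<omega>')"
      by (rule lipDZF[OF Zt Zs])
    also have "\<dots> \<le> \<Lambda> * (2 * Ar * v1)" unfolding v1_def using Lam0 by (intro mult_left_mono ny) auto
    finally show "Lq M 2 (\<lambda>\<omega>'. DZF (X s) (Yt t) \<omega>' - DZF (X s) (Yt s) \<omega>') \<le> ennreal (\<Lambda> * (2 * Ar * v1))"
      unfolding Lq_n2[OF i2] by (rule ennreal_leI)
  qed (use Lam0 ar0 Ar0 v10 in auto)
  have P1b: "Lq M (4/3) P1 \<le> ennreal (Mb * (4 * (real DIM(real^'m^'d) * \<Lambda> * (ar * v1) + \<Lambda> * (2 * Ar * v1))))"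
  proof -
    have "Lq M (4/3) P1 \<le> ennreal Mb * Lq M 2 D1"
      by (rule Lq_prod_AE[OF prob _ DY_bd[OF t0] Mb0]) (auto simp: P1_def norm_chi_apply_deriv)
    also have "\<dots> \<le> ennreal Mb * ennreal (4 * (real DIM(real^'m^'d) * \<Lambda> * (ar * v1) + \<Lambda> * (2 * Ar * v1)))"
      by (intro mult_left_mono D1b) auto
    also have "\<dots> = ennreal (Mb * (4 * (real DIM(real^'m^'d) * \<Lambda> * (ar * v1) + \<Lambda> * (2 * Ar * v1))))"
      by (rule ennreal_mult[symmetric]) (use Mb0 Lam0 ar0 Ar0 v10 in \<open>auto intro!: mult_nonneg_nonneg add_nonneg_nonneg\<close>)
    finally show ?thesis .
  qed
  have P2b: "Lq M (4/3) P2 \<le> ennreal (\<Lambda> * (2 * Ar * v1))"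
  proof -
    have pt: "norm (P2 x) \<le> norm (DZF (X s) (Yt s) x) * norm (DY x t - DY x s)" for x
      unfolding P2_def by (rule norm_chi_apply_deriv)
    have "Lq M (4/3) P2 \<le> Lq M 2 (DZF (X s) (Yt s)) * Lq M 4 (\<lambda>\<omega>'. DY \<omega>' t - DY \<omega>' s)"
      by (rule Lq_holder_vec[OF _ _ pt]) auto
    also have "\<dots> \<le> ennreal \<Lambda> * ennreal (2 * Ar * v1)"
      unfolding v1_def by (intro mult_mono bDZF' Zs nDY[OF st]) auto
    also have "\<dots> = ennreal (\<Lambda> * (2 * Ar * v1))" by (rule emult) (use Lam0 Ar0 v10 in auto)
    finally show ?thesis .
  qed
  have "Lq M (4/3) (\<lambda>\<omega>'. P1 \<omega>' + P2 \<omega>')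
     \<le> ennreal (4 * (Mb * (4 * (real DIM(real^'m^'d) * \<Lambda> * (ar * v1) + \<Lambda> * (2 * Ar * v1))) + \<Lambda> * (2 * Ar * v1)))"
    by (rule tri_helper[OF tri P1b P2b]) (use Lam0 ar0 Ar0 v10 Mb0 in auto)
  then show ?thesis unfolding eq v1_def .
qed

end


lemma norm_sum5: "norm (a + b + c + d + e) \<le> norm a + norm b + norm c + norm d + norm (e::'a::real_normed_vector)"
  by (meson add_mono norm_triangle_ineq order_trans order_refl)

context P12 begin

lemma E4: assumes st: "0 \<le> s" "s \<le> t" "t \<le> T"
  shows "norm (cp_rem M W \<omega> Ft DFt DmuF s t)
    \<le> (\<Lambda> * ar\<^sup>2 + 2 * \<Lambda> * Ar * ar + \<Lambda> * ar + 4 * \<Lambda> * Ar\<^sup>2 + 2 * \<Lambda> * Ar) * w s t \<omega> powr (2/p)"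
proof -
  have s0: "0 \<le> s" "s \<le> T" and t0: "0 \<le> t" "t \<le> T" using st by auto
  have Zs: "in_Lq M 2 (Yt s)" and Zt: "in_Lq M 2 (Yt t)" using st by (auto intro: Yt_in')
  define v1 where "v1 = w s t \<omega> powr (1/p)"
  define v2 where "v2 = w s t \<omega> powr (2/p)"
  have v10: "0 \<le> v1" and v20: "0 \<le> v2" unfolding v1_def v2_def by simp_all
  have v12': "v1 * v1 = v2" unfolding v1_def v2_def by (rule v12)
  define h where "h = W \<omega> t - W \<omega> s"
  define \<Delta> where "\<Delta> = X t - X s"
  define RX where "RX = \<Delta> - apply_deriv (DX s) h"
  define A where "A = DxF (X s) (Yt s)"
  define A' where "A' = DxF (X s) (Yt t)"
  define Dz where "Dz = DZF (X s) (Yt s)"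
  define YI where "YI \<omega>' = Yt t \<omega>' - Yt s \<omega>'" for \<omega>'
  define RY where "RY \<omega>' = cp_rem M W \<omega>' (Y \<omega>') (DY \<omega>') (\<lambda>t \<omega>''. 0) s t" for \<omega>'
  define E1 where "E1 = (\<integral>\<omega>'. apply_deriv (Dz \<omega>') (YI \<omega>') \<partial>M)"
  define E2 where "E2 = (\<integral>\<omega>'. apply_deriv (Dz \<omega>') (RY \<omega>') \<partial>M)"
  have Dzin: "in_Lq M 2 Dz" unfolding Dz_def by (rule inDZF[OF Zs])
  have YIin: "in_Lq M 2 YI" unfolding YI_def Yt_def using Yinc_in[OF st] by simp
  have RYin: "in_Lq M 2 RY" unfolding RY_def[abs_def] by (rule RY_in[OF st])
  have nyi: "n2 M YI \<le> 2 * Ar * v1" unfolding YI_def Yt_def v1_def using n2Y[OF st] by simp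
  have nry: "n2 M RY \<le> 2 * Ar * v2" unfolding RY_def[abs_def] v2_def using n2RY[OF st] by simp
  have nD: "norm \<Delta> \<le> ar * v1" unfolding \<Delta>_def v1_def by (rule X_bounds(1)[OF st])
  have nRX: "norm RX \<le> ar * v2" unfolding RX_def \<Delta>_def h_def v2_def by (rule X_bounds(3)[OF st])
  have f1: "apply_deriv (DFt s) h = apply_deriv A \<Delta> - apply_deriv A RX"
  proof -
    have "apply_deriv (DFt s) h = apply_deriv A (apply_deriv (DX s) h)"
      unfolding DFt_def A_def by (rule apply_deriv_chi)
    also have "apply_deriv (DX s) h = \<Delta> - RX" unfolding RX_def by simp
    finally show ?thesis by (simp add: apply_deriv_diff_right)
  qed
  have f2: "(\<integral>\<omega>'. apply_deriv (DmuF s \<omega>') (W \<omega>' t - W \<omega>' s) \<partial>M) = E1 - E2"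
  proof -
    have pt: "apply_deriv (DmuF s \<omega>') (W \<omega>' t - W \<omega>' s) = apply_deriv (Dz \<omega>') (YI \<omega>') - apply_deriv (Dz \<omega>') (RY \<omega>')" for \<omega>'
    proof -
      have "apply_deriv (DmuF s \<omega>') (W \<omega>' t - W \<omega>' s) = apply_deriv (Dz \<omega>') (apply_deriv (DY \<omega>' s) (W \<omega>' t - W \<omega>' s))"
        unfolding DmuF_def Dz_def by (rule apply_deriv_chi)
      also have "apply_deriv (DY \<omega>' s) (W \<omega>' t - W \<omega>' s) = YI \<omega>' - RY \<omega>'"
        unfolding YI_def RY_def RY_eq Yt_def by simp
      finally show ?thesis by (simp add: apply_deriv_diff_right)
    qed
    show ?thesis unfolding pt E1_def E2_def
      by (rule Bochner_Integration.integral_diff) (intro integrable_apply_deriv Dzin YIin RYin)+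
  qed
  have rem: "cp_rem M W \<omega> Ft DFt DmuF s t
      = (G (X t) (Yt t) - G (X s) (Yt t) - apply_deriv A' \<Delta>) + apply_deriv (A' - A) \<Delta> + apply_deriv A RX
        + (G (X s) (Yt t) - G (X s) (Yt s) - E1) + E2"
    unfolding cp_rem_def f2 h_def[symmetric] f1
    by (simp add: Ft_def apply_deriv_diff_left algebra_simps)
  have b1: "norm (G (X t) (Yt t) - G (X s) (Yt t) - apply_deriv A' \<Delta>) \<le> \<Lambda> * (ar\<^sup>2 * v2)"
  proof -
    have "norm (G (X t) (Yt t) - G (X s) (Yt t) - apply_deriv A' \<Delta>) \<le> \<Lambda> * norm \<Delta> ^ 2"
      unfolding A'_def \<Delta>_def by (rule F5[OF Zt])
    also have "\<dots> \<le> \<Lambda> * (ar * v1) ^ 2" using nD Lam0 by (intro mult_left_mono power_mono) auto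
    also have "(ar * v1) ^ 2 = ar\<^sup>2 * v2" using v12' by (simp add: power2_eq_square algebra_simps)
    finally show ?thesis .
  qed
  have b2: "norm (apply_deriv (A' - A) \<Delta>) \<le> 2 * \<Lambda> * Ar * ar * v2"
  proof -
    have "norm (apply_deriv (A' - A) \<Delta>) \<le> norm (A' - A) * norm \<Delta>" by (rule norm_apply_deriv)
    also have "\<dots> \<le> (\<Lambda> * (2 * Ar * v1)) * (ar * v1)"
    proof (intro mult_mono nD)
      have "norm (A' - A) \<le> \<Lambda> * n2 M YI" unfolding A'_def A_def YI_def by (rule F4[OF Zs Zt])
      also have "\<dots> \<le> \<Lambda> * (2 * Ar * v1)" using nyi Lam0 by (intro mult_left_mono) auto
      finally show "norm (A' - A) \<le> \<Lambda> * (2 * Ar * v1)" .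
    qed (use Lam0 Ar0 v10 in auto)
    also have "\<dots> = 2 * \<Lambda> * Ar * ar * (v1 * v1)" by (simp add: algebra_simps)
    finally show ?thesis using v12' by simp
  qed
  have b3: "norm (apply_deriv A RX) \<le> \<Lambda> * (ar * v2)"
  proof -
    have "norm (apply_deriv A RX) \<le> norm A * norm RX" by (rule norm_apply_deriv)
    also have "\<dots> \<le> \<Lambda> * (ar * v2)" unfolding A_def by (intro mult_mono bDxF Zs nRX) (use Lam0 in auto)
    finally show ?thesis .
  qed
  have b4: "norm (G (X s) (Yt t) - G (X s) (Yt s) - E1) \<le> \<Lambda> * (4 * Ar\<^sup>2 * v2)"
  proof -
    have "norm (G (X s) (Yt t) - G (X s) (Yt s) - E1) \<le> \<Lambda> * n2 M YI ^ 2"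
      unfolding E1_def Dz_def YI_def by (rule F6[OF Zs Zt])
    also have "\<dots> \<le> \<Lambda> * (2 * Ar * v1) ^ 2" using nyi Lam0 by (intro mult_left_mono power_mono) auto
    also have "(2 * Ar * v1) ^ 2 = 4 * Ar\<^sup>2 * v2" using v12' by (simp add: power2_eq_square algebra_simps)
    finally show ?thesis .
  qed
  have b5: "norm E2 \<le> \<Lambda> * (2 * Ar * v2)"
  proof -
    have "norm E2 \<le> n2 M Dz * n2 M RY" unfolding E2_def by (rule norm_E_apply_deriv[OF Dzin RYin])
    also have "\<dots> \<le> \<Lambda> * (2 * Ar * v2)" unfolding Dz_def by (intro mult_mono bDZF Zs nry) (use Lam0 in auto)
    finally show ?thesis .
  qed
  have "norm (cp_rem M W \<omega> Ft DFt DmuF s t)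
      \<le> \<Lambda> * (ar\<^sup>2 * v2) + 2 * \<Lambda> * Ar * ar * v2 + \<Lambda> * (ar * v2) + \<Lambda> * (4 * Ar\<^sup>2 * v2) + \<Lambda> * (2 * Ar * v2)"
    unfolding rem by (rule order_trans[OF norm_sum5]) (intro add_mono b1 b2 b3 b4 b5)
  also have "\<dots> = (\<Lambda> * ar\<^sup>2 + 2 * \<Lambda> * Ar * ar + \<Lambda> * ar + 4 * \<Lambda> * Ar\<^sup>2 + 2 * \<Lambda> * Ar) * v2"
    by (simp add: algebra_simps)
  finally show ?thesis unfolding v2_def .
qed

end


lemma ennreal_squeeze:
  fixes F :: "'a \<Rightarrow> ennreal"
  assumes "eventually (\<lambda>x. F x \<le> ennreal (g x)) net" "(g \<longlongrightarrow> 0) net"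
  shows "(F \<longlongrightarrow> 0) net"
proof (rule tendsto_sandwich[where f="\<lambda>_. 0" and h="\<lambda>x. ennreal (g x)"])
  show "eventually (\<lambda>x. 0 \<le> F x) net" by simp
  show "eventually (\<lambda>x. F x \<le> ennreal (g x)) net" by (rule assms(1))
  show "((\<lambda>x. ennreal (g x)) \<longlongrightarrow> 0) net" using tendsto_ennrealI[OF assms(2)] by simp
qed simp

context P12 begin

definition "K3 = 4 * (Mb * (4 * (real DIM(real^'m^'d) * \<Lambda> * ar + 2 * \<Lambda> * Ar)) + 2 * \<Lambda> * Ar)"

lemma K30: "0 \<le> K3" unfolding K3_def using Mb0 Lam0 ar0 Ar0 by simp

lemma E3': assumes st: "0 \<le> s" "s \<le> t" "t \<le> T"
  shows "Lq M (4/3) (\<lambda>\<omega>'. DmuF t \<omega>' - DmuF s \<omega>') \<le> ennreal (K3 * w s t \<omega> powr (1/p))"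
proof -
  have "4 * (Mb * (4 * (real DIM(real^'m^'d) * \<Lambda> * (ar * w s t \<omega> powr (1/p)) + \<Lambda> * (2 * Ar * w s t \<omega> powr (1/p))))
                   + \<Lambda> * (2 * Ar * w s t \<omega> powr (1/p))) = K3 * w s t \<omega> powr (1/p)"
    unfolding K3_def by (simp add: algebra_simps)
  then show ?thesis using E3[OF st] by simp
qed

definition "gw a b = w (min a b) (max a b) \<omega>"

lemma gw_nonneg: "a \<in> {0..T} \<Longrightarrow> b \<in> {0..T} \<Longrightarrow> 0 \<le> gw a b"
  unfolding gw_def by (intro w_nonneg) auto

lemma gw_cont: assumes a: "a \<in> {0..T}" shows "continuous_on {0..T} (gw a)"
proof -
  have "continuous_on {0..T} (\<lambda>b. (\<lambda>(s, t). w s t \<omega>) (min a b, max a b))"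
  proof (rule continuous_on_compose2[OF w_cont])
    show "continuous_on {0..T} (\<lambda>b. (min a b, max a b))" by (intro continuous_intros)
    show "(\<lambda>b. (min a b, max a b)) ` {0..T} \<subseteq> S2 T" using a by (auto simp: S2_def)
  qed
  then show ?thesis unfolding gw_def by simp
qed

lemma gw_diag: "a \<in> {0..T} \<Longrightarrow> gw a a = 0" unfolding gw_def by (simp add: w_diag)

lemma gw_tendsto: assumes a: "a \<in> {0..T}" and \<theta>: "0 < \<theta>"
  shows "((\<lambda>b. K * gw a b powr \<theta>) \<longlongrightarrow> 0) (at a within {0..T})"
proof -
  have "(gw a \<longlongrightarrow> gw a a) (at a within {0..T})"
    using gw_cont[OF a] a by (simp add: continuous_on_def)
  then have g0: "(gw a \<longlongrightarrow> 0) (at a within {0..T})" using gw_diag[OF a] by simp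
  have ev: "eventually (\<lambda>b. 0 \<le> gw a b) (at a within {0..T})"
    unfolding eventually_at_filter using gw_nonneg[OF a] by (auto intro!: always_eventually)
  have "((\<lambda>b. gw a b powr \<theta>) \<longlongrightarrow> 0) (at a within {0..T})"
    by (rule tendsto_zero_powrI[OF g0 tendsto_const ev \<theta>])
  then show ?thesis using tendsto_mult_right_zero by blast
qed

lemma cont_from_bound:
  fixes f :: "real \<Rightarrow> 'a::real_normed_vector"
  assumes b: "\<And>s t. 0 \<le> s \<Longrightarrow> s \<le> t \<Longrightarrow> t \<le> T \<Longrightarrow> norm (f t - f s) \<le> K * w s t \<omega> powr \<theta>"
    and \<theta>: "0 < \<theta>"
  shows "continuous_on {0..T} f"
  unfolding continuous_on_def
proof
  fix a assume a: "a \<in> {0..T}"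
  have bb: "norm (f b - f a) \<le> K * gw a b powr \<theta>" if "b \<in> {0..T}" for b
  proof (cases "a \<le> b")
    case True then show ?thesis using b[of a b] a that by (auto simp: gw_def)
  next
    case False then show ?thesis using b[of b a] a that by (auto simp: gw_def norm_minus_commute)
  qed
  have ev: "eventually (\<lambda>b. norm (f b - f a) \<le> K * gw a b powr \<theta>) (at a within {0..T})"
    unfolding eventually_at_filter using bb by (auto intro!: always_eventually)
  have "((\<lambda>b. f b - f a) \<longlongrightarrow> 0) (at a within {0..T})"
    by (rule Lim_null_comparison[OF ev gw_tendsto[OF a \<theta>]])
  then have "((\<lambda>b. (f b - f a) + f a) \<longlongrightarrow> 0 + f a) (at a within {0..T})"
    by (intro tendsto_add tendsto_const)
  then show "(f \<longlongrightarrow> f a) (at a within {0..T})" by simp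
qed

lemma Lqcont_from_bound:
  fixes Gf :: "real \<Rightarrow> 'w \<Rightarrow> 'a::real_normed_vector"
  assumes b: "\<And>s t. 0 \<le> s \<Longrightarrow> s \<le> t \<Longrightarrow> t \<le> T \<Longrightarrow> Lq M r (\<lambda>x. Gf t x - Gf s x) \<le> ennreal (K * w s t \<omega> powr \<theta>)"
    and \<theta>: "0 < \<theta>"
  shows "Lq_continuous_on M r {0..T} Gf"
  unfolding Lq_continuous_on_def
proof
  fix a assume a: "a \<in> {0..T}"
  have bb: "Lq M r (\<lambda>x. Gf b x - Gf a x) \<le> ennreal (K * gw a b powr \<theta>)" if "b \<in> {0..T}" for b
  proof (cases "a \<le> b")
    case True then show ?thesis using b[of a b] a that by (auto simp: gw_def)
  next
    case False
    have "Lq M r (\<lambda>x. Gf b x - Gf a x) = Lq M r (\<lambda>x. Gf a x - Gf b x)"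
      by (simp add: Lq_def norm_minus_commute)
    then show ?thesis using False b[of b a] a that by (auto simp: gw_def)
  qed
  have ev: "eventually (\<lambda>b. Lq M r (\<lambda>x. Gf b x - Gf a x) \<le> ennreal (K * gw a b powr \<theta>)) (at a within {0..T})"
    unfolding eventually_at_filter using bb by (auto intro!: always_eventually)
  show "((\<lambda>j. Lq M r (\<lambda>x. Gf j x - Gf a x)) \<longlongrightarrow> 0) (at a within {0..T})"
    by (rule ennreal_squeeze[OF ev gw_tendsto[OF a \<theta>]])
qed

lemma Ft_cont: "continuous_on {0..T} Ft"
  by (rule cont_from_bound[OF E1]) (use p0 in auto)

lemma DFt_cont: "continuous_on {0..T} DFt"
  by (rule cont_from_bound[OF E2]) (use p0 in auto)

lemma DmuF_Lqcont: "Lq_continuous_on M (4/3) {0..T} DmuF"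
  by (rule Lqcont_from_bound[OF E3']) (use p0 in auto)

end


lemma integrable_apply_deriv_gen:
  fixes D :: "'a \<Rightarrow> 'v::euclidean_space^'n" and H :: "'a \<Rightarrow> real^'n"
  assumes D: "D \<in> borel_measurable M" "Lq M a D < \<infinity>" and H: "H \<in> borel_measurable M" "Lq M b H < \<infinity>"
    and ab: "0 < a" "0 < b" "1 = 1/a + 1/b"
  shows "integrable M (\<lambda>x. apply_deriv (D x) (H x))"
proof (rule integrableI_bounded)
  show "(\<lambda>x. apply_deriv (D x) (H x)) \<in> borel_measurable M" using D H by measurable
  have "(\<integral>\<^sup>+ x. ennreal (norm (apply_deriv (D x) (H x))) \<partial>M) = Lq M 1 (\<lambda>x. apply_deriv (D x) (H x))"
    by (simp add: Lq_def LqE_one)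
  also have "\<dots> \<le> Lq M a D * Lq M b H"
    by (rule Lq_holder_vec[OF _ _ norm_apply_deriv]) (use D H ab in auto)
  also have "\<dots> < \<infinity>" using D H by (simp add: ennreal_mult_less_top)
  finally show "(\<integral>\<^sup>+ x. ennreal (norm (apply_deriv (D x) (H x))) \<partial>M) < \<infinity>" .
qed

context P12 begin

definition "EE s t = (\<integral>\<omega>'. apply_deriv (DmuF s \<omega>') (W \<omega>' t - W \<omega>' s) \<partial>M)"

lemma LqW: assumes a: "a \<in> {0..T}" and b: "b \<in> {0..T}"
  shows "Lq M 4 (\<lambda>\<omega>'. W \<omega>' b - W \<omega>' a) \<le> ennreal (gw a b powr (1/p))"
proof -
  interpret prob_space M by (rule prob)
  have main: "Lq M 4 (\<lambda>\<omega>'. W \<omega>' t - W \<omega>' s) \<le> ennreal (w s t \<omega> powr (1/p))"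
    if st: "0 \<le> s" "s \<le> t" "t \<le> T" for s t
  proof -
    have "Lq M 4 (\<lambda>\<omega>'. W \<omega>' t - W \<omega>' s) \<le> Lq M q (\<lambda>\<omega>'. W \<omega>' t - W \<omega>' s)"
      unfolding Lq_def by (rule lyapunov) (use q8 in auto)
    also have "\<dots> \<le> ennreal (w s t \<omega> powr (1/p))" by (rule W2[OF st])
    finally show ?thesis .
  qed
  show ?thesis
  proof (cases "a \<le> b")
    case True then show ?thesis using main[of a b] a b by (auto simp: gw_def)
  next
    case False
    have "Lq M 4 (\<lambda>\<omega>'. W \<omega>' b - W \<omega>' a) = Lq M 4 (\<lambda>\<omega>'. W \<omega>' a - W \<omega>' b)"
      by (simp add: Lq_def norm_minus_commute)
    then show ?thesis using False main[of b a] a b by (auto simp: gw_def)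
  qed
qed

lemma LqW_fin: assumes "a \<in> {0..T}" "b \<in> {0..T}" shows "Lq M 4 (\<lambda>\<omega>'. W \<omega>' b - W \<omega>' a) < \<infinity>"
  unfolding infinity_ennreal_def using LqW[OF assms] ennreal_less_top by (rule le_less_trans)

lemma DmuF_fin: assumes "0 \<le> t" "t \<le> T" shows "Lq M (4/3) (DmuF t) < \<infinity>"
  unfolding infinity_ennreal_def using DmuF_Lq[OF assms] ennreal_less_top by (rule le_less_trans)

lemma EE_bound:
  assumes z: "0 \<le> s" "s \<le> t" "t \<le> T" and z0: "0 \<le> s0" "s0 \<le> t0" "t0 \<le> T"
  shows "norm (EE s t - EE s0 t0) \<le> 4 * (K3 * gw s0 s powr (1/p) * w 0 T \<omega> powr (1/p)
                 + Mb * \<Lambda> * (4 * (gw t0 t powr (1/p) + gw s0 s powr (1/p))))"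
proof -
  define Wst where "Wst \<omega>' = W \<omega>' t - W \<omega>' s" for \<omega>'
  define W0 where "W0 \<omega>' = W \<omega>' t0 - W \<omega>' s0" for \<omega>'
  have sT: "s \<in> {0..T}" "t \<in> {0..T}" "s0 \<in> {0..T}" "t0 \<in> {0..T}" using z z0 by auto
  have mWst[measurable]: "Wst \<in> borel_measurable M" unfolding Wst_def[abs_def] by measurable
  have mW0[measurable]: "W0 \<in> borel_measurable M" unfolding W0_def[abs_def] by measurable
  have mDs[measurable]: "DmuF s \<in> borel_measurable M" using sT by (intro DmuF_meas) auto
  have mDs0[measurable]: "DmuF s0 \<in> borel_measurable M" using sT by (intro DmuF_meas) auto
  have i1: "integrable M (\<lambda>\<omega>'. apply_deriv (DmuF s \<omega>') (Wst \<omega>'))"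
    by (rule integrable_apply_deriv_gen[where a="4/3" and b=4])
       (use sT DmuF_fin LqW_fin in \<open>auto simp: Wst_def[abs_def]\<close>)
  have i2: "integrable M (\<lambda>\<omega>'. apply_deriv (DmuF s0 \<omega>') (W0 \<omega>'))"
    by (rule integrable_apply_deriv_gen[where a="4/3" and b=4])
       (use sT DmuF_fin LqW_fin in \<open>auto simp: W0_def[abs_def]\<close>)
  define P where "P \<omega>' = apply_deriv (DmuF s \<omega>' - DmuF s0 \<omega>') (Wst \<omega>')" for \<omega>'
  define Q where "Q \<omega>' = apply_deriv (DmuF s0 \<omega>') (Wst \<omega>' - W0 \<omega>')" for \<omega>'
  have mP: "P \<in> borel_measurable M" unfolding P_def[abs_def] by measurable
  have mQ: "Q \<in> borel_measurable M" unfolding Q_def[abs_def] by measurable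
  have eq: "EE s t - EE s0 t0 = (\<integral>\<omega>'. P \<omega>' + Q \<omega>' \<partial>M)"
  proof -
    have "EE s t - EE s0 t0 = (\<integral>\<omega>'. apply_deriv (DmuF s \<omega>') (Wst \<omega>') - apply_deriv (DmuF s0 \<omega>') (W0 \<omega>') \<partial>M)"
      unfolding EE_def Wst_def W0_def by (rule Bochner_Integration.integral_diff[symmetric]) (use i1 i2 in \<open>auto simp: Wst_def W0_def\<close>)
    also have "\<dots> = (\<integral>\<omega>'. P \<omega>' + Q \<omega>' \<partial>M)"
      unfolding P_def Q_def by (simp add: apply_deriv_diff_left apply_deriv_diff_right)
    finally show ?thesis .
  qed
  have PB: "Lq M 1 P \<le> ennreal (K3 * gw s0 s powr (1/p) * w 0 T \<omega> powr (1/p))"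
  proof -
    have "Lq M 1 P \<le> Lq M (4/3) (\<lambda>\<omega>'. DmuF s \<omega>' - DmuF s0 \<omega>') * Lq M 4 Wst"
      by (rule Lq_holder_vec) (auto simp: P_def norm_apply_deriv)
    also have "\<dots> \<le> ennreal (K3 * gw s0 s powr (1/p)) * ennreal (w 0 T \<omega> powr (1/p))"
    proof (rule mult_mono)
      show "Lq M (4/3) (\<lambda>\<omega>'. DmuF s \<omega>' - DmuF s0 \<omega>') \<le> ennreal (K3 * gw s0 s powr (1/p))"
      proof (cases "s0 \<le> s")
        case True then show ?thesis using E3'[of s0 s] sT by (auto simp: gw_def)
      next
        case False
        have "Lq M (4/3) (\<lambda>\<omega>'. DmuF s \<omega>' - DmuF s0 \<omega>') = Lq M (4/3) (\<lambda>\<omega>'. DmuF s0 \<omega>' - DmuF s \<omega>')"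
          by (simp add: Lq_def norm_minus_commute)
        then show ?thesis using False E3'[of s s0] sT by (auto simp: gw_def)
      qed
      have "Lq M 4 Wst \<le> ennreal (gw s t powr (1/p))" unfolding Wst_def using LqW sT by blast
      also have "gw s t = w s t \<omega>" using z by (simp add: gw_def)
      also have "w s t \<omega> powr (1/p) \<le> w 0 T \<omega> powr (1/p)"
        using z by (intro powr_mono2 w_mono w_nonneg) (use p0 in auto)
      finally show "Lq M 4 Wst \<le> ennreal (w 0 T \<omega> powr (1/p))" by (simp add: ennreal_leI)
    qed auto
    also have "\<dots> = ennreal (K3 * gw s0 s powr (1/p) * w 0 T \<omega> powr (1/p))"
      using K30 by (simp add: ennreal_mult)
    finally show ?thesis .
  qed
  have QB: "Lq M 1 Q \<le> ennreal (Mb * \<Lambda> * (4 * (gw t0 t powr (1/p) + gw s0 s powr (1/p))))"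
  proof -
    have "Lq M 1 Q \<le> Lq M (4/3) (DmuF s0) * Lq M 4 (\<lambda>\<omega>'. Wst \<omega>' - W0 \<omega>')"
      by (rule Lq_holder_vec) (auto simp: Q_def norm_apply_deriv)
    also have "\<dots> \<le> ennreal (Mb * \<Lambda>) * ennreal (4 * (gw t0 t powr (1/p) + gw s0 s powr (1/p)))"
    proof (rule mult_mono)
      show "Lq M (4/3) (DmuF s0) \<le> ennreal (Mb * \<Lambda>)" using DmuF_Lq sT by auto
      have "Lq M 4 (\<lambda>\<omega>'. Wst \<omega>' - W0 \<omega>') = Lq M 4 (\<lambda>\<omega>'. (W \<omega>' t - W \<omega>' t0) - (W \<omega>' s - W \<omega>' s0))"
        unfolding Wst_def W0_def by (simp add: algebra_simps)
      also have "\<dots> \<le> ennreal (4 * (gw t0 t powr (1/p) + gw s0 s powr (1/p)))"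
        by (rule tri_helper[OF Lq_triangle_diff LqW LqW]) (use sT in auto)
      finally show "Lq M 4 (\<lambda>\<omega>'. Wst \<omega>' - W0 \<omega>') \<le> ennreal (4 * (gw t0 t powr (1/p) + gw s0 s powr (1/p)))" .
    qed auto
    also have "\<dots> = ennreal (Mb * \<Lambda> * (4 * (gw t0 t powr (1/p) + gw s0 s powr (1/p))))"
      by (rule emult) (use Mb0 Lam0 in auto)
    finally show ?thesis .
  qed
  have "ennreal (norm (EE s t - EE s0 t0)) \<le> Lq M 1 (\<lambda>\<omega>'. P \<omega>' + Q \<omega>')"
    unfolding eq by (rule norm_integral_le_Lq1)
  also have "\<dots> \<le> ennreal (4 * (K3 * gw s0 s powr (1/p) * w 0 T \<omega> powr (1/p)
                 + Mb * \<Lambda> * (4 * (gw t0 t powr (1/p) + gw s0 s powr (1/p)))))"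
    by (rule tri_helper[OF Lq_triangle[OF mP mQ] PB QB]) (use K30 Mb0 Lam0 in auto)
  finally have fin: "ennreal (norm (EE s t - EE s0 t0)) \<le> ennreal (4 * (K3 * gw s0 s powr (1/p) * w 0 T \<omega> powr (1/p)
                 + Mb * \<Lambda> * (4 * (gw t0 t powr (1/p) + gw s0 s powr (1/p)))))" .
  have "0 \<le> 4 * (K3 * gw s0 s powr (1/p) * w 0 T \<omega> powr (1/p)
                 + Mb * \<Lambda> * (4 * (gw t0 t powr (1/p) + gw s0 s powr (1/p))))"
    using K30 Mb0 Lam0 by simp
  then show ?thesis using fin ennreal_le_iff by blast
qed

end


context P12 begin

lemma gw_comp_tendsto:
  assumes z0: "z0 \<in> S2 T" and \<phi>: "continuous_on (S2 T) \<phi>" "\<phi> ` S2 T \<subseteq> {0..T}" and a: "a = \<phi> z0"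
    and \<theta>: "0 < \<theta>"
  shows "((\<lambda>z. K * gw a (\<phi> z) powr \<theta>) \<longlongrightarrow> 0) (at z0 within S2 T)"
proof -
  have aT: "a \<in> {0..T}" using a \<phi>(2) z0 by auto
  have c: "continuous_on (S2 T) (\<lambda>z. gw a (\<phi> z))"
    by (rule continuous_on_compose2[OF gw_cont[OF aT] \<phi>])
  then have "((\<lambda>z. gw a (\<phi> z)) \<longlongrightarrow> gw a (\<phi> z0)) (at z0 within S2 T)"
    using z0 by (simp add: continuous_on_def)
  then have g0: "((\<lambda>z. gw a (\<phi> z)) \<longlongrightarrow> 0) (at z0 within S2 T)" using gw_diag[OF aT] a by simp
  have ev: "eventually (\<lambda>z. 0 \<le> gw a (\<phi> z)) (at z0 within S2 T)"
    unfolding eventually_at_filter using gw_nonneg[OF aT] \<phi>(2) by (auto intro!: always_eventually)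
  have "((\<lambda>z. gw a (\<phi> z) powr \<theta>) \<longlongrightarrow> 0) (at z0 within S2 T)"
    by (rule tendsto_zero_powrI[OF g0 tendsto_const ev \<theta>])
  then show ?thesis using tendsto_mult_right_zero by blast
qed

lemma S2_fst: "fst ` S2 T \<subseteq> {0..T}" by (auto simp: S2_def)
lemma S2_snd: "snd ` S2 T \<subseteq> {0..T}" by (auto simp: S2_def)

lemma EE_cont: "continuous_on (S2 T) (\<lambda>z. EE (fst z) (snd z))"
  unfolding continuous_on_def
proof
  fix z0 assume z0: "z0 \<in> S2 T"
  obtain s0 t0 where zz: "z0 = (s0, t0)" by (cases z0)
  have st0: "0 \<le> s0" "s0 \<le> t0" "t0 \<le> T" using z0 zz by (auto simp: S2_def)
  define c1 where "c1 = 4 * K3 * w 0 T \<omega> powr (1/p) + 16 * Mb * \<Lambda>"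
  define c2 where "c2 = 16 * Mb * \<Lambda>"
  have bd: "norm (EE (fst z) (snd z) - EE (fst z0) (snd z0))
      \<le> c1 * gw s0 (fst z) powr (1/p) + c2 * gw t0 (snd z) powr (1/p)" if z: "z \<in> S2 T" for z
  proof -
    obtain s t where z': "z = (s, t)" by (cases z)
    have st: "0 \<le> s" "s \<le> t" "t \<le> T" using z z' by (auto simp: S2_def)
    have "norm (EE s t - EE s0 t0) \<le> 4 * (K3 * gw s0 s powr (1/p) * w 0 T \<omega> powr (1/p)
                 + Mb * \<Lambda> * (4 * (gw t0 t powr (1/p) + gw s0 s powr (1/p))))"
      by (rule EE_bound[OF st st0])
    also have "\<dots> = c1 * gw s0 s powr (1/p) + c2 * gw t0 t powr (1/p)"
      unfolding c1_def c2_def by (simp add: algebra_simps)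
    finally show ?thesis using z' zz by simp
  qed
  have ev: "eventually (\<lambda>z. norm (EE (fst z) (snd z) - EE (fst z0) (snd z0))
      \<le> c1 * gw s0 (fst z) powr (1/p) + c2 * gw t0 (snd z) powr (1/p)) (at z0 within S2 T)"
    unfolding eventually_at_filter using bd by (auto intro!: always_eventually)
  have lim: "((\<lambda>z. c1 * gw s0 (fst z) powr (1/p) + c2 * gw t0 (snd z) powr (1/p)) \<longlongrightarrow> 0) (at z0 within S2 T)"
  proof -
    have "((\<lambda>z. c1 * gw s0 (fst z) powr (1/p) + c2 * gw t0 (snd z) powr (1/p)) \<longlongrightarrow> 0 + 0) (at z0 within S2 T)"
      by (intro tendsto_add gw_comp_tendsto[OF z0] continuous_on_fst continuous_on_snd continuous_on_id S2_fst S2_snd)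
         (use zz p0 in auto)
    then show ?thesis by simp
  qed
  have "((\<lambda>z. EE (fst z) (snd z) - EE (fst z0) (snd z0)) \<longlongrightarrow> 0) (at z0 within S2 T)"
    by (rule Lim_null_comparison[OF ev lim])
  then have "((\<lambda>z. (EE (fst z) (snd z) - EE (fst z0) (snd z0)) + EE (fst z0) (snd z0)) \<longlongrightarrow> 0 + EE (fst z0) (snd z0)) (at z0 within S2 T)"
    by (intro tendsto_add tendsto_const)
  then show "((\<lambda>z. EE (fst z) (snd z)) \<longlongrightarrow> EE (fst z0) (snd z0)) (at z0 within S2 T)" by simp
qed

lemma W_cont: "continuous_on {0..T} (W \<omega>')" using rs by (simp add: rough_setup_def)

lemma rem_cont: "continuous_on (S2 T) (\<lambda>(s, t). cp_rem M W \<omega> Ft DFt DmuF s t)"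
proof -
  have e: "(\<lambda>(s, t). cp_rem M W \<omega> Ft DFt DmuF s t) =
    (\<lambda>z. Ft (snd z) - Ft (fst z) - apply_deriv (DFt (fst z)) (W \<omega> (snd z) - W \<omega> (fst z)) - EE (fst z) (snd z))"
    by (auto simp: cp_rem_def EE_def fun_eq_iff)
  have c1: "continuous_on (S2 T) (\<lambda>z. Ft (snd z))"
    by (rule continuous_on_compose2[OF Ft_cont continuous_on_snd[OF continuous_on_id] S2_snd])
  have c2: "continuous_on (S2 T) (\<lambda>z. Ft (fst z))"
    by (rule continuous_on_compose2[OF Ft_cont continuous_on_fst[OF continuous_on_id] S2_fst])
  have c3: "continuous_on (S2 T) (\<lambda>z. DFt (fst z))"
    by (rule continuous_on_compose2[OF DFt_cont continuous_on_fst[OF continuous_on_id] S2_fst])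
  have c4: "continuous_on (S2 T) (\<lambda>z. W \<omega> (snd z) - W \<omega> (fst z))"
    by (intro continuous_on_diff continuous_on_compose2[OF W_cont continuous_on_snd[OF continuous_on_id] S2_snd]
              continuous_on_compose2[OF W_cont continuous_on_fst[OF continuous_on_id] S2_fst])
  have c5: "continuous_on (S2 T) (\<lambda>z. apply_deriv (DFt (fst z)) (W \<omega> (snd z) - W \<omega> (fst z)))"
  proof -
    have "continuous_on (S2 T) (\<lambda>z. (\<lambda>y. apply_deriv (fst y) (snd y)) (DFt (fst z), W \<omega> (snd z) - W \<omega> (fst z)))"
      by (rule continuous_on_compose2[OF continuous_apply_deriv continuous_on_Pair[OF c3 c4]]) simp
    then show ?thesis by simp
  qed
  show ?thesis unfolding e by (intro continuous_on_diff c1 c2 c5 EE_cont)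
qed

end


lemma div_le_of_e:
  assumes "L \<le> ennreal (K * y)" "0 \<le> y" "0 \<le> K"
  shows "L / ennreal y \<le> ennreal K"
proof (cases "y = 0")
  case True
  then have "L = 0" using assms(1) by simp
  then show ?thesis by simp
next
  case False
  then have yp: "0 < y" using assms by simp
  have "L / ennreal y \<le> ennreal (K * y) / ennreal y" by (rule divide_right_mono_ennreal[OF assms(1)])
  also have "\<dots> = ennreal (K * y / y)" using yp assms by (simp add: divide_ennreal)
  also have "K * y / y = K" using yp by simp
  finally show ?thesis .
qed

lemma div_le_of:
  assumes "x \<le> K * y" "0 \<le> y" "0 \<le> K"
  shows "ennreal x / ennreal y \<le> ennreal K"
  using assms by (intro div_le_of_e ennreal_leI) auto

lemma eplus4:
  assumes "0 \<le> a" "0 \<le> b" "0 \<le> c" "0 \<le> d"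
  shows "ennreal a + ennreal b + ennreal c + ennreal d = ennreal (a + b + c + d)"
proof -
  have "ennreal a + ennreal b = ennreal (a + b)" using assms by (intro ennreal_plus[symmetric]) auto
  moreover have "ennreal (a + b) + ennreal c = ennreal (a + b + c)" using assms by (intro ennreal_plus[symmetric]) auto
  moreover have "ennreal (a + b + c) + ennreal d = ennreal (a + b + c + d)" using assms by (intro ennreal_plus[symmetric]) auto
  ultimately show ?thesis by simp
qed

lemma prodle: "0 \<le> c \<Longrightarrow> c \<le> V \<Longrightarrow> 0 \<le> m \<Longrightarrow> m \<le> Q \<Longrightarrow> c * m \<le> V * (Q::real)"
  by (rule mult_mono) auto

lemma final_ineq:
  fixes \<Lambda> Mb Dm ar Ar :: real
  assumes nn: "0 \<le> \<Lambda>" "0 \<le> Mb" "0 \<le> Dm" "0 \<le> ar" "0 \<le> Ar"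
  defines "V \<equiv> (1 + \<Lambda>) * (1 + Mb) * (1 + Dm)" and "Q \<equiv> 1 + ar\<^sup>2 + Ar\<^sup>2"
  shows "\<Lambda> + \<Lambda> * Mb + Mb * \<Lambda> + (\<Lambda> * ar + 2 * \<Lambda> * Ar) + ((\<Lambda> * ar + 2 * \<Lambda> * Ar) * Mb + \<Lambda> * ar)
     + 4 * (Mb * (4 * (Dm * \<Lambda> * ar + 2 * \<Lambda> * Ar)) + 2 * \<Lambda> * Ar)
     + (\<Lambda> * ar\<^sup>2 + 2 * \<Lambda> * Ar * ar + \<Lambda> * ar + 4 * \<Lambda> * Ar\<^sup>2 + 2 * \<Lambda> * Ar)
     \<le> 100 * V * Q"
proof -
  have eq: "\<Lambda> + \<Lambda> * Mb + Mb * \<Lambda> + (\<Lambda> * ar + 2 * \<Lambda> * Ar) + ((\<Lambda> * ar + 2 * \<Lambda> * Ar) * Mb + \<Lambda> * ar)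
     + 4 * (Mb * (4 * (Dm * \<Lambda> * ar + 2 * \<Lambda> * Ar)) + 2 * \<Lambda> * Ar)
     + (\<Lambda> * ar\<^sup>2 + 2 * \<Lambda> * Ar * ar + \<Lambda> * ar + 4 * \<Lambda> * Ar\<^sup>2 + 2 * \<Lambda> * Ar)
     = \<Lambda> * 1 + 2 * ((\<Lambda> * Mb) * 1) + 3 * (\<Lambda> * ar) + 12 * (\<Lambda> * Ar) + (\<Lambda> * Mb) * ar
       + 34 * ((\<Lambda> * Mb) * Ar) + 16 * ((\<Lambda> * Mb * Dm) * ar) + \<Lambda> * ar\<^sup>2 + 2 * (\<Lambda> * (Ar * ar))
       + 4 * (\<Lambda> * Ar\<^sup>2)"
    by (simp add: algebra_simps power2_eq_square)
  have V1: "\<Lambda> \<le> V"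
  proof -
    have "\<Lambda> * 1 * 1 \<le> (1 + \<Lambda>) * (1 + Mb) * (1 + Dm)" using nn by (intro mult_mono) auto
    then show ?thesis unfolding V_def by simp
  qed
  have V2: "\<Lambda> * Mb \<le> V"
  proof -
    have "\<Lambda> * Mb * 1 \<le> (1 + \<Lambda>) * (1 + Mb) * (1 + Dm)" using nn by (intro mult_mono) auto
    then show ?thesis unfolding V_def by simp
  qed
  have V3: "\<Lambda> * Mb * Dm \<le> V" unfolding V_def using nn by (intro mult_mono) auto
  have sq1: "2 * ar \<le> 1 + ar\<^sup>2"
  proof -
    have "0 \<le> (ar - 1)\<^sup>2" by simp
    then show ?thesis by (simp add: power2_diff)
  qed
  have sq2: "2 * Ar \<le> 1 + Ar\<^sup>2"
  proof -
    have "0 \<le> (Ar - 1)\<^sup>2" by simp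
    then show ?thesis by (simp add: power2_diff)
  qed
  have sq3: "2 * (Ar * ar) \<le> ar\<^sup>2 + Ar\<^sup>2"
  proof -
    have "0 \<le> (ar - Ar)\<^sup>2" by simp
    then show ?thesis by (simp add: power2_diff algebra_simps)
  qed
  have a2: "0 \<le> ar\<^sup>2" "0 \<le> Ar\<^sup>2" by simp_all
  have Q1: "1 \<le> Q" "ar \<le> Q" "Ar \<le> Q" "ar\<^sup>2 \<le> Q" "Ar\<^sup>2 \<le> Q" "Ar * ar \<le> Q"
    unfolding Q_def using sq1 sq2 sq3 a2 nn by linarith+
  have V0: "0 \<le> V" unfolding V_def using nn by simp
  have Q0: "0 \<le> Q" using Q1 by linarith
  have p1: "\<Lambda> * 1 \<le> V * Q" by (rule prodle) (use nn V1 Q1 in auto)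
  have p2: "(\<Lambda> * Mb) * 1 \<le> V * Q" by (rule prodle) (use nn V2 Q1 in auto)
  have p3: "\<Lambda> * ar \<le> V * Q" by (rule prodle) (use nn V1 Q1 in auto)
  have p4: "\<Lambda> * Ar \<le> V * Q" by (rule prodle) (use nn V1 Q1 in auto)
  have p5: "(\<Lambda> * Mb) * ar \<le> V * Q" by (rule prodle) (use nn V2 Q1 in auto)
  have p6: "(\<Lambda> * Mb) * Ar \<le> V * Q" by (rule prodle) (use nn V2 Q1 in auto)
  have p7: "(\<Lambda> * Mb * Dm) * ar \<le> V * Q" by (rule prodle) (use nn V3 Q1 in auto)
  have p8: "\<Lambda> * ar\<^sup>2 \<le> V * Q" by (rule prodle) (use nn V1 Q1 in auto)
  have p9: "\<Lambda> * (Ar * ar) \<le> V * Q" by (rule prodle) (use nn V1 Q1 in auto)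
  have p10: "\<Lambda> * Ar\<^sup>2 \<le> V * Q" by (rule prodle) (use nn V1 Q1 in auto)
  have VQ: "0 \<le> V * Q" using V0 Q0 by simp
  have "100 * V * Q = 100 * (V * Q)" by simp
  then show ?thesis unfolding eq using p1 p2 p3 p4 p5 p6 p7 p8 p9 p10 VQ by linarith
qed


context P12 begin

definition "K1 = \<Lambda> * ar + 2 * \<Lambda> * Ar"
definition "K2 = (\<Lambda> * ar + 2 * \<Lambda> * Ar) * Mb + \<Lambda> * ar"
definition "K4 = \<Lambda> * ar\<^sup>2 + 2 * \<Lambda> * Ar * ar + \<Lambda> * ar + 4 * \<Lambda> * Ar\<^sup>2 + 2 * \<Lambda> * Ar"

lemma K10: "0 \<le> K1" unfolding K1_def using Lam0 ar0 Ar0 by simp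
lemma K20: "0 \<le> K2" unfolding K2_def using Lam0 ar0 Ar0 Mb0 by simp
lemma K40: "0 \<le> K4" unfolding K4_def using Lam0 ar0 Ar0 by simp

lemma S2_mem: "st \<in> S2 T \<Longrightarrow> 0 \<le> fst st \<and> fst st \<le> snd st \<and> snd st \<le> T"
  by (auto simp: S2_def)

lemma cpF_bound: "cp_norm M W w T p \<omega> Ft DFt DmuF \<le> ennreal (K1 + K2 + K3 + K4)"
proof -
  have S1: "(SUP st\<in>S2 T. ennreal (norm (Ft (snd st) - Ft (fst st)))
                      / ennreal (w (fst st) (snd st) \<omega> powr (1 / p))) \<le> ennreal K1"
  proof (rule SUP_least)
    fix st assume "st \<in> S2 T"
    then have st: "0 \<le> fst st" "fst st \<le> snd st" "snd st \<le> T" using S2_mem by auto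
    show "ennreal (norm (Ft (snd st) - Ft (fst st))) / ennreal (w (fst st) (snd st) \<omega> powr (1 / p)) \<le> ennreal K1"
      by (rule div_le_of) (use E1[OF st] K10 in \<open>auto simp: K1_def\<close>)
  qed
  have S2: "(SUP st\<in>S2 T. ennreal (norm (DFt (snd st) - DFt (fst st)))
                      / ennreal (w (fst st) (snd st) \<omega> powr (1 / p))) \<le> ennreal K2"
  proof (rule SUP_least)
    fix st assume "st \<in> S2 T"
    then have st: "0 \<le> fst st" "fst st \<le> snd st" "snd st \<le> T" using S2_mem by auto
    show "ennreal (norm (DFt (snd st) - DFt (fst st))) / ennreal (w (fst st) (snd st) \<omega> powr (1 / p)) \<le> ennreal K2"
      by (rule div_le_of) (use E2[OF st] K20 in \<open>auto simp: K2_def\<close>)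
  qed
  have S3: "(SUP st\<in>S2 T. Lq M (4 / 3) (\<lambda>\<omega>'. DmuF (snd st) \<omega>' - DmuF (fst st) \<omega>')
                      / ennreal (w (fst st) (snd st) \<omega> powr (1 / p))) \<le> ennreal K3"
  proof (rule SUP_least)
    fix st assume "st \<in> S2 T"
    then have st: "0 \<le> fst st" "fst st \<le> snd st" "snd st \<le> T" using S2_mem by auto
    show "Lq M (4 / 3) (\<lambda>\<omega>'. DmuF (snd st) \<omega>' - DmuF (fst st) \<omega>') / ennreal (w (fst st) (snd st) \<omega> powr (1 / p)) \<le> ennreal K3"
      by (rule div_le_of_e) (use E3'[OF st] K30 in auto)
  qed
  have S4: "(SUP st\<in>S2 T. ennreal (norm (cp_rem M W \<omega> Ft DFt DmuF (fst st) (snd st)))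
                      / ennreal (w (fst st) (snd st) \<omega> powr (2 / p))) \<le> ennreal K4"
  proof (rule SUP_least)
    fix st assume "st \<in> S2 T"
    then have st: "0 \<le> fst st" "fst st \<le> snd st" "snd st \<le> T" using S2_mem by auto
    show "ennreal (norm (cp_rem M W \<omega> Ft DFt DmuF (fst st) (snd st))) / ennreal (w (fst st) (snd st) \<omega> powr (2 / p)) \<le> ennreal K4"
      by (rule div_le_of) (use E4[OF st] K40 in \<open>auto simp: K4_def\<close>)
  qed
  have "cp_norm M W w T p \<omega> Ft DFt DmuF \<le> ennreal K1 + ennreal K2 + ennreal K3 + ennreal K4"
    unfolding cp_norm_def by (intro add_mono S1 S2 S3 S4)
  also have "\<dots> = ennreal (K1 + K2 + K3 + K4)" by (rule eplus4) (use K10 K20 K30 K40 in auto)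
  finally show ?thesis .
qed

lemma cpF: "controlled_path M W w T p \<omega> Ft DFt DmuF"
  unfolding controlled_path_def
proof (intro conjI ballI Ft_cont DFt_cont DmuF_Lqcont rem_cont)
  fix t assume "t \<in> {0..T}"
  then show "in_Lq M (4 / 3) (DmuF t)" by (intro DmuF_in) auto
next
  show "cp_norm M W w T p \<omega> Ft DFt DmuF < \<infinity>"
    unfolding infinity_ennreal_def using cpF_bound ennreal_less_top by (rule le_less_trans)
qed

lemma starF: "cp_norm_star M W w T p \<omega> Ft DFt DmuF
   \<le> ennreal (100 * (1 + \<bar>\<Lambda>\<bar>) * (1 + Mb) * (1 + real DIM(real^'m^'d))) * (1 + aX ^ 2 + AY ^ 2)"
proof -
  have T0': "0 \<le> (0::real)" "(0::real) \<le> T" using T0 by auto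
  have "cp_norm_star M W w T p \<omega> Ft DFt DmuF
      \<le> ennreal \<Lambda> + ennreal (\<Lambda> * Mb) + ennreal (Mb * \<Lambda>) + ennreal (K1 + K2 + K3 + K4)"
    unfolding cp_norm_star_def
    by (intro add_mono ennreal_leI E0a E0b DmuF_Lq[OF T0'] cpF_bound)
  also have "\<dots> = ennreal (\<Lambda> + \<Lambda> * Mb + Mb * \<Lambda> + (K1 + K2 + K3 + K4))"
    by (rule eplus4) (use Lam0 Mb0 K10 K20 K30 K40 in auto)
  also have "\<dots> \<le> ennreal (100 * ((1 + \<Lambda>) * (1 + Mb) * (1 + real DIM(real^'m^'d))) * (1 + ar\<^sup>2 + Ar\<^sup>2))"
  proof (rule ennreal_leI)
    have "\<Lambda> + \<Lambda> * Mb + Mb * \<Lambda> + (K1 + K2 + K3 + K4)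
       = \<Lambda> + \<Lambda> * Mb + Mb * \<Lambda> + (\<Lambda> * ar + 2 * \<Lambda> * Ar) + ((\<Lambda> * ar + 2 * \<Lambda> * Ar) * Mb + \<Lambda> * ar)
     + 4 * (Mb * (4 * (real DIM(real^'m^'d) * \<Lambda> * ar + 2 * \<Lambda> * Ar)) + 2 * \<Lambda> * Ar)
     + (\<Lambda> * ar\<^sup>2 + 2 * \<Lambda> * Ar * ar + \<Lambda> * ar + 4 * \<Lambda> * Ar\<^sup>2 + 2 * \<Lambda> * Ar)"
      unfolding K1_def K2_def K3_def K4_def by (simp add: add.assoc)
    also have "\<dots> \<le> 100 * ((1 + \<Lambda>) * (1 + Mb) * (1 + real DIM(real^'m^'d))) * (1 + ar\<^sup>2 + Ar\<^sup>2)"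
      by (rule final_ineq) (use Lam0 Mb0 ar0 Ar0 in auto)
    finally show "\<Lambda> + \<Lambda> * Mb + Mb * \<Lambda> + (K1 + K2 + K3 + K4) \<le> 100 * ((1 + \<Lambda>) * (1 + Mb) * (1 + real DIM(real^'m^'d))) * (1 + ar\<^sup>2 + Ar\<^sup>2)" .
  qed
  also have "\<dots> = ennreal (100 * (1 + \<bar>\<Lambda>\<bar>) * (1 + Mb) * (1 + real DIM(real^'m^'d))) * (1 + aX ^ 2 + AY ^ 2)"
  proof -
    have e1: "aX ^ 2 = ennreal (ar\<^sup>2)" unfolding aX_eq using ar0 by (simp add: ennreal_power)
    have e2: "AY ^ 2 = ennreal (Ar\<^sup>2)" unfolding AY_eq using Ar0 by (simp add: ennreal_power)
    have e3: "1 + ennreal (ar\<^sup>2) + ennreal (Ar\<^sup>2) = ennreal (1 + ar\<^sup>2 + Ar\<^sup>2)"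
    proof -
      have "ennreal 1 + ennreal (ar\<^sup>2) = ennreal (1 + ar\<^sup>2)" by (intro ennreal_plus[symmetric]) auto
      moreover have "ennreal (1 + ar\<^sup>2) + ennreal (Ar\<^sup>2) = ennreal (1 + ar\<^sup>2 + Ar\<^sup>2)" by (intro ennreal_plus[symmetric]) auto
      ultimately show ?thesis by simp
    qed
    have e4: "100 * ((1 + \<Lambda>) * (1 + Mb) * (1 + real DIM(real^'m^'d))) * (1 + ar\<^sup>2 + Ar\<^sup>2)
        = (100 * (1 + \<bar>\<Lambda>\<bar>) * (1 + Mb) * (1 + real DIM(real^'m^'d))) * (1 + ar\<^sup>2 + Ar\<^sup>2)"
      using Lam0 by (simp add: mult.assoc)
    have e5: "ennreal ((100 * (1 + \<bar>\<Lambda>\<bar>) * (1 + Mb) * (1 + real DIM(real^'m^'d))) * (1 + ar\<^sup>2 + Ar\<^sup>2))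
        = ennreal (100 * (1 + \<bar>\<Lambda>\<bar>) * (1 + Mb) * (1 + real DIM(real^'m^'d))) * ennreal (1 + ar\<^sup>2 + Ar\<^sup>2)"
      by (rule ennreal_mult) (use Mb0 in auto)
    show ?thesis unfolding e1 e2 e3 e4 e5 ..
  qed
  finally show ?thesis .
qed

lemma Ft_eq: "Ft = (\<lambda>t. F (X t) (distr M borel (\<lambda>\<omega>'. Y \<omega>' t)))"
  by (simp add: fun_eq_iff Ft_def Yt_def)
lemma DFt_eq: "DFt = (\<lambda>t. \<chi> k. apply_deriv (DxF (X t) (\<lambda>\<omega>'. Y \<omega>' t)) (DX t $ k))"
  by (simp add: fun_eq_iff DFt_def Yt_def)
lemma DmuF_eq: "DmuF = (\<lambda>t \<omega>'. \<chi> k. apply_deriv (DZF (X t) (\<lambda>\<omega>''. Y \<omega>'' t) \<omega>') (DY \<omega>' t $ k))"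
  by (simp add: fun_eq_iff DmuF_def Yt_def)

lemma final:
  "controlled_path M W w T p \<omega>
       (\<lambda>t. F (X t) (distr M borel (\<lambda>\<omega>'. Y \<omega>' t)))
       (\<lambda>t. \<chi> k. apply_deriv (DxF (X t) (\<lambda>\<omega>'. Y \<omega>' t)) (DX t $ k))
       (\<lambda>t \<omega>'. \<chi> k. apply_deriv (DZF (X t) (\<lambda>\<omega>''. Y \<omega>'' t) \<omega>') (DY \<omega>' t $ k)) \<and>
    cp_norm_star M W w T p \<omega>
       (\<lambda>t. F (X t) (distr M borel (\<lambda>\<omega>'. Y \<omega>' t)))
       (\<lambda>t. \<chi> k. apply_deriv (DxF (X t) (\<lambda>\<omega>'. Y \<omega>' t)) (DX t $ k))
       (\<lambda>t \<omega>'. \<chi> k. apply_deriv (DZF (X t) (\<lambda>\<omega>''. Y \<omega>'' t) \<omega>') (DY \<omega>' t $ k))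
    \<le> ennreal (100 * (1 + \<bar>\<Lambda>\<bar>) * (1 + Mb) * (1 + real DIM(real^'m^'d))) *
        (1 + (cp_norm M W w T p \<omega> X DX (\<lambda>t \<omega>'. 0)) ^ 2
                     + (LqE M 8 (\<lambda>\<omega>'. cp_norm M W w T p \<omega>' (Y \<omega>') (DY \<omega>') (\<lambda>t \<omega>''. 0))) ^ 2)"
  using cpF starF unfolding Ft_eq DFt_eq DmuF_eq aX_def AY_def NY_def by simp

end


theorem proposition12:
  fixes \<Lambda> Mb :: real
  assumes "0 \<le> Mb"
  shows "\<exists>C::real. \<forall>(M :: 'w::polish_space measure) (T::real) (p::real) (q::real)
      (W :: 'w \<Rightarrow> real \<Rightarrow> real^'m) (WW :: 'w \<Rightarrow> real \<Rightarrow> real \<Rightarrow> real^'m^'m)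
      (WP :: 'w \<Rightarrow> 'w \<Rightarrow> real \<Rightarrow> real \<Rightarrow> real^'m^'m) (w :: real \<Rightarrow> real \<Rightarrow> 'w \<Rightarrow> real)
      (F :: real^'d \<Rightarrow> (real^'d) measure \<Rightarrow> real^'m^'d)
      (DxF :: real^'d \<Rightarrow> ('w \<Rightarrow> real^'d) \<Rightarrow> (real^'m^'d)^'d)
      (DZF :: real^'d \<Rightarrow> ('w \<Rightarrow> real^'d) \<Rightarrow> 'w \<Rightarrow> (real^'m^'d)^'d)
      (DxxF :: real^'d \<Rightarrow> ('w \<Rightarrow> real^'d) \<Rightarrow> (real^'m^'d)^'d^'d)
      (DxZF :: real^'d \<Rightarrow> ('w \<Rightarrow> real^'d) \<Rightarrow> 'w \<Rightarrow> (real^'m^'d)^'d^'d)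
      (\<omega> :: 'w) (X :: real \<Rightarrow> real^'d) (DX :: real \<Rightarrow> (real^'d)^'m)
      (Y :: 'w \<Rightarrow> real \<Rightarrow> real^'d) (DY :: 'w \<Rightarrow> real \<Rightarrow> (real^'d)^'m).
    standing_space M \<and> 0 < T \<and> 2 \<le> p \<and> p < 3 \<and> 8 \<le> q \<and>
    rough_setup M T p q W WW WP \<and> control M T p q W WW WP w \<and>
    regularity1 M F DxF DZF DxxF DxZF \<Lambda> \<and>
    controlled_path M W w T p \<omega> X DX (\<lambda>t \<omega>'. 0) \<and>
    random_controlled_path M W w T p Y DY (\<lambda>\<omega>' t \<omega>''. 0) \<and>
    (SUP t\<in>{0..T}. sup (ennreal (norm (DX t))) (Linf M (\<lambda>\<omega>'. DY \<omega>' t))) = ennreal Mb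
    \<longrightarrow>
    controlled_path M W w T p \<omega>
       (\<lambda>t. F (X t) (distr M borel (\<lambda>\<omega>'. Y \<omega>' t)))
       (\<lambda>t. \<chi> k. apply_deriv (DxF (X t) (\<lambda>\<omega>'. Y \<omega>' t)) (DX t $ k))
       (\<lambda>t \<omega>'. \<chi> k. apply_deriv (DZF (X t) (\<lambda>\<omega>''. Y \<omega>'' t) \<omega>') (DY \<omega>' t $ k)) \<and>
    cp_norm_star M W w T p \<omega>
       (\<lambda>t. F (X t) (distr M borel (\<lambda>\<omega>'. Y \<omega>' t)))
       (\<lambda>t. \<chi> k. apply_deriv (DxF (X t) (\<lambda>\<omega>'. Y \<omega>' t)) (DX t $ k))
       (\<lambda>t \<omega>'. \<chi> k. apply_deriv (DZF (X t) (\<lambda>\<omega>''. Y \<omega>'' t) \<omega>') (DY \<omega>' t $ k))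
    \<le> ennreal C * (1 + (cp_norm M W w T p \<omega> X DX (\<lambda>t \<omega>'. 0)) ^ 2
                     + (LqE M 8 (\<lambda>\<omega>'. cp_norm M W w T p \<omega>' (Y \<omega>') (DY \<omega>') (\<lambda>t \<omega>''. 0))) ^ 2)"
proof (intro exI[of _ "100 * (1 + \<bar>\<Lambda>\<bar>) * (1 + Mb) * (1 + real DIM(real^'m^'d))"] allI impI)
  fix M :: "'w::polish_space measure" and T p q :: real
    and W :: "'w \<Rightarrow> real \<Rightarrow> real^'m" and WW :: "'w \<Rightarrow> real \<Rightarrow> real \<Rightarrow> real^'m^'m"
    and WP :: "'w \<Rightarrow> 'w \<Rightarrow> real \<Rightarrow> real \<Rightarrow> real^'m^'m" and w :: "real \<Rightarrow> real \<Rightarrow> 'w \<Rightarrow> real"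
    and F :: "real^'d \<Rightarrow> (real^'d) measure \<Rightarrow> real^'m^'d"
    and DxF :: "real^'d \<Rightarrow> ('w \<Rightarrow> real^'d) \<Rightarrow> (real^'m^'d)^'d"
    and DZF :: "real^'d \<Rightarrow> ('w \<Rightarrow> real^'d) \<Rightarrow> 'w \<Rightarrow> (real^'m^'d)^'d"
    and DxxF :: "real^'d \<Rightarrow> ('w \<Rightarrow> real^'d) \<Rightarrow> (real^'m^'d)^'d^'d"
    and DxZF :: "real^'d \<Rightarrow> ('w \<Rightarrow> real^'d) \<Rightarrow> 'w \<Rightarrow> (real^'m^'d)^'d^'d"
    and \<omega> :: 'w and X :: "real \<Rightarrow> real^'d" and DX :: "real \<Rightarrow> (real^'d)^'m"
    and Y :: "'w \<Rightarrow> real \<Rightarrow> real^'d" and DY :: "'w \<Rightarrow> real \<Rightarrow> (real^'d)^'m"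
  assume H: "standing_space M \<and> 0 < T \<and> 2 \<le> p \<and> p < 3 \<and> 8 \<le> q \<and>
    rough_setup M T p q W WW WP \<and> control M T p q W WW WP w \<and>
    regularity1 M F DxF DZF DxxF DxZF \<Lambda> \<and>
    controlled_path M W w T p \<omega> X DX (\<lambda>t \<omega>'. 0) \<and>
    random_controlled_path M W w T p Y DY (\<lambda>\<omega>' t \<omega>''. 0) \<and>
    (SUP t\<in>{0..T}. sup (ennreal (norm (DX t))) (Linf M (\<lambda>\<omega>'. DY \<omega>' t))) = ennreal Mb"
  interpret P: P12 M T p q W WW WP w F DxF DZF DxxF DxZF \<Lambda> Mb \<omega> X DX Y DY
    using H assms by unfold_locales auto
  show "controlled_path M W w T p \<omega>
       (\<lambda>t. F (X t) (distr M borel (\<lambda>\<omega>'. Y \<omega>' t)))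
       (\<lambda>t. \<chi> k. apply_deriv (DxF (X t) (\<lambda>\<omega>'. Y \<omega>' t)) (DX t $ k))
       (\<lambda>t \<omega>'. \<chi> k. apply_deriv (DZF (X t) (\<lambda>\<omega>''. Y \<omega>'' t) \<omega>') (DY \<omega>' t $ k)) \<and>
    cp_norm_star M W w T p \<omega>
       (\<lambda>t. F (X t) (distr M borel (\<lambda>\<omega>'. Y \<omega>' t)))
       (\<lambda>t. \<chi> k. apply_deriv (DxF (X t) (\<lambda>\<omega>'. Y \<omega>' t)) (DX t $ k))
       (\<lambda>t \<omega>'. \<chi> k. apply_deriv (DZF (X t) (\<lambda>\<omega>''. Y \<omega>'' t) \<omega>') (DY \<omega>' t $ k))
    \<le> ennreal (100 * (1 + \<bar>\<Lambda>\<bar>) * (1 + Mb) * (1 + real DIM(real^'m^'d))) * (1 + (cp_norm M W w T p \<omega> X DX (\<lambda>t \<omega>'. 0)) ^ 2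
                     + (LqE M 8 (\<lambda>\<omega>'. cp_norm M W w T p \<omega>' (Y \<omega>') (DY \<omega>') (\<lambda>t \<omega>''. 0))) ^ 2)"
    by (rule P.final)
qed


end
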